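(* For every language $L\subseteq\{0,1\}^*$ (not necessarily recursive), $L\in QIP/qpoly$. More strongly, $L$ has a one-round quantum interactive proof with polynomial-size quantum advice in which all messages are classical ($L\in QIP(2)^*/qpoly$), with perfect completeness and soundness error at most $1/n^{\Omega(1)}$ on inputs of length $n$.
   Context: $QIP/qpoly$ is the class of languages $L$ having polynomial-size quantum interactive proofs (in the sense of Watrous) in which the verifier is a polynomial-size quantum circuit whose working space is initialized with an arbitrary quantum state $|\Psi_{L,n}\rangle$ on $poly(n)$ qubits (the quantum advice) that depends only on $L$ and the input length $n$, not on the input itself. The prover is computationally unbounded. Completeness: for $x\in L$ some prover strategy makes the verifier accept with probability $\ge 1-\epsilon$. Soundness: for $x\notin L$ every prover strategy makes the verifier accept with probability $\le\epsilon$, for a small constant $\epsilon$. $QIP(2)^*/qpoly$ is the subclass of such proofs with one round and classical messages. The verifier (a $BQP/qpoly$ circuit) sends a classical question $q$ of $poly(n)$ bits, which may depend on $x$ and on measurement outcomes. The prover answers with a classical string $r$ of $poly(n)$ bits. The verifier then outputs Accept or Reject. *)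

theory Defs
  imports Complex_Main
begin

text \<open>A (not necessarily normalised) pure state on m qubits is an amplitude function on
  bit strings; it is meant to vanish outside the strings of length m.
  Bit i of a basis string s is s ! i.\<close>

type_synonym qstate = "bool list \<Rightarrow> complex"

definition basis :: "bool list \<Rightarrow> qstate" where
  "basis b = (\<lambda>s. if s = b then 1 else 0)"

definition tensor :: "nat \<Rightarrow> qstate \<Rightarrow> qstate \<Rightarrow> qstate" where
  "tensor m \<phi> \<psi> = (\<lambda>s. \<phi> (take m s) * \<psi> (drop m s))"

definition sqnorm :: "nat \<Rightarrow> qstate \<Rightarrow> real" where
  "sqnorm m \<phi> = (\<Sum>s\<in>{s. length s = m}. (cmod (\<phi> s))\<^sup>2)"

definition is_state :: "nat \<Rightarrow> qstate \<Rightarrow> bool" where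
  "is_state m \<phi> \<longleftrightarrow> (\<forall>s. length s \<noteq> m \<longrightarrow> \<phi> s = 0) \<and> sqnorm m \<phi> = 1"

text \<open>A gate is an arbitrary two-qubit unitary U acting on the ordered pair of distinct
  qubits (i, j); U c d a b is the matrix entry <c d| U |a b>.  One-qubit gates are the
  special case U = V \<otimes> I.\<close>

type_synonym gate = "nat \<times> nat \<times> (bool \<Rightarrow> bool \<Rightarrow> bool \<Rightarrow> bool \<Rightarrow> complex)"

definition unitary2 :: "(bool \<Rightarrow> bool \<Rightarrow> bool \<Rightarrow> bool \<Rightarrow> complex) \<Rightarrow> bool" where
  "unitary2 U \<longleftrightarrow> (\<forall>a b a' b'.
     (\<Sum>c\<in>UNIV. \<Sum>d\<in>UNIV. cnj (U c d a b) * U c d a' b') = (if a = a' \<and> b = b' then 1 else 0))"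

definition valid_gate :: "nat \<Rightarrow> gate \<Rightarrow> bool" where
  "valid_gate m g = (case g of (i, j, U) \<Rightarrow> i < m \<and> j < m \<and> i \<noteq> j \<and> unitary2 U)"

definition apply_gate :: "gate \<Rightarrow> qstate \<Rightarrow> qstate" where
  "apply_gate g \<phi> = (case g of (i, j, U) \<Rightarrow>
     (\<lambda>s. \<Sum>a\<in>UNIV. \<Sum>b\<in>UNIV. U (s ! i) (s ! j) a b * \<phi> (s[i := a, j := b])))"

definition valid_circuit :: "nat \<Rightarrow> gate list \<Rightarrow> bool" where
  "valid_circuit m C \<longleftrightarrow> (\<forall>g\<in>set C. valid_gate m g)"

definition run_circuit :: "gate list \<Rightarrow> qstate \<Rightarrow> qstate" where
  "run_circuit C \<phi> = fold apply_gate C \<phi>"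

text \<open>Unnormalised post-measurement state when the first k qubits are measured in the
  computational basis with outcome q.\<close>
definition proj_prefix :: "nat \<Rightarrow> bool list \<Rightarrow> qstate \<Rightarrow> qstate" where
  "proj_prefix k q \<phi> = (\<lambda>s. if take k s = q then \<phi> s else 0)"

text \<open>Verifier for input length n (non-uniform, as in BQP/qpoly):
  \<^item> register layout for phase 1: input x (n qubits), advice \<Psi> n (a n qubits),
    z n ancillas initialised to |0>; total m1 n = n + a n + z n qubits;
  \<^item> circuit V1 n on m1 n qubits, then the first k n qubits are measured: the outcome q is the
    classical question sent to the prover;
  \<^item> the prover's classical answer r = P q (of length l n) is written into l n fresh qubits
    appended at the end; circuit V2 n acts on the m1 n + l n qubits; the verifier accepts
    iff measuring the first qubit yields 1 (True).
  The prover is an arbitrary (deterministic) function from questions to answers; the input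
  x is fixed before the prover is chosen, so the prover may depend on x.\<close>

definition acc_prob ::
  "nat \<Rightarrow> nat \<Rightarrow> nat \<Rightarrow> nat \<Rightarrow> qstate \<Rightarrow> gate list \<Rightarrow> gate list
     \<Rightarrow> bool list \<Rightarrow> (bool list \<Rightarrow> bool list) \<Rightarrow> real" where
  "acc_prob a z k l \<Psi> V1 V2 x P =
    (let n = length x; m1 = n + a + z;
         \<phi> = run_circuit V1 (tensor n (basis x) (tensor a \<Psi> (basis (replicate z False))))
     in \<Sum>q\<in>{q. length q = k}.
          sqnorm (m1 + l)
            (proj_prefix 1 [True] (run_circuit V2 (tensor m1 (proj_prefix k q \<phi>) (basis (P q))))))"

definition QIP2star_qpoly_perfect :: "(nat \<Rightarrow> real) \<Rightarrow> bool list set \<Rightarrow> bool" where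
  "QIP2star_qpoly_perfect s L \<longleftrightarrow>
    (\<exists>(d::nat) (a::nat \<Rightarrow> nat) (z::nat \<Rightarrow> nat) (k::nat \<Rightarrow> nat) (l::nat \<Rightarrow> nat)
       (\<Psi>::nat \<Rightarrow> qstate) (V1::nat \<Rightarrow> gate list) (V2::nat \<Rightarrow> gate list).
       (\<forall>n. a n \<le> (n + 2) ^ d \<and> z n \<le> (n + 2) ^ d \<and> k n \<le> (n + 2) ^ d \<and> l n \<le> (n + 2) ^ d
          \<and> length (V1 n) \<le> (n + 2) ^ d \<and> length (V2 n) \<le> (n + 2) ^ d
          \<and> k n \<le> n + a n + z n
          \<and> is_state (a n) (\<Psi> n)
          \<and> valid_circuit (n + a n + z n) (V1 n)
          \<and> valid_circuit (n + a n + z n + l n) (V2 n)) \<and>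
       (\<forall>x\<in>L. \<exists>P. acc_prob (a (length x)) (z (length x)) (k (length x)) (l (length x))
                    (\<Psi> (length x)) (V1 (length x)) (V2 (length x)) x P = 1) \<and>
       (\<forall>x. x \<notin> L \<longrightarrow> (\<forall>P. acc_prob (a (length x)) (z (length x)) (k (length x)) (l (length x))
                    (\<Psi> (length x)) (V1 (length x)) (V2 (length x)) x P \<le> s (length x))))"

end

theory Submission
  imports Defs "HOL-Computational_Algebra.Primes" "HOL-Computational_Algebra.Polynomial" "HOL-Number_Theory.Cong"
begin

lemma div_Suc_split:
  fixes n q :: nat assumes "q > 0"
  shows "Suc n div q = n div q + (if q dvd Suc n then 1 else 0)"
by (simp add: div_Suc dvd_eq_mod_eq_0)

lemma mult_le_self:
  fixes p x :: nat assumes "prime p" "x > 0"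
  shows "multiplicity p x < x"
proof -
  have "p ^ multiplicity p x dvd x" by (rule multiplicity_dvd)
  hence "p ^ multiplicity p x \<le> x" using assms(2) by (simp add: dvd_imp_le)
  moreover have "multiplicity p x < 2 ^ multiplicity p x" by (rule less_exp)
  moreover have "2 ^ multiplicity p x \<le> p ^ multiplicity p x"
    using prime_ge_2_nat[OF assms(1)] by (rule power_mono) simp
  ultimately show ?thesis by linarith
qed

lemma count_dvd_powers:
  fixes p x N :: nat assumes "prime p" "x > 0" "x \<le> N"
  shows "(\<Sum>i\<in>{1..N}. if p ^ i dvd x then 1 else 0) = multiplicity p x"
proof -
  have eq: "p ^ i dvd x \<longleftrightarrow> i \<le> multiplicity p x" for i
    using assms(1,2) by (intro power_dvd_iff_le_multiplicity) (use prime_gt_1_nat[of p] in simp_all)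
  have le: "multiplicity p x \<le> N" using mult_le_self[OF assms(1,2)] assms(3) by linarith
  have "{i\<in>{1..N}. p ^ i dvd x} = {1..multiplicity p x}"
    unfolding eq using le by auto
  moreover have "(\<Sum>i\<in>{1..N}. if p ^ i dvd x then 1 else 0) = card {i\<in>{1..N}. p ^ i dvd x}"
    by (simp only: sum.inter_filter[symmetric] finite_atLeastAtMost card_eq_sum)
  ultimately show ?thesis by simp
qed

lemma legendre:
  fixes p n N :: nat assumes "prime p" "n \<le> N"
  shows "multiplicity p (fact n) = (\<Sum>i\<in>{1..N}. n div p ^ i)"
  using assms(2)
proof (induction n)
  case 0
  then show ?case by simp
next
  case (Suc n)
  have pp: "p ^ i > 0" for i using assms(1) prime_gt_0_nat by simp
  have "multiplicity p (fact (Suc n) :: nat) = multiplicity p (Suc n * fact n)"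
    by (simp add: fact_Suc)
  also have "\<dots> = multiplicity p (Suc n) + multiplicity p (fact n :: nat)"
    using assms(1) by (intro prime_elem_multiplicity_mult_distrib) auto
  also have "multiplicity p (fact n :: nat) = (\<Sum>i\<in>{1..N}. n div p ^ i)"
    using Suc by simp
  also have "multiplicity p (Suc n) = (\<Sum>i\<in>{1..N}. if p ^ i dvd Suc n then 1 else 0)"
    using count_dvd_powers[OF assms(1), of "Suc n" N] Suc.prems by simp
  also have "(\<Sum>i\<in>{1..N}. if p ^ i dvd Suc n then 1 else 0) + (\<Sum>i\<in>{1..N}. n div p ^ i)
      = (\<Sum>i\<in>{1..N}. Suc n div p ^ i)"
    by (simp add: div_Suc_split[OF pp] sum.distrib add.commute)
  finally show ?case .
qed

lemma binom_mult_bound: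
  fixes p m :: nat assumes "prime p" "m > 0"
  shows "p ^ multiplicity p ((2*m) choose m) \<le> 2*m"
proof (rule ccontr)
  define v where "v = multiplicity p ((2*m) choose m)"
  assume "\<not> p ^ multiplicity p ((2*m) choose m) \<le> 2*m"
  hence big: "p ^ v > 2*m" unfolding v_def by simp
  have B0: "((2*m) choose m) \<noteq> 0" by simp
  have f: "fact (2*m) = fact m * fact m * ((2*m) choose m)"
    using binomial_fact_lemma[of m "2*m"] by simp
  have "multiplicity p (fact (2*m) :: nat) = multiplicity p (fact m :: nat) + multiplicity p (fact m :: nat) + v"
    unfolding f v_def using assms(1)
    by (simp add: prime_elem_multiplicity_mult_distrib)
  hence eq: "(\<Sum>i\<in>{1..2*m}. (2*m) div p^i) = (\<Sum>i\<in>{1..2*m}. m div p^i) + (\<Sum>i\<in>{1..2*m}. m div p^i) + v"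
    using legendre[OF assms(1), of "2*m" "2*m"] legendre[OF assms(1), of m "2*m"] by simp
  have term_le: "(2*m) div p^i \<le> 2 * (m div p^i) + (if i < v then 1 else 0)" for i
  proof (cases "i < v")
    case True
    have "(2*m) div p^i \<le> 2 * (m div p^i) + 1"
    proof -
      define Q D R where "Q = p^i" and "D = m div p^i" and "R = m mod p^i"
      have "m = Q * D + R" unfolding Q_def D_def R_def by simp
      moreover have "R < Q" unfolding Q_def R_def using assms(1) prime_gt_0_nat by simp
      ultimately have "2*m < (2 * D + 2) * Q" by (simp add: algebra_simps)
      hence "(2*m) div Q < 2 * D + 2" by (rule less_mult_imp_div_less)
      thus ?thesis unfolding Q_def D_def by simp
    qed
    thus ?thesis using True by simp
  next
    case False
    have "p^v \<le> p^i" using False prime_gt_0_nat[OF assms(1)] by (simp add: power_increasing)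
    hence "(2*m) div p^i = 0" using big by simp
    thus ?thesis by simp
  qed
  have "(\<Sum>i\<in>{1..2*m}. (2*m) div p^i) \<le> (\<Sum>i\<in>{1..2*m}. 2 * (m div p^i) + (if i < v then 1 else 0))"
    by (intro sum_mono term_le)
  also have "\<dots> = (\<Sum>i\<in>{1..2*m}. m div p^i) + (\<Sum>i\<in>{1..2*m}. m div p^i) + (\<Sum>i\<in>{1..2*m}. if i < v then 1 else 0)"
    by (simp add: sum.distrib sum_distrib_left[symmetric] mult_2)
  finally have "v \<le> (\<Sum>i\<in>{1..2*m}. if i < v then (1::nat) else 0)" using eq by linarith
  also have "\<dots> = card ({1..2*m} \<inter> {i. i < v})" by (simp add: sum.If_cases)
  also have "\<dots> \<le> card {1..<v}" by (intro card_mono) auto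
  finally have "v \<le> v - 1" by simp
  hence "v = 0" by simp
  thus False using big assms(2) by simp
qed

lemma pow_bound_aux: "(N::nat) \<ge> 1 \<Longrightarrow> 8 * N^2 < 16 ^ N"
proof (induction N rule: dec_induct)
  case base then show ?case by simp
next
  case (step N)
  have "N \<le> N * N" "1 \<le> N * N" using step(1) by (simp_all add: Suc_le_eq)
  have "8 * (Suc N)^2 = 8*(N*N) + 16*N + 8" by (simp add: power2_eq_square algebra_simps)
  also have "\<dots> \<le> 128*(N*N)" using \<open>N \<le> N*N\<close> \<open>1 \<le> N*N\<close> by linarith
  also have "\<dots> = 16*(8*N^2)" by (simp add: power2_eq_square)
  finally have "8 * (Suc N)^2 \<le> 16 * (8 * N^2)" .
  also have "\<dots> < 16 * 16 ^ N" using step(3) by simp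
  finally show ?case by simp
qed

lemma prime_exists_poly:
  fixes N :: nat assumes "N \<ge> 1"
  shows "\<exists>q. prime q \<and> N < q \<and> q \<le> 8 * N^2"
proof (rule ccontr)
  assume H: "\<not> ?thesis"
  define m where "m = 4 * N^2"
  have m0: "m > 0" using assms unfolding m_def by simp
  define B where "B = (2*m) choose m"
  have B0: "B > 0" unfolding B_def by simp
  have pf_small: "q \<le> N" if "q \<in> prime_factors B" for q
  proof -
    have q: "prime q" "q dvd B" using that by auto
    have f: "fact m * fact (2*m - m) * B = (fact (2*m) :: nat)" unfolding B_def
      by (rule binomial_fact_lemma) simp
    have "B dvd fact (2*m)" by (rule dvdI[of _ _ "fact m * fact (2*m - m)"]) (use f in \<open>simp add: mult.commute\<close>)
    hence "q dvd fact (2*m)" using q(2) by (rule dvd_trans[rotated])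
    hence "q \<le> 2*m" using prime_dvd_fact_iff[OF q(1)] by simp
    hence q8: "q \<le> 8 * N^2" unfolding m_def by simp
    show ?thesis
    proof (rule ccontr)
      assume "\<not> q \<le> N"
      hence "N < q" by simp
      thus False using H q(1) q8 by blast
    qed
  qed
  have "B = (\<Prod>q\<in>prime_factors B. q ^ multiplicity q B)"
    using prime_factorization_nat[OF B0] .
  also have "\<dots> \<le> (\<Prod>q\<in>prime_factors B. 2*m)"
    by (intro prod_mono) (auto simp: B_def m0 intro!: binom_mult_bound dest: in_prime_factors_imp_prime)
  also have "\<dots> = (2*m) ^ card (prime_factors B)" by simp
  also have "\<dots> \<le> (2*m) ^ N"
  proof -
    have "prime_factors B \<subseteq> {1..N}"
    proof
      fix q assume qin: "q \<in> prime_factors B"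
      hence "prime q" by auto
      hence "q \<ge> 1" using prime_gt_0_nat[of q] by simp
      thus "q \<in> {1..N}" using pf_small[OF qin] by simp
    qed
    hence "card (prime_factors B) \<le> N" using card_mono[of "{1..N}"] by fastforce
    thus ?thesis using m0 by (intro power_increasing) auto
  qed
  finally have B_le: "B \<le> (2*m)^N" .
  have r2: "real (2*m) / real m = 2" using m0 by simp
  have "(real (2*m) / real m) ^ m \<le> real B"
    unfolding B_def by (rule binomial_ge_n_over_k_pow_k) simp
  hence "real (2 ^ m) \<le> real B" unfolding r2 by simp
  hence "2 ^ m \<le> B" by (simp only: of_nat_le_iff)
  moreover have "(2*m)^N < 2 ^ m"
  proof -
    have "(2*m)^N = (8 * N^2)^N" unfolding m_def by simp
    also have "\<dots> < (16^N)^N" using pow_bound_aux[OF assms] assms by (intro power_strict_mono) auto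
    also have "\<dots> = 2 ^ m"
    proof -
      have a: "(16::nat)^N = 2^(4*N)" by (simp add: power_mult)
      have "(2::nat)^(4*N*N) = 2^m" unfolding m_def by (simp add: power2_eq_square mult.assoc)
      thus ?thesis unfolding a by (simp add: power_mult[symmetric])
    qed
    finally show ?thesis .
  qed
  ultimately show False using B_le by (meson leD le_trans)
qed

lemma sumB: "(\<Sum>a\<in>(UNIV::bool set). f a) = f False + f True"
  by (simp add: UNIV_bool add.commute)

lemma apply_gate_eq: "apply_gate (i, j, U) \<phi> s =
   (\<Sum>a\<in>UNIV. \<Sum>b\<in>UNIV. U (s ! i) (s ! j) a b * \<phi> (s[i := a, j := b]))"
  by (simp add: apply_gate_def)

definition diag2 :: "(bool \<Rightarrow> bool \<Rightarrow> complex) \<Rightarrow> bool \<Rightarrow> bool \<Rightarrow> bool \<Rightarrow> bool \<Rightarrow> complex" where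
  "diag2 D = (\<lambda>c d a b. if a = c \<and> b = d then D c d else 0)"

lemma apply_diag2: "apply_gate (i, j, diag2 D) \<phi> s = D (s ! i) (s ! j) * \<phi> s"
proof -
  have "apply_gate (i, j, diag2 D) \<phi> s = D (s ! i) (s ! j) * \<phi> (s[i := s ! i, j := s ! j])"
    unfolding apply_gate_eq diag2_def sumB by (cases "s ! i"; cases "s ! j") auto
  thus ?thesis by (simp only: list_update_id)
qed

definition swapU :: "bool \<Rightarrow> bool \<Rightarrow> bool \<Rightarrow> bool \<Rightarrow> complex" where
  "swapU = (\<lambda>c d a b. if a = d \<and> b = c then 1 else 0)"

lemma apply_swap: "apply_gate (i, j, swapU) \<phi> s = \<phi> (s[i := s ! j, j := s ! i])"
  unfolding apply_gate_eq swapU_def sumB by (cases "s ! i"; cases "s ! j") auto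

definition cnotU :: "bool \<Rightarrow> bool \<Rightarrow> bool \<Rightarrow> bool \<Rightarrow> complex" where
  "cnotU = (\<lambda>c d a b. if a = c \<and> b = (d \<noteq> c) then 1 else 0)"

lemma apply_cnot: "apply_gate (i, j, cnotU) \<phi> s = \<phi> (s[j := (s ! j \<noteq> s ! i)])"
proof -
  have "apply_gate (i, j, cnotU) \<phi> s = \<phi> (s[i := s ! i, j := (s ! j \<noteq> s ! i)])"
    unfolding apply_gate_eq cnotU_def sumB by (cases "s ! i"; cases "s ! j") auto
  thus ?thesis by (simp only: list_update_id)
qed

definition ctrlU :: "bool \<Rightarrow> (bool \<Rightarrow> bool \<Rightarrow> complex) \<Rightarrow> bool \<Rightarrow> bool \<Rightarrow> bool \<Rightarrow> bool \<Rightarrow> complex" where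
  "ctrlU cv V = (\<lambda>c d a b. if a = c then (if c = cv then V d b else (if d = b then 1 else 0)) else 0)"

lemma apply_ctrl: "apply_gate (i, j, ctrlU cv V) \<phi> s =
   (if s ! i = cv then (\<Sum>b\<in>UNIV. V (s ! j) b * \<phi> (s[j := b])) else \<phi> s)"
proof -
  have "apply_gate (i, j, ctrlU cv V) \<phi> s =
   (if s ! i = cv then (\<Sum>b\<in>UNIV. V (s ! j) b * \<phi> (s[i := s ! i, j := b])) else \<phi> (s[i := s ! i, j := s ! j]))"
    unfolding apply_gate_eq ctrlU_def sumB by (cases "s ! i"; cases "s ! j"; cases cv) auto
  thus ?thesis by (simp only: list_update_id)
qed

definition givU :: "real \<Rightarrow> real \<Rightarrow> bool \<Rightarrow> bool \<Rightarrow> bool \<Rightarrow> bool \<Rightarrow> complex" where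
  "givU gc gs = (\<lambda>c d a b.
     if c = d then (if a = c \<and> b = d then 1 else 0)
     else if c then (if a \<and> \<not> b then of_real gc else if \<not> a \<and> b then of_real gs else 0)
     else (if a \<and> \<not> b then - of_real gs else if \<not> a \<and> b then of_real gc else 0))"

lemma apply_giv: assumes "i \<noteq> j"
  shows "apply_gate (i, j, givU gc gs) \<phi> s =
   (if s ! i = s ! j then \<phi> s
    else if s ! i then of_real gc * \<phi> s + of_real gs * \<phi> (s[i := False, j := True])
    else - of_real gs * \<phi> (s[i := True, j := False]) + of_real gc * \<phi> s)"
proof -
  have "apply_gate (i, j, givU gc gs) \<phi> s =
   (if s ! i = s ! j then \<phi> (s[i := s ! i, j := s ! j])
    else if s ! i then of_real gc * \<phi> (s[i := s ! i, j := s ! j]) + of_real gs * \<phi> (s[i := False, j := True])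
    else - of_real gs * \<phi> (s[i := True, j := False]) + of_real gc * \<phi> (s[i := s ! i, j := s ! j]))"
    unfolding apply_gate_eq givU_def sumB by (cases "s ! i"; cases "s ! j") auto
  thus ?thesis by (simp only: list_update_id)
qed

lemma run_Nil[simp]: "run_circuit [] \<phi> = \<phi>" by (simp add: run_circuit_def)
lemma run_Cons[simp]: "run_circuit (g # C) \<phi> = run_circuit C (apply_gate g \<phi>)"
  by (simp add: run_circuit_def)
lemma run_append: "run_circuit (C @ D) \<phi> = run_circuit D (run_circuit C \<phi>)"
  by (simp add: run_circuit_def)

lemma apply_gate_lin:
  assumes "finite K"
  shows "apply_gate g (\<lambda>s. \<Sum>\<kappa>\<in>K. c \<kappa> * f \<kappa> s) = (\<lambda>s. \<Sum>\<kappa>\<in>K. c \<kappa> * apply_gate g (f \<kappa>) s)"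
proof -
  obtain i j U where g: "g = (i, j, U)" by (cases g) auto
  show ?thesis unfolding g apply_gate_eq
    by (rule ext) (simp add: sum_distrib_left sum.swap[of _ K] mult.left_commute)
qed

lemma run_lin:
  assumes "finite K"
  shows "run_circuit C (\<lambda>s. \<Sum>\<kappa>\<in>K. c \<kappa> * f \<kappa> s) = (\<lambda>s. \<Sum>\<kappa>\<in>K. c \<kappa> * run_circuit C (f \<kappa>) s)"
proof (induction C arbitrary: f)
  case Nil
  then show ?case by simp
next
  case (Cons g C)
  show ?case using Cons[of "\<lambda>\<kappa>. apply_gate g (f \<kappa>)"] by (simp add: apply_gate_lin[OF assms])
qed

lemma apply_tensor_low:
  assumes "i < k" "j < k"
  shows "apply_gate (i, j, U) (tensor k \<phi> \<psi>) = tensor k (apply_gate (i, j, U) \<phi>) \<psi>"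
proof (rule ext)
  fix s :: "bool list"
  have t: "take k (s[i := a, j := b]) = (take k s)[i := a, j := b]" for a b
    by (simp add: take_update_swap)
  have d: "drop k (s[i := a, j := b]) = drop k s" for a b using assms by simp
  have n: "take k s ! i = s ! i" "take k s ! j = s ! j" using assms by simp_all
  show "apply_gate (i, j, U) (tensor k \<phi> \<psi>) s = tensor k (apply_gate (i, j, U) \<phi>) \<psi> s"
    unfolding apply_gate_eq tensor_def t d n by (simp add: sum_distrib_right mult.assoc)
qed

lemma run_tensor_low:
  assumes "\<forall>g\<in>set C. fst g < k \<and> fst (snd g) < k"
  shows "run_circuit C (tensor k \<phi> \<psi>) = tensor k (run_circuit C \<phi>) \<psi>"
  using assms
proof (induction C arbitrary: \<phi>)
  case Nil
  then show ?case by simp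
next
  case (Cons g C)
  obtain i j U where g: "g = (i, j, U)" by (cases g) auto
  have "apply_gate g (tensor k \<phi> \<psi>) = tensor k (apply_gate g \<phi>) \<psi>"
    using Cons.prems g by (simp add: apply_tensor_low)
  thus ?case using Cons by simp
qed

definition shiftg :: "nat \<Rightarrow> gate \<Rightarrow> gate" where
  "shiftg k g = (case g of (i, j, U) \<Rightarrow> (k + i, k + j, U))"

lemma apply_tensor_high:
  assumes van: "\<forall>s. length s \<noteq> k \<longrightarrow> \<phi> s = 0"
  shows "apply_gate (k + i, k + j, U) (tensor k \<phi> \<psi>) = tensor k \<phi> (apply_gate (i, j, U) \<psi>)"
proof (rule ext)
  fix s
  show "apply_gate (k + i, k + j, U) (tensor k \<phi> \<psi>) s = tensor k \<phi> (apply_gate (i, j, U) \<psi>) s"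
  proof (cases "k \<le> length s")
    case True
    have t: "take k (s[k + i := a, k + j := b]) = take k s" for a b by simp
    have d: "drop k (s[k + i := a, k + j := b]) = (drop k s)[i := a, j := b]" for a b
      by (simp add: drop_update_swap)
    have n: "s ! (k + i) = drop k s ! i" "s ! (k + j) = drop k s ! j" using True by simp_all
    show ?thesis unfolding apply_gate_eq tensor_def t d n by (simp add: sum_distrib_left mult.left_commute)
  next
    case False
    hence "length (take k (s[k + i := a, k + j := b])) \<noteq> k" for a b by simp
    hence z1: "\<phi> (take k (s[k + i := a, k + j := b])) = 0" for a b using van by blast
    have z2: "\<phi> (take k s) = 0" using van False by simp
    show ?thesis unfolding apply_gate_eq tensor_def z1 z2 by simp
  qed
qed

lemma run_tensor_high:
  assumes van: "\<forall>s. length s \<noteq> k \<longrightarrow> \<phi> s = 0"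
  shows "run_circuit (map (shiftg k) C) (tensor k \<phi> \<psi>) = tensor k \<phi> (run_circuit C \<psi>)"
proof (induction C arbitrary: \<psi>)
  case Nil
  then show ?case by simp
next
  case (Cons g C)
  obtain i j U where g: "g = (i, j, U)" by (cases g) auto
  have "apply_gate (shiftg k g) (tensor k \<phi> \<psi>) = tensor k \<phi> (apply_gate g \<psi>)"
    using apply_tensor_high[OF van] g by (simp add: shiftg_def)
  thus ?case using Cons by simp
qed

definition prodst :: "nat \<Rightarrow> (nat \<Rightarrow> bool \<Rightarrow> complex) \<Rightarrow> qstate" where
  "prodst k \<alpha> = (\<lambda>s. if length s = k then (\<Prod>m<k. \<alpha> m (s ! m)) else 0)"

lemma basis_prodst: "basis w = prodst (length w) (\<lambda>m y. if y = w ! m then 1 else 0)"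
proof (rule ext)
  fix s
  show "basis w s = prodst (length w) (\<lambda>m y. if y = w ! m then 1 else 0) s"
  proof (cases "length s = length w")
    case True
    have "(\<Prod>m<length w. (if s ! m = w ! m then 1 else 0) :: complex) = (if s = w then 1 else 0)"
    proof (cases "s = w")
      case True then show ?thesis by simp
    next
      case False
      have "\<exists>m<length w. s ! m \<noteq> w ! m"
      proof (rule ccontr)
        assume "\<not> (\<exists>m<length w. s ! m \<noteq> w ! m)"
        hence "s = w" using \<open>length s = length w\<close> by (intro nth_equalityI) auto
        thus False using False by simp
      qed
      then obtain m where m: "m < length w" "s ! m \<noteq> w ! m" by blast
      have "\<exists>a\<in>{..<length w}. (if s ! a = w ! a then 1 else 0 :: complex) = 0" using m by auto
      hence "(\<Prod>m<length w. (if s ! m = w ! m then 1 else 0) :: complex) = 0" by (intro prod_zero) simp_all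
      then show ?thesis using False by simp
    qed
    then show ?thesis unfolding basis_def prodst_def using True by simp
  next
    case False
    then show ?thesis unfolding basis_def prodst_def by auto
  qed
qed

lemma prod_update_split:
  fixes \<alpha> :: "nat \<Rightarrow> bool \<Rightarrow> complex"
  assumes "m < k" "length s = k"
  shows "(\<Prod>m'<k. \<alpha> m' (s[m := b] ! m')) = \<alpha> m b * (\<Prod>m'\<in>{..<k} - {m}. \<alpha> m' (s ! m'))"
proof -
  have "(\<Prod>m'<k. \<alpha> m' (s[m := b] ! m')) = \<alpha> m (s[m := b] ! m) * (\<Prod>m'\<in>{..<k} - {m}. \<alpha> m' (s[m := b] ! m'))"
    using assms(1) by (simp add: prod.remove)
  also have "(\<Prod>m'\<in>{..<k} - {m}. \<alpha> m' (s[m := b] ! m')) = (\<Prod>m'\<in>{..<k} - {m}. \<alpha> m' (s ! m'))"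
    by (rule prod.cong) auto
  finally show ?thesis using assms by simp
qed

lemma apply_ctrl_prodst:
  assumes "c < k" "m < k" "c \<noteq> m" and ac: "\<alpha> c = (\<lambda>y. if y = xc then 1 else 0)"
  shows "apply_gate (c, m, ctrlU cv V) (prodst k \<alpha>) =
     prodst k (\<alpha>(m := (if xc = cv then (\<lambda>y. \<Sum>b\<in>UNIV. V y b * \<alpha> m b) else \<alpha> m)))"
    (is "_ = prodst k ?\<alpha>'")
proof (rule ext)
  fix s
  show "apply_gate (c, m, ctrlU cv V) (prodst k \<alpha>) s = prodst k ?\<alpha>' s"
  proof (cases "length s = k")
    case False
    then show ?thesis unfolding apply_ctrl prodst_def by simp
  next
    case True
    define R where "R = (\<Prod>m'\<in>{..<k} - {m}. \<alpha> m' (s ! m'))"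
    have cR: "c \<in> {..<k} - {m}" using assms by simp
    have R0: "R = 0" if sc: "s ! c \<noteq> xc"
    proof -
      have "\<alpha> c (s ! c) = 0" using ac sc by simp
      hence "\<exists>a\<in>{..<k} - {m}. \<alpha> a (s ! a) = 0" using cR by blast
      thus ?thesis unfolding R_def by (intro prod_zero) simp_all
    qed
    have lhs: "apply_gate (c, m, ctrlU cv V) (prodst k \<alpha>) s =
       (if s ! c = cv then (\<Sum>b\<in>UNIV. V (s ! m) b * \<alpha> m b) * R else \<alpha> m (s ! m) * R)"
    proof -
      have "prodst k \<alpha> (s[m := b]) = \<alpha> m b * R" for b
        unfolding prodst_def R_def using True assms(2) prod_update_split[OF assms(2) True] by simp
      moreover have "prodst k \<alpha> s = \<alpha> m (s ! m) * R"
        using prod_update_split[OF assms(2) True, of \<alpha> "s ! m"] True unfolding prodst_def R_def by simp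
      ultimately show ?thesis unfolding apply_ctrl by (simp add: sum_distrib_right mult.assoc)
    qed
    have rhs: "prodst k ?\<alpha>' s = ?\<alpha>' m (s ! m) * R"
    proof -
      have "(\<Prod>m'\<in>{..<k} - {m}. ?\<alpha>' m' (s ! m')) = R" unfolding R_def by (rule prod.cong) auto
      thus ?thesis unfolding prodst_def using True assms(2) by (simp add: prod.remove)
    qed
    show ?thesis
    proof (cases "s ! c = xc")
      case True
      then show ?thesis unfolding lhs rhs by simp
    next
      case False
      then show ?thesis unfolding lhs rhs using R0 by simp
    qed
  qed
qed

lemma run_ctrl_prodst:
  fixes ms :: "nat list" and ctl :: "nat \<Rightarrow> nat" and cvf :: "nat \<Rightarrow> bool" and xv :: "nat \<Rightarrow> bool"
  assumes "distinct ms"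
    and "\<forall>m\<in>set ms. m < k \<and> ctl m < k \<and> ctl m \<notin> set ms"
    and "\<forall>m\<in>set ms. \<alpha> (ctl m) = (\<lambda>y. if y = xv (ctl m) then 1 else 0)"
  shows "run_circuit (map (\<lambda>m. (ctl m, m, ctrlU (cvf m) V)) ms) (prodst k \<alpha>) =
    prodst k (\<lambda>m'. if m' \<in> set ms \<and> xv (ctl m') = cvf m' then (\<lambda>y. \<Sum>b\<in>UNIV. V y b * \<alpha> m' b) else \<alpha> m')"
  using assms
proof (induction ms arbitrary: \<alpha>)
  case Nil
  then show ?case by simp
next
  case (Cons m ms)
  define \<alpha>1 where "\<alpha>1 = \<alpha>(m := (if xv (ctl m) = cvf m then (\<lambda>y. \<Sum>b\<in>UNIV. V y b * \<alpha> m b) else \<alpha> m))"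
  have cm: "ctl m < k" "m < k" "ctl m \<noteq> m" using Cons.prems(2) by auto
  have step: "apply_gate (ctl m, m, ctrlU (cvf m) V) (prodst k \<alpha>) = prodst k \<alpha>1"
    unfolding \<alpha>1_def by (rule apply_ctrl_prodst[OF cm]) (use Cons.prems(3) in simp)
  have IHp: "\<forall>m'\<in>set ms. \<alpha>1 (ctl m') = (\<lambda>y. if y = xv (ctl m') then 1 else 0)"
  proof
    fix m' assume m': "m' \<in> set ms"
    hence "ctl m' \<noteq> m" using Cons.prems(2) by auto
    thus "\<alpha>1 (ctl m') = (\<lambda>y. if y = xv (ctl m') then 1 else 0)"
      unfolding \<alpha>1_def using Cons.prems(3) m' by simp
  qed
  have IH: "run_circuit (map (\<lambda>m. (ctl m, m, ctrlU (cvf m) V)) ms) (prodst k \<alpha>1) =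
    prodst k (\<lambda>m'. if m' \<in> set ms \<and> xv (ctl m') = cvf m' then (\<lambda>y. \<Sum>b\<in>UNIV. V y b * \<alpha>1 m' b) else \<alpha>1 m')"
    using Cons.prems(1,2) IHp by (intro Cons.IH) auto
  have mnot: "m \<notin> set ms" using Cons.prems(1) by simp
  have fe: "(\<lambda>m'. if m' \<in> set ms \<and> xv (ctl m') = cvf m' then (\<lambda>y. \<Sum>b\<in>UNIV. V y b * \<alpha>1 m' b) else \<alpha>1 m') =
     (\<lambda>m'. if m' \<in> set (m # ms) \<and> xv (ctl m') = cvf m' then (\<lambda>y. \<Sum>b\<in>UNIV. V y b * \<alpha> m' b) else \<alpha> m')"
  proof (rule ext)
    fix m'
    show "(if m' \<in> set ms \<and> xv (ctl m') = cvf m' then (\<lambda>y. \<Sum>b\<in>UNIV. V y b * \<alpha>1 m' b) else \<alpha>1 m') =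
     (if m' \<in> set (m # ms) \<and> xv (ctl m') = cvf m' then (\<lambda>y. \<Sum>b\<in>UNIV. V y b * \<alpha> m' b) else \<alpha> m')"
    proof (cases "m' = m")
      case True
      then show ?thesis using mnot unfolding \<alpha>1_def by simp
    next
      case False
      then show ?thesis unfolding \<alpha>1_def by simp
    qed
  qed
  show ?case using step IH fe by simp
qed

lemma strings_Suc: "{s :: bool list. length s = Suc k} = (\<lambda>(s, y). s @ [y]) ` ({s. length s = k} \<times> (UNIV :: bool set))"
proof
  show "{s :: bool list. length s = Suc k} \<subseteq> (\<lambda>(s, y). s @ [y]) ` ({s. length s = k} \<times> (UNIV :: bool set))"
  proof
    fix s :: "bool list" assume "s \<in> {s. length s = Suc k}"
    hence l: "length s = Suc k" by simp
    hence "s = butlast s @ [last s]" by (metis append_butlast_last_id list.size(3) nat.distinct(1))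
    moreover have "length (butlast s) = k" using l by simp
    ultimately show "s \<in> (\<lambda>(s, y). s @ [y]) ` ({s. length s = k} \<times> (UNIV :: bool set))"
      by (intro image_eqI[of _ _ "(butlast s, last s)"]) auto
  qed
qed auto

lemma sum_prod_strings:
  fixes g :: "nat \<Rightarrow> bool \<Rightarrow> 'a :: comm_semiring_1"
  shows "(\<Sum>s\<in>{s. length s = k}. \<Prod>m<k. g m (s ! m)) = (\<Prod>m<k. g m False + g m True)"
proof (induction k)
  case 0
  have "{s :: bool list. length s = 0} = {[]}" by auto
  then show ?case by simp
next
  case (Suc k)
  have inj: "inj_on (\<lambda>(s, y). s @ [y]) ({s :: bool list. length s = k} \<times> (UNIV :: bool set))"
    by (rule inj_onI) auto
  have fin: "finite {s :: bool list. length s = k}"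
    using finite_lists_length_eq[of "UNIV :: bool set" k] by simp
  have "(\<Sum>s\<in>{s. length s = Suc k}. \<Prod>m<Suc k. g m (s ! m)) =
     (\<Sum>(s, y)\<in>{s. length s = k} \<times> (UNIV :: bool set). \<Prod>m<Suc k. g m ((s @ [y]) ! m))"
    unfolding strings_Suc by (subst sum.reindex[OF inj]) (simp add: case_prod_beta)
  also have "\<dots> = (\<Sum>(s, y)\<in>{s. length s = k} \<times> (UNIV :: bool set). (\<Prod>m<k. g m (s ! m)) * g k y)"
  proof (rule sum.cong[OF refl])
    fix sy assume "sy \<in> {s :: bool list. length s = k} \<times> (UNIV :: bool set)"
    then obtain s y where sy: "sy = (s, y)" "length s = k" by auto
    have "(\<Prod>m<k. g m ((s @ [y]) ! m)) = (\<Prod>m<k. g m (s ! m))"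
      by (rule prod.cong) (auto simp: nth_append sy(2))
    thus "(case sy of (s, y) \<Rightarrow> \<Prod>m<Suc k. g m ((s @ [y]) ! m)) = (case sy of (s, y) \<Rightarrow> (\<Prod>m<k. g m (s ! m)) * g k y)"
      using sy by (simp add: nth_append)
  qed
  also have "\<dots> = (\<Sum>s\<in>{s. length s = k}. \<Prod>m<k. g m (s ! m)) * (\<Sum>y\<in>UNIV. g k y)"
    by (simp add: sum.cartesian_product[symmetric] sum_product)
  also have "\<dots> = (\<Prod>m<Suc k. g m False + g m True)" using Suc by (simp add: sumB)
  finally show ?case .
qed

lemma sum_sq_basis:
  fixes f :: "'k \<Rightarrow> bool list" and M :: "'k \<Rightarrow> complex"
  assumes "finite K" "inj_on f K" "f ` K \<subseteq> S" "finite S"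
  shows "(\<Sum>\<sigma>\<in>S. (cmod (\<Sum>\<kappa>\<in>K. M \<kappa> * (if \<sigma> = f \<kappa> then 1 else 0)))\<^sup>2) = (\<Sum>\<kappa>\<in>K. (cmod (M \<kappa>))\<^sup>2)"
proof -
  have at: "(\<Sum>\<kappa>\<in>K. M \<kappa> * (if f \<kappa>0 = f \<kappa> then 1 else 0)) = M \<kappa>0" if "\<kappa>0 \<in> K" for \<kappa>0
  proof -
    have "(\<Sum>\<kappa>\<in>K. M \<kappa> * (if f \<kappa>0 = f \<kappa> then 1 else 0)) = (\<Sum>\<kappa>\<in>K. if \<kappa> = \<kappa>0 then M \<kappa> else 0)"
    proof (rule sum.cong[OF refl])
      fix \<kappa> assume "\<kappa> \<in> K"
      hence "f \<kappa>0 = f \<kappa> \<longleftrightarrow> \<kappa> = \<kappa>0" using assms(2) that inj_on_eq_iff by metis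
      thus "M \<kappa> * (if f \<kappa>0 = f \<kappa> then 1 else 0) = (if \<kappa> = \<kappa>0 then M \<kappa> else 0)" by simp
    qed
    also have "\<dots> = M \<kappa>0" using assms(1) that by simp
    finally show ?thesis .
  qed
  have out: "(\<Sum>\<kappa>\<in>K. M \<kappa> * (if \<sigma> = f \<kappa> then 1 else 0)) = 0" if "\<sigma> \<notin> f ` K" for \<sigma>
    using that by (intro sum.neutral) auto
  have "(\<Sum>\<sigma>\<in>S. (cmod (\<Sum>\<kappa>\<in>K. M \<kappa> * (if \<sigma> = f \<kappa> then 1 else 0)))\<^sup>2) =
        (\<Sum>\<sigma>\<in>f ` K. (cmod (\<Sum>\<kappa>\<in>K. M \<kappa> * (if \<sigma> = f \<kappa> then 1 else 0)))\<^sup>2)"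
    using assms(3,4) out by (intro sum.mono_neutral_right) auto
  also have "\<dots> = (\<Sum>\<kappa>0\<in>K. (cmod (\<Sum>\<kappa>\<in>K. M \<kappa> * (if f \<kappa>0 = f \<kappa> then 1 else 0)))\<^sup>2)"
    using assms(2) by (simp add: sum.reindex)
  also have "\<dots> = (\<Sum>\<kappa>\<in>K. (cmod (M \<kappa>))\<^sup>2)" using at by (intro sum.cong) auto
  finally show ?thesis .
qed

definition ohl :: "nat \<Rightarrow> nat \<Rightarrow> bool list" where "ohl m L = map (\<lambda>i. i = m) [0..<L]"

lemma length_ohl[simp]: "length (ohl m L) = L" by (simp add: ohl_def)
lemma nth_ohl[simp]: "i < L \<Longrightarrow> ohl m L ! i = (i = m)" by (simp add: ohl_def)

lemma wpos_lt: fixes j p t :: nat shows "j < p \<Longrightarrow> t < p \<Longrightarrow> j * p + t < p * p"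
proof -
  assume "j < p" "t < p"
  hence "j * p + t < j * p + p" by simp
  also have "\<dots> = (j + 1) * p" by simp
  also have "\<dots> \<le> p * p" using \<open>j < p\<close> by (intro mult_le_mono1) simp
  finally show ?thesis .
qed

lemma wpos_inj: fixes j p t j' t' :: nat shows "t < p \<Longrightarrow> t' < p \<Longrightarrow> (j * p + t = j' * p + t') \<longleftrightarrow> (j = j' \<and> t = t')"
proof
  assume tp: "t < p" "t' < p" and eq: "j * p + t = j' * p + t'"
  have "(j * p + t) div p = j" "(j * p + t) mod p = t" using tp by simp_all
  moreover have "(j' * p + t') div p = j'" "(j' * p + t') mod p = t'" using tp by simp_all
  ultimately show "j = j' \<and> t = t'" using eq by metis
qed simp

definition rstr :: "nat \<Rightarrow> nat \<Rightarrow> nat \<Rightarrow> bool \<Rightarrow> bool list \<Rightarrow> bool list" where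
  "rstr p j t e r = ohl (j * p + t) (p * p) @ [e] @ r"

lemma length_rstr[simp]: "length (rstr p j t e r) = p * p + 1 + length r"
  by (simp add: rstr_def)

lemma rstr_W: "j' < p \<Longrightarrow> t' < p \<Longrightarrow> t < p \<Longrightarrow> rstr p j t e r ! (j' * p + t') = (j = j' \<and> t = t')"
proof -
  assume a: "j' < p" "t' < p" "t < p"
  have lt: "j' * p + t' < p * p" using wpos_lt a by simp
  have "(j' * p + t' = j * p + t) = (j' = j \<and> t' = t)" using wpos_inj[of t' p t j' j] a by simp
  thus ?thesis unfolding rstr_def using lt by (auto simp: nth_append)
qed

lemma rstr_anc[simp]: "rstr p j t e r ! (p * p) = e"
  unfolding rstr_def by (simp add: nth_append)

lemma rstr_prov: "rstr p j t e r ! (p * p + 1 + i) = r ! i"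
  unfolding rstr_def by (simp add: nth_append)

lemma rstr_inj:
  assumes "j < p" "t < p" "j' < p" "t' < p" "rstr p j t e r = rstr p j' t' e' r'"
  shows "j = j' \<and> t = t' \<and> e = e' \<and> r = r'"
proof -
  have "rstr p j t e r ! (j * p + t) = True" using rstr_W[of j p t t j e r] assms by simp
  hence "rstr p j' t' e' r' ! (j * p + t)" using assms(5) by simp
  hence jt: "j' = j \<and> t' = t" using rstr_W[of j p t t' j' e' r'] assms by simp
  have "e = e'" using arg_cong[OF assms(5), of "\<lambda>l. l ! (p * p)"] by simp
  moreover have "r = r'" using arg_cong[OF assms(5), of "drop (p * p + 1)"] unfolding rstr_def by simp
  ultimately show ?thesis using jt by simp
qed

lemma rstr_upd_anc: "(rstr p j t e r)[p * p := e'] = rstr p j t e' r"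
  unfolding rstr_def by (simp add: list_update_append)

lemma ohl_upd:
  assumes "m < L" "m' < L" "m \<noteq> m'"
  shows "(ohl m L)[m := False, m' := True] = ohl m' L"
  by (rule nth_equalityI) (use assms in \<open>auto simp: nth_list_update\<close>)

lemma rstr_upd:
  assumes "j < p" "t < p" "j' < p" "t' < p" "(j, t) \<noteq> (j', t')"
  shows "(rstr p j t e r)[j * p + t := False, j' * p + t' := True] = rstr p j' t' e r"
proof -
  have lt: "j * p + t < p * p" "j' * p + t' < p * p" using assms wpos_lt by auto
  have ne: "j * p + t \<noteq> j' * p + t'" using assms wpos_inj[of t p t' j j'] by auto
  show ?thesis unfolding rstr_def using lt ne ohl_upd[OF lt ne] by (simp add: list_update_append)
qed

lemma upd_back:
  assumes "m \<noteq> m'" "\<sigma>[m := a, m' := b] = \<tau>"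
  shows "\<sigma> = \<tau>[m := \<sigma> ! m, m' := \<sigma> ! m']"
proof -
  have "\<sigma>[m := a, m' := b, m := \<sigma> ! m] = \<sigma>[m := a, m := \<sigma> ! m, m' := b]"
    using list_update_swap[of m' m "\<sigma>[m := a]" b "\<sigma> ! m"] assms(1) by simp
  also have "\<dots> = \<sigma>[m' := b]" by (simp only: list_update_overwrite list_update_id)
  finally have "\<sigma>[m := a, m' := b, m := \<sigma> ! m, m' := \<sigma> ! m'] = \<sigma>[m' := b, m' := \<sigma> ! m']" by simp
  also have "\<dots> = \<sigma>" by (simp only: list_update_overwrite list_update_id)
  finally show ?thesis unfolding assms(2) by simp
qed

definition Form :: "nat \<Rightarrow> (nat \<Rightarrow> nat \<Rightarrow> complex) \<Rightarrow> (nat \<Rightarrow> nat \<Rightarrow> bool) \<Rightarrow> bool list \<Rightarrow> qstate" where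
  "Form p M e r = (\<lambda>\<sigma>. \<Sum>t\<in>{1..<p}. \<Sum>j<p. M t j * (if \<sigma> = rstr p j t (e t j) r then 1 else 0))"

definition isR :: "nat \<Rightarrow> (nat \<Rightarrow> nat \<Rightarrow> bool) \<Rightarrow> bool list \<Rightarrow> bool list \<Rightarrow> bool" where
  "isR p e r \<sigma> \<longleftrightarrow> (\<exists>t\<in>{1..<p}. \<exists>j<p. \<sigma> = rstr p j t (e t j) r)"

lemma Form_at:
  assumes "t \<in> {1..<p}" "j < p"
  shows "Form p M e r (rstr p j t (e t j) r) = M t j"
proof -
  have "(\<Sum>t'\<in>{1..<p}. \<Sum>j'<p. M t' j' * (if rstr p j t (e t j) r = rstr p j' t' (e t' j') r then 1 else 0))
      = (\<Sum>t'\<in>{1..<p}. \<Sum>j'<p. if t' = t \<and> j' = j then M t' j' else 0)"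
  proof (intro sum.cong refl)
    fix t' j' assume "t' \<in> {1..<p}" "j' \<in> {..<p}"
    hence "rstr p j t (e t j) r = rstr p j' t' (e t' j') r \<longleftrightarrow> t' = t \<and> j' = j"
      using rstr_inj[of j p t j' t' "e t j" r "e t' j'" r] assms by auto
    thus "M t' j' * (if rstr p j t (e t j) r = rstr p j' t' (e t' j') r then 1 else 0) =
          (if t' = t \<and> j' = j then M t' j' else 0)" by simp
  qed
  also have "\<dots> = (\<Sum>t'\<in>{1..<p}. if t' = t then M t j else 0)"
    by (intro sum.cong refl) (use assms in simp)
  also have "\<dots> = M t j" using assms by simp
  finally show ?thesis unfolding Form_def .
qed

lemma Form_off:
  assumes "\<not> isR p e r \<sigma>"
  shows "Form p M e r \<sigma> = 0"
  unfolding Form_def using assms unfolding isR_def by (intro sum.neutral) auto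

lemma Form_cases:
  obtains (R) t j where "t \<in> {1..<p}" "j < p" "\<sigma> = rstr p j t (e t j) r"
  | (N) "\<not> isR p e r \<sigma>"
  unfolding isR_def by blast

lemma Form_diag:
  "apply_gate (i1, i2, diag2 D) (Form p M e r) =
   Form p (\<lambda>t j. D (rstr p j t (e t j) r ! i1) (rstr p j t (e t j) r ! i2) * M t j) e r"
proof (rule ext)
  fix \<sigma> :: "bool list"
  show "apply_gate (i1, i2, diag2 D) (Form p M e r) \<sigma> =
   Form p (\<lambda>t j. D (rstr p j t (e t j) r ! i1) (rstr p j t (e t j) r ! i2) * M t j) e r \<sigma>"
    unfolding apply_diag2 Form_def sum_distrib_left
    by (intro sum.cong refl) auto
qed

definition gupd :: "real \<Rightarrow> real \<Rightarrow> nat \<Rightarrow> nat \<Rightarrow> (nat \<Rightarrow> nat \<Rightarrow> complex) \<Rightarrow> nat \<Rightarrow> nat \<Rightarrow> complex" where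
  "gupd gc gs t0 k M = (\<lambda>t j.
     if t = t0 \<and> j = 0 then of_real gc * M t0 0 + of_real gs * M t0 k
     else if t = t0 \<and> j = k then - of_real gs * M t0 0 + of_real gc * M t0 k
     else M t j)"

lemma Form_giv:
  assumes t0: "t0 \<in> {1..<p}" and k: "0 < k" "k < p" and ee: "e t0 0 = e t0 k"
  shows "apply_gate (t0, k * p + t0, givU gc gs) (Form p M e r) = Form p (gupd gc gs t0 k M) e r"
proof (rule ext)
  fix \<sigma> :: "bool list"
  define m m' where "m = t0" and "m' = k * p + t0"
  have mm: "m \<noteq> m'" unfolding m_def m'_def using k by simp
  have t0p: "t0 < p" using t0 by simp
  have bitm: "rstr p j t ee r ! m = (j = 0 \<and> t = t0)" if "t < p" for j t ee
    using rstr_W[of 0 p t0 t j ee r] t0p that unfolding m_def by auto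
  have bitm': "rstr p j t ee r ! m' = (j = k \<and> t = t0)" if "t < p" for j t ee
    using rstr_W[of k p t0 t j ee r] t0p that k unfolding m'_def by auto
  have r0k: "(rstr p 0 t0 ee r)[m := False, m' := True] = rstr p k t0 ee r" for ee
    using rstr_upd[of 0 p t0 k t0 ee r] t0p k unfolding m_def m'_def by simp
  have rk0: "(rstr p k t0 ee r)[m := True, m' := False] = rstr p 0 t0 ee r" for ee
  proof -
    have "(rstr p k t0 ee r)[m := True, m' := False] = (rstr p k t0 ee r)[m' := False, m := True]"
      using mm by (simp add: list_update_swap)
    also have "\<dots> = rstr p 0 t0 ee r"
      using rstr_upd[of k p t0 0 t0 ee r] t0p k unfolding m_def m'_def by simp
    finally show ?thesis .
  qed
  let ?M' = "gupd gc gs t0 k M"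
  have LHS: "apply_gate (t0, k * p + t0, givU gc gs) (Form p M e r) \<sigma> =
   (if \<sigma> ! m = \<sigma> ! m' then Form p M e r \<sigma>
    else if \<sigma> ! m then of_real gc * Form p M e r \<sigma> + of_real gs * Form p M e r (\<sigma>[m := False, m' := True])
    else - of_real gs * Form p M e r (\<sigma>[m := True, m' := False]) + of_real gc * Form p M e r \<sigma>)"
    unfolding m_def m'_def by (rule apply_giv) (use mm in \<open>simp add: m_def m'_def\<close>)
  show "apply_gate (t0, k * p + t0, givU gc gs) (Form p M e r) \<sigma> = Form p ?M' e r \<sigma>"
  proof (cases \<sigma> rule: Form_cases[where p=p and e=e and r=r])
    case (R t j)
    have tp: "t < p" using R by simp
    show ?thesis
    proof (cases "j = 0 \<and> t = t0")
      case True
      hence s: "\<sigma> = rstr p 0 t0 (e t0 0) r" using R by simp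
      have b: "\<sigma> ! m" "\<not> \<sigma> ! m'" unfolding s using bitm[of t0 0] bitm'[of t0 0] t0p k by auto
      have "\<sigma>[m := False, m' := True] = rstr p k t0 (e t0 k) r" unfolding s r0k ee ..
      hence "Form p M e r (\<sigma>[m := False, m' := True]) = M t0 k" using Form_at[of t0 p k] t0 k by simp
      moreover have "Form p M e r \<sigma> = M t0 0" unfolding s using Form_at[of t0 p 0] t0 k by simp
      moreover have "Form p ?M' e r \<sigma> = ?M' t0 0" unfolding s using Form_at[of t0 p 0] t0 k by simp
      ultimately show ?thesis unfolding LHS using b by (simp add: gupd_def)
    next
      case F1: False
      show ?thesis
      proof (cases "j = k \<and> t = t0")
        case True
        hence s: "\<sigma> = rstr p k t0 (e t0 k) r" using R by simp
        have b: "\<not> \<sigma> ! m" "\<sigma> ! m'" unfolding s using bitm[of t0 k] bitm'[of t0 k] t0p k by auto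
        have "\<sigma>[m := True, m' := False] = rstr p 0 t0 (e t0 0) r" unfolding s rk0 ee ..
        hence "Form p M e r (\<sigma>[m := True, m' := False]) = M t0 0" using Form_at[of t0 p 0] t0 k by simp
        moreover have "Form p M e r \<sigma> = M t0 k" unfolding s using Form_at[of t0 p k] t0 k by simp
        moreover have "Form p ?M' e r \<sigma> = ?M' t0 k" unfolding s using Form_at[of t0 p k] t0 k by simp
        ultimately show ?thesis unfolding LHS using b k by (simp add: gupd_def)
      next
        case F2: False
        have b1: "\<sigma> ! m = (j = 0 \<and> t = t0)" unfolding R(3) by (rule bitm[OF tp])
        have b2: "\<sigma> ! m' = (j = k \<and> t = t0)" unfolding R(3) by (rule bitm'[OF tp])
        have b: "\<sigma> ! m = \<sigma> ! m'" unfolding b1 b2 using F1 F2 by blast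
        have "Form p M e r \<sigma> = M t j" unfolding R(3) using R(1,2) by (rule Form_at)
        moreover have "Form p ?M' e r \<sigma> = ?M' t j" unfolding R(3) using R(1,2) by (rule Form_at)
        moreover have "?M' t j = M t j" unfolding gupd_def using F1 F2 by auto
        ultimately show ?thesis unfolding LHS using b by simp
      qed
    qed
  next
    case N
    have z: "Form p M e r \<sigma> = 0" "Form p ?M' e r \<sigma> = 0" using Form_off[OF N] by simp_all
    have z1: "Form p M e r (\<sigma>[m := False, m' := True]) = 0" if b: "\<sigma> ! m" "\<not> \<sigma> ! m'"
    proof (cases "\<sigma>[m := False, m' := True]" rule: Form_cases[where p=p and e=e and r=r])
      case (R t j)
      have tp: "t < p" using R by simp
      have "length \<sigma> = length (rstr p j t (e t j) r)" using arg_cong[OF R(3), of length] by simp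
      moreover have "m' < length (rstr p j t (e t j) r)" unfolding m'_def using wpos_lt[of k p t0] k t0p by simp
      ultimately have lm': "m' < length \<sigma>" by simp
      have "\<sigma>[m := False, m' := True] ! m' = True" using lm' by simp
      hence "rstr p j t (e t j) r ! m'" using R(3) by simp
      hence jt: "j = k \<and> t = t0" using bitm'[OF tp] by simp
      have "\<sigma> = (rstr p k t0 (e t0 k) r)[m := \<sigma> ! m, m' := \<sigma> ! m']"
        using upd_back[OF mm R(3)] jt by simp
      also have "\<dots> = rstr p 0 t0 (e t0 0) r" using b rk0 ee by simp
      finally have "\<sigma> = rstr p 0 t0 (e t0 0) r" .
      hence "\<exists>j<p. \<sigma> = rstr p j t0 (e t0 j) r" using k by (intro exI[of _ 0]) simp
      hence "isR p e r \<sigma>" unfolding isR_def using t0 by blast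
      thus ?thesis using N by simp
    qed (rule Form_off)
    have z2: "Form p M e r (\<sigma>[m := True, m' := False]) = 0" if b: "\<not> \<sigma> ! m" "\<sigma> ! m'"
    proof (cases "\<sigma>[m := True, m' := False]" rule: Form_cases[where p=p and e=e and r=r])
      case (R t j)
      have tp: "t < p" using R by simp
      have "length \<sigma> = length (rstr p j t (e t j) r)" using arg_cong[OF R(3), of length] by simp
      moreover have "m < length (rstr p j t (e t j) r)" unfolding m_def using wpos_lt[of 0 p t0] t0p by simp
      ultimately have lm: "m < length \<sigma>" by simp
      have "\<sigma>[m := True, m' := False] ! m" using lm mm by simp
      hence "rstr p j t (e t j) r ! m" using R(3) by simp
      hence jt: "j = 0 \<and> t = t0" using bitm[OF tp] by simp
      have "\<sigma> = (rstr p 0 t0 (e t0 0) r)[m := \<sigma> ! m, m' := \<sigma> ! m']"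
        using upd_back[OF mm R(3)] jt by simp
      also have "\<dots> = rstr p k t0 (e t0 k) r" using b r0k ee by simp
      finally have "\<sigma> = rstr p k t0 (e t0 k) r" .
      hence "\<exists>j<p. \<sigma> = rstr p j t0 (e t0 j) r" using k by (intro exI[of _ k]) simp
      hence "isR p e r \<sigma>" unfolding isR_def using t0 by blast
      thus ?thesis using N by simp
    qed (rule Form_off)
    show ?thesis
    proof (cases "\<sigma> ! m = \<sigma> ! m'")
      case True
      then show ?thesis unfolding LHS using z by simp
    next
      case False
      show ?thesis
      proof (cases "\<sigma> ! m")
        case True
        then show ?thesis unfolding LHS using z z1 False by simp
      next
        case F: False
        then show ?thesis unfolding LHS using z z2 False by simp
      qed
    qed
  qed
qed

lemma Form_cnot:
  assumes t0: "t0 \<in> {1..<p}"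
  shows "apply_gate (t0, p * p, cnotU) (Form p M e r) = Form p M (\<lambda>t j. e t j \<noteq> (t = t0 \<and> j = 0)) r"
proof (rule ext)
  fix \<sigma> :: "bool list"
  define e' where "e' = (\<lambda>t j. e t j \<noteq> (t = t0 \<and> j = 0))"
  have t0p: "t0 < p" using t0 by simp
  have bitm: "rstr p j t ee r ! t0 = (j = 0 \<and> t = t0)" if "t < p" for j t ee
    using rstr_W[of 0 p t0 t j ee r] t0p that by auto
  have LHS: "apply_gate (t0, p * p, cnotU) (Form p M e r) \<sigma> = Form p M e r (\<sigma>[p * p := (\<sigma> ! (p * p) \<noteq> \<sigma> ! t0)])"
    by (rule apply_cnot)
  show "apply_gate (t0, p * p, cnotU) (Form p M e r) \<sigma> = Form p M e' r \<sigma>"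
  proof (cases \<sigma> rule: Form_cases[where p=p and e=e' and r=r])
    case (R t j)
    have tp: "t < p" using R by simp
    have ex: "(e' t j \<noteq> (j = 0 \<and> t = t0)) = e t j" unfolding e'_def by auto
    have "\<sigma>[p * p := (\<sigma> ! (p * p) \<noteq> \<sigma> ! t0)] = rstr p j t (e' t j \<noteq> (j = 0 \<and> t = t0)) r"
      unfolding R(3) rstr_upd_anc rstr_anc bitm[OF tp] ..
    hence "\<sigma>[p * p := (\<sigma> ! (p * p) \<noteq> \<sigma> ! t0)] = rstr p j t (e t j) r" unfolding ex .
    thus ?thesis unfolding LHS using R Form_at[of t p j M e r] Form_at[of t p j M e' r] by simp
  next
    case N
    have "Form p M e r (\<sigma>[p * p := (\<sigma> ! (p * p) \<noteq> \<sigma> ! t0)]) = 0"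
    proof (cases "\<sigma>[p * p := (\<sigma> ! (p * p) \<noteq> \<sigma> ! t0)]" rule: Form_cases[where p=p and e=e and r=r])
      case (R t j)
      have tp: "t < p" using R by simp
      have "length \<sigma> = length (rstr p j t (e t j) r)" using arg_cong[OF R(3), of length] by simp
      hence lp: "p * p < length \<sigma>" by simp
      have ne: "t0 \<noteq> p * p" using wpos_lt[of 0 p t0] t0p by simp
      have s0: "\<sigma> ! t0 = (j = 0 \<and> t = t0)"
      proof -
        have "\<sigma>[p * p := (\<sigma> ! (p * p) \<noteq> \<sigma> ! t0)] ! t0 = \<sigma> ! t0" using ne by simp
        thus ?thesis using R(3) bitm[OF tp] by simp
      qed
      have sa: "(\<sigma> ! (p * p) \<noteq> \<sigma> ! t0) = e t j"
      proof -
        have "\<sigma>[p * p := (\<sigma> ! (p * p) \<noteq> \<sigma> ! t0)] ! (p * p) = (\<sigma> ! (p * p) \<noteq> \<sigma> ! t0)" using lp by simp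
        thus ?thesis using R(3) by simp
      qed
      have "\<sigma> = (\<sigma>[p * p := (\<sigma> ! (p * p) \<noteq> \<sigma> ! t0)])[p * p := \<sigma> ! (p * p)]" by simp
      also have "\<dots> = rstr p j t (\<sigma> ! (p * p)) r" unfolding R(3) rstr_upd_anc ..
      also have "\<sigma> ! (p * p) = e' t j" unfolding e'_def using s0 sa by auto
      finally have "isR p e' r \<sigma>" unfolding isR_def using R by auto
      thus ?thesis using N by simp
    qed (rule Form_off)
    thus ?thesis unfolding LHS using N Form_off by simp
  qed
qed

lemma run_diag_Form:
  "run_circuit (map (\<lambda>z. (f1 z, f2 z, diag2 (Dz z))) zs) (Form p M e r) =
   Form p (\<lambda>t j. prod_list (map (\<lambda>z. Dz z (rstr p j t (e t j) r ! f1 z) (rstr p j t (e t j) r ! f2 z)) zs) * M t j) e r"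
proof (induction zs arbitrary: M)
  case Nil
  then show ?case by simp
next
  case (Cons z zs)
  show ?case by (simp add: Form_diag Cons mult_ac)
qed

lemma pl_concat: "prod_list (map F (concat (map G xs))) = prod_list (map (\<lambda>x. prod_list (map F (G x))) xs)"
  by (induction xs) simp_all

lemma pl_upt: "prod_list (map f [0..<n]) = (\<Prod>i<n. f i)"
  by (induction n) (simp_all add: mult.commute)

lemma run_concat: "run_circuit (concat gss) \<phi> = fold run_circuit gss \<phi>"
  by (induction gss arbitrary: \<phi>) (simp_all add: run_append)

definition gcf :: "nat \<Rightarrow> real" where "gcf k = sqrt (real k / real (k + 1))"
definition gsf :: "nat \<Rightarrow> real" where "gsf k = 1 / sqrt (real (k + 1))"

definition rowgates :: "nat \<Rightarrow> nat \<Rightarrow> gate list" where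
  "rowgates p t = map (\<lambda>k. (t, k * p + t, givU (gcf k) (gsf k))) [1..<p]"

definition rowupd :: "nat \<Rightarrow> nat \<Rightarrow> (nat \<Rightarrow> nat \<Rightarrow> complex) \<Rightarrow> (nat \<Rightarrow> nat \<Rightarrow> complex)" where
  "rowupd p t M = fold (\<lambda>k M. gupd (gcf k) (gsf k) t k M) [1..<p] M"

lemma run_row_gen:
  assumes "t \<in> {1..<p}" "\<forall>k\<in>set ks. 0 < k \<and> k < p" "\<forall>j. e t j = e t 0"
  shows "run_circuit (map (\<lambda>k. (t, k * p + t, givU (gcf k) (gsf k))) ks) (Form p M e r) =
         Form p (fold (\<lambda>k M. gupd (gcf k) (gsf k) t k M) ks M) e r"
  using assms(2)
proof (induction ks arbitrary: M)
  case Nil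
  then show ?case by simp
next
  case (Cons k ks)
  have "apply_gate (t, k * p + t, givU (gcf k) (gsf k)) (Form p M e r) = Form p (gupd (gcf k) (gsf k) t k M) e r"
    using Cons.prems assms(1,3) by (intro Form_giv) auto
  thus ?case using Cons by simp
qed

lemma run_row:
  assumes "t \<in> {1..<p}" "\<forall>j. e t j = e t 0"
  shows "run_circuit (rowgates p t) (Form p M e r) = Form p (rowupd p t M) e r"
  unfolding rowgates_def rowupd_def by (rule run_row_gen) (use assms in auto)

lemma run_rows:
  assumes "\<forall>t\<in>set ts. t \<in> {1..<p}" "\<forall>t j. e t j = e t 0"
  shows "run_circuit (concat (map (rowgates p) ts)) (Form p M e r) = Form p (fold (rowupd p) ts M) e r"
  using assms(1)
proof (induction ts arbitrary: M)
  case Nil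
  then show ?case by simp
next
  case (Cons t ts)
  have "run_circuit (rowgates p t) (Form p M e r) = Form p (rowupd p t M) e r"
    using Cons.prems assms(2) by (intro run_row) auto
  thus ?case using Cons by (simp add: run_append)
qed

lemma gupd_other: "t' \<noteq> t \<Longrightarrow> gupd gc gs t k M t' = M t'"
  unfolding gupd_def by (rule ext) simp

lemma fold_gupd_other: "t' \<noteq> t \<Longrightarrow> fold (\<lambda>k M. gupd (gcf k) (gsf k) t k M) ks M t' = M t'"
  by (induction ks arbitrary: M) (simp_all add: gupd_other)

lemma rowupd_other: "t' \<noteq> t \<Longrightarrow> rowupd p t M t' = M t'"
  unfolding rowupd_def by (rule fold_gupd_other)

lemma fold_gupd_row:
  "fold (\<lambda>k M. gupd (gcf k) (gsf k) t k M) [1..<K + 1] M t 0 = of_real (1 / sqrt (real (K + 1))) * (\<Sum>j\<le>K. M t j)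
   \<and> (\<forall>j>K. fold (\<lambda>k M. gupd (gcf k) (gsf k) t k M) [1..<K + 1] M t j = M t j)"
proof (induction K)
  case 0
  then show ?case by simp
next
  case (Suc K)
  define F where "F = fold (\<lambda>k M. gupd (gcf k) (gsf k) t k M) [1..<K + 1] M"
  have split: "[1..<Suc K + 1] = [1..<K + 1] @ [K + 1]" by simp
  have eq: "fold (\<lambda>k M. gupd (gcf k) (gsf k) t k M) [1..<Suc K + 1] M = gupd (gcf (K + 1)) (gsf (K + 1)) t (K + 1) F"
    unfolding split F_def by simp
  have F0: "F t 0 = of_real (1 / sqrt (real (K + 1))) * (\<Sum>j\<le>K. M t j)" using Suc unfolding F_def by simp
  have FK: "F t (K + 1) = M t (K + 1)" using Suc unfolding F_def by simp
  have Fj: "F t j = M t j" if "j > K + 1" for j using Suc that unfolding F_def by simp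
  have coef: "gcf (K + 1) * (1 / sqrt (real (K + 1))) = 1 / sqrt (real (Suc K + 1))"
    unfolding gcf_def by (simp add: real_sqrt_divide field_simps)
  have "gupd (gcf (K + 1)) (gsf (K + 1)) t (K + 1) F t 0 =
        of_real (gcf (K + 1)) * F t 0 + of_real (gsf (K + 1)) * F t (K + 1)"
    unfolding gupd_def by simp
  also have "\<dots> = of_real (gcf (K + 1) * (1 / sqrt (real (K + 1)))) * (\<Sum>j\<le>K. M t j) + of_real (gsf (K + 1)) * M t (K + 1)"
    unfolding F0 FK by (simp add: mult.assoc)
  also have "\<dots> = of_real (1 / sqrt (real (Suc K + 1))) * (\<Sum>j\<le>Suc K. M t j)"
    unfolding coef gsf_def by (simp add: distrib_left add.commute)
  finally have A: "gupd (gcf (K + 1)) (gsf (K + 1)) t (K + 1) F t 0 = of_real (1 / sqrt (real (Suc K + 1))) * (\<Sum>j\<le>Suc K. M t j)" .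
  have B: "\<forall>j>Suc K. gupd (gcf (K + 1)) (gsf (K + 1)) t (K + 1) F t j = M t j"
    unfolding gupd_def using Fj by auto
  show ?case unfolding eq using A B by simp
qed

lemma rowupd_0:
  assumes "p \<ge> 1"
  shows "rowupd p t M t 0 = of_real (1 / sqrt (real p)) * (\<Sum>j<p. M t j)"
proof -
  have e: "[1..<p] = [1..<(p - 1) + 1]" using assms by simp
  have s: "{..p - 1} = {..<p}" using assms by auto
  show ?thesis unfolding rowupd_def e using fold_gupd_row[of t "p - 1" M] assms s by simp
qed

lemma fold_rowupd_other: "t \<notin> set ts \<Longrightarrow> fold (rowupd p) ts M t = M t"
  by (induction ts arbitrary: M) (simp_all add: rowupd_other)

lemma fold_rowupd_0:
  assumes "distinct ts" "t \<in> set ts" "p \<ge> 1"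
  shows "fold (rowupd p) ts M t 0 = of_real (1 / sqrt (real p)) * (\<Sum>j<p. M t j)"
  using assms(1,2)
proof (induction ts arbitrary: M)
  case Nil
  then show ?case by simp
next
  case (Cons t1 ts)
  show ?case
  proof (cases "t = t1")
    case True
    hence "t \<notin> set ts" using Cons.prems by simp
    hence "fold (rowupd p) ts (rowupd p t1 M) t = rowupd p t1 M t" by (rule fold_rowupd_other)
    thus ?thesis using True rowupd_0[OF assms(3)] by simp
  next
    case False
    hence "t \<in> set ts" using Cons.prems by simp
    hence "fold (rowupd p) ts (rowupd p t1 M) t 0 = of_real (1 / sqrt (real p)) * (\<Sum>j<p. rowupd p t1 M t j)"
      using Cons by simp
    thus ?thesis using False rowupd_other[of t t1 p M] by simp
  qed
qed

lemma run_cnots: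
  assumes "distinct ts" "\<forall>t\<in>set ts. t \<in> {1..<p}"
  shows "run_circuit (map (\<lambda>t. (t, p * p, cnotU)) ts) (Form p M e r) =
         Form p M (\<lambda>t j. e t j \<noteq> (t \<in> set ts \<and> j = 0)) r"
  using assms
proof (induction ts arbitrary: e)
  case Nil
  then show ?case by simp
next
  case (Cons t1 ts)
  have "apply_gate (t1, p * p, cnotU) (Form p M e r) = Form p M (\<lambda>t j. e t j \<noteq> (t = t1 \<and> j = 0)) r"
    using Cons.prems by (intro Form_cnot) simp
  moreover have "(\<lambda>t j. (e t j \<noteq> (t = t1 \<and> j = 0)) \<noteq> (t \<in> set ts \<and> j = 0)) = (\<lambda>t j. e t j \<noteq> (t \<in> set (t1 # ts) \<and> j = 0))"
    using Cons.prems(1) by (intro ext) auto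
  ultimately show ?case using Cons by simp
qed

lemma accept_Form:
  assumes "length r = L" "\<forall>t\<in>{1..<p}. \<forall>j<p. e t j = (j = 0)"
  shows "(\<Sum>\<sigma>\<in>{\<sigma>. length \<sigma> = p * p + 1 + L}. if \<sigma> ! (p * p) then (cmod (Form p M e r \<sigma>))\<^sup>2 else 0)
       = (\<Sum>t\<in>{1..<p}. (cmod (M t 0))\<^sup>2)"
proof -
  define K where "K = {1..<p} \<times> {..<p}"
  define f where "f = (\<lambda>\<kappa>. rstr p (snd \<kappa>) (fst \<kappa>) (e (fst \<kappa>) (snd \<kappa>)) r)"
  define M' where "M' = (\<lambda>\<kappa>. if snd \<kappa> = 0 then M (fst \<kappa>) (snd \<kappa>) else 0)"
  have finK: "finite K" unfolding K_def by simp
  have injf: "inj_on f K"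
  proof (rule inj_onI)
    fix a b assume "a \<in> K" "b \<in> K" "f a = f b"
    thus "a = b" unfolding K_def f_def using rstr_inj[of "snd a" p "fst a" "snd b" "fst b"] by (auto simp: prod_eq_iff)
  qed
  have fS: "f ` K \<subseteq> {\<sigma>. length \<sigma> = p * p + 1 + L}" unfolding f_def using assms(1) by auto
  have finS: "finite {\<sigma> :: bool list. length \<sigma> = p * p + 1 + L}"
    using finite_lists_length_eq[of "UNIV :: bool set"] by simp
  have eK: "e (fst \<kappa>) (snd \<kappa>) = (snd \<kappa> = 0)" if "\<kappa> \<in> K" for \<kappa> using assms(2) that unfolding K_def by auto
  have pt: "(if \<sigma> ! (p * p) then (cmod (Form p M e r \<sigma>))\<^sup>2 else 0) =
        (cmod (\<Sum>\<kappa>\<in>K. M' \<kappa> * (if \<sigma> = f \<kappa> then 1 else 0)))\<^sup>2" for \<sigma>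
  proof -
    have FK: "Form p M e r \<sigma> = (\<Sum>\<kappa>\<in>K. M (fst \<kappa>) (snd \<kappa>) * (if \<sigma> = f \<kappa> then 1 else 0))"
      unfolding Form_def K_def f_def by (simp add: sum.cartesian_product split_def)
    show ?thesis
    proof (cases "\<sigma> ! (p * p)")
      case True
      have "(\<Sum>\<kappa>\<in>K. M (fst \<kappa>) (snd \<kappa>) * (if \<sigma> = f \<kappa> then 1 else 0)) = (\<Sum>\<kappa>\<in>K. M' \<kappa> * (if \<sigma> = f \<kappa> then 1 else 0))"
      proof (rule sum.cong[OF refl])
        fix \<kappa> assume k: "\<kappa> \<in> K"
        show "M (fst \<kappa>) (snd \<kappa>) * (if \<sigma> = f \<kappa> then 1 else 0) = M' \<kappa> * (if \<sigma> = f \<kappa> then 1 else 0)"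
        proof (cases "\<sigma> = f \<kappa>")
          case True
          hence "snd \<kappa> = 0" using \<open>\<sigma> ! (p * p)\<close> eK[OF k] unfolding f_def by simp
          thus ?thesis unfolding M'_def by simp
        qed simp
      qed
      thus ?thesis using True FK by simp
    next
      case False
      have "(\<Sum>\<kappa>\<in>K. M' \<kappa> * (if \<sigma> = f \<kappa> then 1 else 0)) = 0"
      proof (rule sum.neutral, rule ballI)
        fix \<kappa> assume k: "\<kappa> \<in> K"
        show "M' \<kappa> * (if \<sigma> = f \<kappa> then 1 else 0) = 0"
        proof (cases "\<sigma> = f \<kappa>")
          case True
          hence "snd \<kappa> \<noteq> 0" using \<open>\<not> \<sigma> ! (p * p)\<close> eK[OF k] unfolding f_def by simp
          thus ?thesis unfolding M'_def by simp
        qed simp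
      qed
      thus ?thesis using False by simp
    qed
  qed
  have "(\<Sum>\<sigma>\<in>{\<sigma>. length \<sigma> = p * p + 1 + L}. if \<sigma> ! (p * p) then (cmod (Form p M e r \<sigma>))\<^sup>2 else 0)
       = (\<Sum>\<kappa>\<in>K. (cmod (M' \<kappa>))\<^sup>2)"
    unfolding pt by (rule sum_sq_basis[OF finK injf fS finS])
  also have "\<dots> = (\<Sum>t\<in>{1..<p}. \<Sum>j<p. (cmod (if j = 0 then M t j else 0))\<^sup>2)"
    unfolding K_def M'_def by (simp add: sum.cartesian_product split_def)
  also have "\<dots> = (\<Sum>t\<in>{1..<p}. (cmod (M t 0))\<^sup>2)"
  proof (rule sum.cong[OF refl])
    fix t assume "t \<in> {1..<p}"
    hence "0 \<in> {..<p}" by simp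
    have "(\<Sum>j<p. (cmod (if j = 0 then M t j else 0))\<^sup>2) = (\<Sum>j<p. if j = 0 then (cmod (M t 0))\<^sup>2 else 0)"
      by (rule sum.cong) auto
    also have "\<dots> = (cmod (M t 0))\<^sup>2" using \<open>0 \<in> {..<p}\<close> by simp
    finally show "(\<Sum>j<p. (cmod (if j = 0 then M t j else 0))\<^sup>2) = (cmod (M t 0))\<^sup>2" .
  qed
  finally show ?thesis .
qed

lemma accept_Form_badlen:
  assumes "length r \<noteq> L"
  shows "(\<Sum>\<sigma>\<in>{\<sigma>. length \<sigma> = p * p + 1 + L}. if \<sigma> ! (p * p) then (cmod (Form p M e r \<sigma>))\<^sup>2 else 0) = 0"
proof (rule sum.neutral, rule ballI)
  fix \<sigma> :: "bool list" assume s: "\<sigma> \<in> {\<sigma>. length \<sigma> = p * p + 1 + L}"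
  have "\<not> isR p e r \<sigma>"
  proof
    assume "isR p e r \<sigma>"
    then obtain t j where "\<sigma> = rstr p j t (e t j) r" unfolding isR_def by blast
    hence "length \<sigma> = p * p + 1 + length r" by simp
    thus False using s assms by simp
  qed
  thus "(if \<sigma> ! (p * p) then (cmod (Form p M e r \<sigma>))\<^sup>2 else 0) = 0" using Form_off by simp
qed

definition Hm :: "bool \<Rightarrow> bool \<Rightarrow> complex" where
  "Hm y b = (if y \<and> b then -1 else 1) / complex_of_real (sqrt 2)"

definition ctl1 :: "nat \<Rightarrow> nat \<Rightarrow> nat \<Rightarrow> nat" where "ctl1 n p m = ((m - n) mod (n * p)) div p"
definition cv1 :: "nat \<Rightarrow> nat \<Rightarrow> nat \<Rightarrow> bool" where "cv1 n p m = (m - n < n * p)"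
definition V1c :: "nat \<Rightarrow> nat \<Rightarrow> gate list" where
  "V1c n p = map (\<lambda>m. (ctl1 n p m, m, ctrlU (cv1 n p m) Hm)) [n..<n + 2 * n * p]"

definition encA :: "nat \<Rightarrow> nat list \<Rightarrow> bool list" where "encA p a = concat (map (\<lambda>y. ohl y p) a)"

lemma length_encA[simp]: "length (encA p a) = length a * p"
  unfolding encA_def by (induction a) simp_all

lemma nth_encA: "i < length a \<Longrightarrow> c < p \<Longrightarrow> encA p a ! (i * p + c) = (c = a ! i)"
proof (induction a arbitrary: i)
  case Nil
  then show ?case by simp
next
  case (Cons y a)
  show ?case
  proof (cases i)
    case 0
    then show ?thesis using Cons.prems unfolding encA_def by (simp add: nth_append)
  next
    case (Suc i')
    have "encA p (y # a) = ohl y p @ encA p a" unfolding encA_def by simp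
    moreover have "Suc i' * p + c = p + (i' * p + c)" by simp
    ultimately show ?thesis using Cons Suc by (simp add: nth_append)
  qed
qed

lemma Hm_sq: "(cmod (Hm y b))\<^sup>2 = 1 / 2"
  unfolding Hm_def by (simp add: norm_divide power_divide)

locale prot =
  fixes n p :: nat and x :: "bool list"
  assumes p2: "p \<ge> 2" and lx: "length x = n"
begin

abbreviation "k \<equiv> n + 2 * n * p"

definition erased :: "nat \<Rightarrow> bool" where
  "erased m \<longleftrightarrow> n \<le> m \<and> m < k \<and> x ! ctl1 n p m = cv1 n p m"

lemma ctl_lt: assumes "n \<le> m" "m < k" shows "ctl1 n p m < n"
proof -
  have np: "n * p > 0" using assms p2 by (cases n) auto
  have "(m - n) mod (n * p) < n * p" using np by simp
  thus ?thesis unfolding ctl1_def using p2 by (simp add: div_less_iff_less_mult)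
qed

definition preA :: "bool list \<Rightarrow> nat \<Rightarrow> bool \<Rightarrow> complex" where
  "preA w m y = (if erased m then Hm y (w ! m) else (if y = w ! m then 1 else 0))"

lemma Pre_prod:
  assumes "length w = k" "take n w = x"
  shows "run_circuit (V1c n p) (basis w) = prodst k (preA w)"
proof -
  have bw: "basis w = prodst k (\<lambda>m y. if y = w ! m then 1 else 0)" using basis_prodst[of w] assms by simp
  have xw: "w ! c = x ! c" if "c < n" for c using assms(2) that by (metis nth_take)
  have "run_circuit (V1c n p) (prodst k (\<lambda>m y. if y = w ! m then 1 else 0)) =
    prodst k (\<lambda>m'. if m' \<in> set [n..<k] \<and> w ! (ctl1 n p m') = cv1 n p m'
       then (\<lambda>y. \<Sum>b\<in>UNIV. Hm y b * (if b = w ! m' then 1 else 0)) else (\<lambda>y. if y = w ! m' then 1 else 0))"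
    unfolding V1c_def
  proof (rule run_ctrl_prodst)
    show "distinct [n..<k]" by simp
    show "\<forall>m\<in>set [n..<k]. m < k \<and> ctl1 n p m < k \<and> ctl1 n p m \<notin> set [n..<k]"
      using ctl_lt by fastforce
    show "\<forall>m\<in>set [n..<k]. (\<lambda>m y. if y = w ! m then 1 else (0::complex)) (ctl1 n p m) = (\<lambda>y. if y = w ! ctl1 n p m then 1 else 0)"
      by simp
  qed
  also have "\<dots> = prodst k (preA w)"
  proof -
    have "(\<lambda>m'. if m' \<in> set [n..<k] \<and> w ! (ctl1 n p m') = cv1 n p m'
       then (\<lambda>y. \<Sum>b\<in>UNIV. Hm y b * (if b = w ! m' then 1 else 0)) else (\<lambda>y. if y = w ! m' then 1 else 0)) = preA w"
    proof (intro ext)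
      fix m' y
      have e: "(m' \<in> set [n..<k] \<and> w ! (ctl1 n p m') = cv1 n p m') = erased m'"
        unfolding erased_def using xw ctl_lt by auto
      have s: "(\<Sum>b\<in>UNIV. Hm y b * (if b = w ! m' then 1 else 0)) = Hm y (w ! m')"
        unfolding sumB by (cases "w ! m'") simp_all
      show "(if m' \<in> set [n..<k] \<and> w ! (ctl1 n p m') = cv1 n p m'
       then (\<lambda>y. \<Sum>b\<in>UNIV. Hm y b * (if b = w ! m' then 1 else 0)) else (\<lambda>y. if y = w ! m' then 1 else 0)) y = preA w m' y"
      proof (cases "erased m'")
        case True
        then show ?thesis unfolding e[symmetric] preA_def using s e by simp
      next
        case False
        hence nC: "\<not> (m' \<in> set [n..<k] \<and> w ! (ctl1 n p m') = cv1 n p m')" using e by simp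
        show ?thesis by (subst if_not_P[OF nC]) (simp add: preA_def False)
      qed
    qed
    thus ?thesis by simp
  qed
  finally show ?thesis using bw by simp
qed

definition kap :: real where "kap = (\<Prod>m<k. if erased m then 1 / 2 else 1)"

lemma preA_sq: "(cmod (preA w m y))\<^sup>2 = (if erased m then 1 / 2 else (if y = w ! m then 1 else 0))"
  unfolding preA_def using Hm_sq by simp

lemma Pre_sq:
  assumes "length q = k"
  shows "(cmod (prodst k (preA w) q))\<^sup>2 = kap * (if \<forall>m<k. \<not> erased m \<longrightarrow> q ! m = w ! m then 1 else 0)"
proof -
  have "(cmod (prodst k (preA w) q))\<^sup>2 = (\<Prod>m<k. (cmod (preA w m (q ! m)))\<^sup>2)"
    unfolding prodst_def using assms by (simp add: prod_norm[symmetric] power_mult_distrib prod_power_distrib)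
  also have "\<dots> = (\<Prod>m<k. (if erased m then 1 / 2 else 1) * (if \<not> erased m \<longrightarrow> q ! m = w ! m then 1 else 0))"
    unfolding preA_sq by (intro prod.cong) auto
  also have "\<dots> = kap * (\<Prod>m<k. (if \<not> erased m \<longrightarrow> q ! m = w ! m then 1 else 0))"
    unfolding kap_def prod.distrib ..
  also have "(\<Prod>m<k. (if \<not> erased m \<longrightarrow> q ! m = w ! m then 1 else 0 :: real)) =
      (if \<forall>m<k. \<not> erased m \<longrightarrow> q ! m = w ! m then 1 else 0)"
  proof (cases "\<forall>m<k. \<not> erased m \<longrightarrow> q ! m = w ! m")
    case True
    then show ?thesis by simp
  next
    case False
    then obtain m where "m < k" "\<not> (\<not> erased m \<longrightarrow> q ! m = w ! m)" by blast
    hence "\<exists>m\<in>{..<k}. (if \<not> erased m \<longrightarrow> q ! m = w ! m then 1 else 0 :: real) = 0" by auto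
    hence "(\<Prod>m<k. (if \<not> erased m \<longrightarrow> q ! m = w ! m then 1 else 0 :: real)) = 0" by (intro prod_zero) simp_all
    then show ?thesis using False by simp
  qed
  finally show ?thesis by simp
qed

lemma Pre_norm: "(\<Sum>q\<in>{q. length q = k}. (cmod (prodst k (preA w) q))\<^sup>2) = 1"
proof -
  have "(\<Sum>q\<in>{q. length q = k}. (cmod (prodst k (preA w) q))\<^sup>2) =
        (\<Sum>q\<in>{q. length q = k}. \<Prod>m<k. (cmod (preA w m (q ! m)))\<^sup>2)"
    by (intro sum.cong refl) (simp add: prodst_def prod_norm[symmetric] prod_power_distrib)
  also have "\<dots> = (\<Prod>m<k. (cmod (preA w m False))\<^sup>2 + (cmod (preA w m True))\<^sup>2)"
    by (rule sum_prod_strings)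
  also have "\<dots> = 1" unfolding preA_sq by (intro prod.neutral) auto
  finally show ?thesis .
qed

end

lemma take_drop_eq_append: "length u = m \<Longrightarrow> (take m s = u \<and> drop m s = v) \<longleftrightarrow> s = u @ v"
  by (metis append_eq_conv_conj)

lemma acc_swap:
  assumes "A < M" "0 < A"
  shows "sqnorm M (proj_prefix 1 [True] (apply_gate (0, A, swapU) \<Xi>)) =
         (\<Sum>s\<in>{s. length s = M}. if s ! A then (cmod (\<Xi> s))\<^sup>2 else 0)"
proof -
  define S where "S = {s :: bool list. length s = M}"
  define \<pi> where "\<pi> = (\<lambda>s :: bool list. s[0 := s ! A, A := s ! 0])"
  have inv: "\<pi> (\<pi> s) = s" if "s \<in> S" for s
  proof -
    have l: "length s = M" using that unfolding S_def by simp
    show ?thesis unfolding \<pi>_def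
      by (rule nth_equalityI) (use l assms in \<open>auto simp: nth_list_update\<close>)
  qed
  have inS: "\<pi> s \<in> S" if "s \<in> S" for s using that unfolding S_def \<pi>_def by simp
  have piA: "\<pi> s ! A = s ! 0" if "s \<in> S" for s using that assms unfolding S_def \<pi>_def by simp
  have "sqnorm M (proj_prefix 1 [True] (apply_gate (0, A, swapU) \<Xi>)) =
        (\<Sum>s\<in>S. if s ! 0 then (cmod (\<Xi> (\<pi> s)))\<^sup>2 else 0)"
    unfolding sqnorm_def S_def[symmetric]
  proof (rule sum.cong[OF refl])
    fix s assume s: "s \<in> S"
    hence "s \<noteq> []" using assms unfolding S_def by auto
    hence t1: "take 1 s = [s ! 0]" by (cases s) auto
    show "(cmod (proj_prefix 1 [True] (apply_gate (0, A, swapU) \<Xi>) s))\<^sup>2 = (if s ! 0 then (cmod (\<Xi> (\<pi> s)))\<^sup>2 else 0)"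
      unfolding proj_prefix_def apply_swap t1 \<pi>_def by simp
  qed
  also have "\<dots> = (\<Sum>s\<in>S. if s ! A then (cmod (\<Xi> s))\<^sup>2 else 0)"
  proof (rule sum.reindex_bij_witness[of S \<pi> \<pi>])
    show "\<And>a. a \<in> S \<Longrightarrow> \<pi> (\<pi> a) = a" by (rule inv)
    show "\<And>a. a \<in> S \<Longrightarrow> \<pi> a \<in> S" by (rule inS)
    show "\<And>b. b \<in> S \<Longrightarrow> \<pi> (\<pi> b) = b" by (rule inv)
    show "\<And>b. b \<in> S \<Longrightarrow> \<pi> b \<in> S" by (rule inS)
    fix a assume a: "a \<in> S"
    show "(if \<pi> a ! A then (cmod (\<Xi> (\<pi> a)))\<^sup>2 else 0) = (if a ! 0 then (cmod (\<Xi> (\<pi> a)))\<^sup>2 else 0)"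
      using piA[OF a] by simp
  qed
  finally show ?thesis unfolding S_def .
qed

lemma sum_prefix:
  assumes "length q = k"
  shows "(\<Sum>s\<in>{s. length s = k + R}. if s ! (k + A') then (cmod (tensor k (basis q) \<Phi> s))\<^sup>2 else 0)
       = (\<Sum>\<rho>\<in>{\<rho>. length \<rho> = R}. if \<rho> ! A' then (cmod (\<Phi> \<rho>))\<^sup>2 else 0)"
proof -
  define S where "S = {s :: bool list. length s = k + R}"
  define T where "T = {\<rho> :: bool list. length \<rho> = R}"
  define g where "g = (\<lambda>s. if s ! (k + A') then (cmod (tensor k (basis q) \<Phi> s))\<^sup>2 else 0)"
  have finS: "finite S" unfolding S_def using finite_lists_length_eq[of "UNIV :: bool set"] by simp
  have sub: "(\<lambda>\<rho>. q @ \<rho>) ` T \<subseteq> S" unfolding S_def T_def using assms by auto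
  have zero: "g s = 0" if "s \<in> S - (\<lambda>\<rho>. q @ \<rho>) ` T" for s
  proof -
    have "take k s \<noteq> q"
    proof
      assume "take k s = q"
      hence "s = q @ drop k s" by (metis append_take_drop_id)
      moreover have "drop k s \<in> T" using that unfolding S_def T_def by simp
      ultimately show False using that by blast
    qed
    thus ?thesis unfolding g_def tensor_def basis_def by simp
  qed
  have "sum g S = sum g ((\<lambda>\<rho>. q @ \<rho>) ` T)"
    using finS sub zero by (intro sum.mono_neutral_right) auto
  also have "\<dots> = (\<Sum>\<rho>\<in>T. g (q @ \<rho>))" by (subst sum.reindex) (simp_all add: inj_on_def)
  also have "\<dots> = (\<Sum>\<rho>\<in>T. if \<rho> ! A' then (cmod (\<Phi> \<rho>))\<^sup>2 else 0)"
    unfolding g_def tensor_def basis_def using assms by (intro sum.cong refl) (simp add: nth_append)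
  finally show ?thesis unfolding S_def T_def g_def .
qed

definition Aset :: "nat \<Rightarrow> nat \<Rightarrow> nat list set" where "Aset n p = {a. length a = n \<and> set a \<subseteq> {..<p}}"
definition uinv :: "nat \<Rightarrow> nat \<Rightarrow> nat" where "uinv p t = (SOME u. u < p \<and> [t * u = 1] (mod p))"
definition bv :: "nat \<Rightarrow> nat \<Rightarrow> nat list \<Rightarrow> nat list" where "bv p t a = map (\<lambda>y. (y + p - uinv p t) mod p) a"
definition fz :: "bool list set \<Rightarrow> nat \<Rightarrow> (nat \<Rightarrow> int) \<Rightarrow> int" where
  "fz L n y = (\<Sum>s\<in>{s\<in>L. length s = n}. \<Prod>i<n. if s ! i then y i else 1 - y i)"
definition vv :: "bool list set \<Rightarrow> nat \<Rightarrow> nat \<Rightarrow> nat \<Rightarrow> nat list \<Rightarrow> int" where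
  "vv L n p t a = fz L n (\<lambda>i. int t * int (a ! i)) mod int p"
definition ph :: "nat \<Rightarrow> int \<Rightarrow> complex" where "ph p z = cis (2 * pi * real_of_int z / real p)"
definition cc :: "nat \<Rightarrow> nat \<Rightarrow> complex" where "cc n p = complex_of_real (1 / sqrt (real ((p - 1) * p ^ (n + 1))))"
definition astr :: "nat \<Rightarrow> nat \<Rightarrow> nat list \<Rightarrow> nat \<Rightarrow> bool list" where
  "astr p t a j = encA p a @ encA p (bv p t a) @ ohl (j * p + t) (p * p)"
definition Om :: "nat \<Rightarrow> nat \<Rightarrow> (nat \<times> nat list) set" where "Om n p = {1..<p} \<times> Aset n p"
definition Adv :: "bool list set \<Rightarrow> nat \<Rightarrow> nat \<Rightarrow> qstate" where
  "Adv L n p = (\<lambda>s. \<Sum>\<omega>\<in>Om n p. \<Sum>j<p. cc n p * ph p (int j * (1 - vv L n p (fst \<omega>) (snd \<omega>)))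
      * (if s = astr p (fst \<omega>) (snd \<omega>) j then 1 else 0))"

definition phidx :: "nat \<Rightarrow> nat \<Rightarrow> (nat \<times> nat \<times> nat \<times> nat) list" where
  "phidx n p = concat (map (\<lambda>i. concat (map (\<lambda>c. concat (map (\<lambda>j. map (\<lambda>t. (i, c, j, t)) [0..<p]) [0..<p])) [0..<p])) [0..<n])"
definition phf1 :: "nat \<Rightarrow> nat \<times> nat \<times> nat \<times> nat \<Rightarrow> nat" where
  "phf1 p z = (case z of (i, c, j, t) \<Rightarrow> p * p + 1 + i * p + c)"
definition phf2 :: "nat \<Rightarrow> nat \<times> nat \<times> nat \<times> nat \<Rightarrow> nat" where
  "phf2 p z = (case z of (i, c, j, t) \<Rightarrow> j * p + t)"
definition phD :: "nat \<Rightarrow> nat \<times> nat \<times> nat \<times> nat \<Rightarrow> bool \<Rightarrow> bool \<Rightarrow> complex" where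
  "phD p z = (case z of (i, c, j, t) \<Rightarrow> (\<lambda>a b. if a \<and> b then ph p (int j * int t ^ (i + 1)) else 1))"
definition V2rel :: "nat \<Rightarrow> nat \<Rightarrow> gate list" where
  "V2rel n p = map (\<lambda>z. (phf1 p z, phf2 p z, diag2 (phD p z))) (phidx n p)
     @ concat (map (rowgates p) [1..<p]) @ map (\<lambda>t. (t, p * p, cnotU)) [1..<p]"
definition V2c :: "nat \<Rightarrow> nat \<Rightarrow> gate list" where
  "V2c n p = map (shiftg (n + 2 * n * p)) (V2rel n p) @ [(0, n + 2 * n * p + p * p, swapU)]"

definition Hr :: "nat \<Rightarrow> nat \<Rightarrow> bool list \<Rightarrow> nat \<Rightarrow> int" where
  "Hr n p r t = (\<Sum>i<n. \<Sum>c<p. if r ! (i * p + c) then int t ^ (i + 1) else 0)"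

lemma sum_pair: "(\<Sum>\<omega>\<in>A \<times> B. g \<omega>) = (\<Sum>t\<in>A. \<Sum>a\<in>B. g (t, a))"
  by (simp add: sum.cartesian_product)

lemma length_astr: "a \<in> Aset n p \<Longrightarrow> length (astr p t a j) = 2 * n * p + p * p"
  unfolding astr_def Aset_def bv_def by simp

locale protL = prot +
  fixes L :: "bool list set"
begin

definition wst :: "nat \<times> nat list \<Rightarrow> bool list" where
  "wst \<omega> = x @ encA p (snd \<omega>) @ encA p (bv p (fst \<omega>) (snd \<omega>))"

definition Rw :: "nat \<times> nat list \<Rightarrow> qstate" where
  "Rw \<omega> = (\<lambda>\<rho>. \<Sum>j<p. ph p (int j * (1 - vv L n p (fst \<omega>) (snd \<omega>))) * (if \<rho> = ohl (j * p + fst \<omega>) (p * p) @ [False] then 1 else 0))"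

lemma length_wst: "\<omega> \<in> Om n p \<Longrightarrow> length (wst \<omega>) = k"
  unfolding wst_def Om_def Aset_def bv_def using lx by auto

lemma take_wst: "\<omega> \<in> Om n p \<Longrightarrow> take n (wst \<omega>) = x"
  unfolding wst_def using lx by simp

lemma phi0:
  "tensor n (basis x) (tensor (2 * n * p + p * p) (Adv L n p) (basis [False])) =
   (\<lambda>s. \<Sum>\<omega>\<in>Om n p. cc n p * tensor k (basis (wst \<omega>)) (Rw \<omega>) s)"
proof (rule ext)
  fix s :: "bool list"
  define aa where "aa = 2 * n * p + p * p"
  have ind: "(if take n s = x then 1 else 0) * ((if take aa (drop n s) = astr p (fst \<omega>) (snd \<omega>) j then 1 else 0) *
             (if drop aa (drop n s) = [False] then 1 else 0)) =
             (if take k s = wst \<omega> then 1 else 0) * (if drop k s = ohl (j * p + fst \<omega>) (p * p) @ [False] then 1 else (0::complex))"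
    if "\<omega> \<in> Om n p" for \<omega> j
  proof -
    have la: "length (astr p (fst \<omega>) (snd \<omega>) j) = aa" using that length_astr unfolding Om_def aa_def by auto
    have i1: "(take n s = x \<and> take aa (drop n s) = astr p (fst \<omega>) (snd \<omega>) j \<and> drop aa (drop n s) = [False])
          \<longleftrightarrow> s = x @ astr p (fst \<omega>) (snd \<omega>) j @ [False]"
    proof -
      have "(take aa (drop n s) = astr p (fst \<omega>) (snd \<omega>) j \<and> drop aa (drop n s) = [False]) \<longleftrightarrow>
            drop n s = astr p (fst \<omega>) (snd \<omega>) j @ [False]"
        by (rule take_drop_eq_append[OF la])
      moreover have "(take n s = x \<and> drop n s = astr p (fst \<omega>) (snd \<omega>) j @ [False]) \<longleftrightarrow>
            s = x @ astr p (fst \<omega>) (snd \<omega>) j @ [False]"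
        by (rule take_drop_eq_append[OF lx])
      ultimately show ?thesis by blast
    qed
    have i2: "(take k s = wst \<omega> \<and> drop k s = ohl (j * p + fst \<omega>) (p * p) @ [False])
          \<longleftrightarrow> s = wst \<omega> @ ohl (j * p + fst \<omega>) (p * p) @ [False]"
      by (rule take_drop_eq_append[OF length_wst[OF that]])
    have i3: "x @ astr p (fst \<omega>) (snd \<omega>) j @ [False] = wst \<omega> @ ohl (j * p + fst \<omega>) (p * p) @ [False]"
      unfolding astr_def wst_def by simp
    have i4: "(take n s = x \<and> take aa (drop n s) = astr p (fst \<omega>) (snd \<omega>) j \<and> drop aa (drop n s) = [False])
          \<longleftrightarrow> (take k s = wst \<omega> \<and> drop k s = ohl (j * p + fst \<omega>) (p * p) @ [False])"
      unfolding i1 i2 i3 ..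
    have m3: "\<And>A B C. (if A then 1 else 0) * ((if B then 1 else 0) * (if C then 1 else 0)) = (if A \<and> B \<and> C then 1 else (0::complex))"
      by simp
    have m2: "\<And>A B. (if A then 1 else 0) * (if B then 1 else 0) = (if A \<and> B then 1 else (0::complex))"
      by simp
    show ?thesis unfolding m3 m2 i4 ..
  qed
  have "tensor n (basis x) (tensor aa (Adv L n p) (basis [False])) s =
     (\<Sum>\<omega>\<in>Om n p. \<Sum>j<p. cc n p * ph p (int j * (1 - vv L n p (fst \<omega>) (snd \<omega>))) *
       ((if take n s = x then 1 else 0) * ((if take aa (drop n s) = astr p (fst \<omega>) (snd \<omega>) j then 1 else 0) *
             (if drop aa (drop n s) = [False] then 1 else 0))))"
    unfolding tensor_def basis_def Adv_def
    by (simp add: sum_distrib_left sum_distrib_right mult_ac)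
  also have "\<dots> = (\<Sum>\<omega>\<in>Om n p. \<Sum>j<p. cc n p * ph p (int j * (1 - vv L n p (fst \<omega>) (snd \<omega>))) *
       ((if take k s = wst \<omega> then 1 else 0) * (if drop k s = ohl (j * p + fst \<omega>) (p * p) @ [False] then 1 else 0)))"
    using ind by (intro sum.cong refl) simp
  also have "\<dots> = (\<Sum>\<omega>\<in>Om n p. cc n p * tensor k (basis (wst \<omega>)) (Rw \<omega>) s)"
    unfolding tensor_def basis_def Rw_def by (simp add: sum_distrib_left sum_distrib_right mult_ac)
  finally show "tensor n (basis x) (tensor (2 * n * p + p * p) (Adv L n p) (basis [False])) s =
     (\<Sum>\<omega>\<in>Om n p. cc n p * tensor k (basis (wst \<omega>)) (Rw \<omega>) s)" unfolding aa_def .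
qed

lemma finite_Aset: "finite (Aset n p)"
proof -
  have "Aset n p \<subseteq> {a. set a \<subseteq> {..<p} \<and> length a = n}" unfolding Aset_def by auto
  thus ?thesis using finite_lists_length_eq[of "{..<p}" n] finite_subset by auto
qed

lemma finite_Om: "finite (Om n p)" unfolding Om_def using finite_Aset by simp

lemma V1_low: "\<forall>g\<in>set (V1c n p). fst g < k \<and> fst (snd g) < k"
  unfolding V1c_def using ctl_lt by fastforce

abbreviation Pre :: "nat \<times> nat list \<Rightarrow> qstate" where "Pre \<omega> \<equiv> prodst k (preA (wst \<omega>))"

lemma phi1:
  "run_circuit (V1c n p) (tensor n (basis x) (tensor (2 * n * p + p * p) (Adv L n p) (basis [False]))) =
   (\<lambda>s. \<Sum>\<omega>\<in>Om n p. cc n p * tensor k (Pre \<omega>) (Rw \<omega>) s)"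
proof -
  have "run_circuit (V1c n p) (\<lambda>s. \<Sum>\<omega>\<in>Om n p. cc n p * tensor k (basis (wst \<omega>)) (Rw \<omega>) s) =
        (\<lambda>s. \<Sum>\<omega>\<in>Om n p. cc n p * run_circuit (V1c n p) (tensor k (basis (wst \<omega>)) (Rw \<omega>)) s)"
    by (rule run_lin[OF finite_Om])
  also have "\<dots> = (\<lambda>s. \<Sum>\<omega>\<in>Om n p. cc n p * tensor k (Pre \<omega>) (Rw \<omega>) s)"
  proof (intro ext sum.cong refl)
    fix s \<omega> assume o: "\<omega> \<in> Om n p"
    have "run_circuit (V1c n p) (tensor k (basis (wst \<omega>)) (Rw \<omega>)) = tensor k (run_circuit (V1c n p) (basis (wst \<omega>))) (Rw \<omega>)"
      by (rule run_tensor_low[OF V1_low])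
    also have "run_circuit (V1c n p) (basis (wst \<omega>)) = Pre \<omega>"
      by (rule Pre_prod[OF length_wst[OF o] take_wst[OF o]])
    finally show "cc n p * run_circuit (V1c n p) (tensor k (basis (wst \<omega>)) (Rw \<omega>)) s = cc n p * tensor k (Pre \<omega>) (Rw \<omega>) s"
      by simp
  qed
  finally show ?thesis unfolding phi0 .
qed

definition Mq :: "bool list \<Rightarrow> nat \<Rightarrow> nat \<Rightarrow> complex" where
  "Mq q t j = (\<Sum>a\<in>Aset n p. cc n p * Pre (t, a) q * ph p (int j * (1 - vv L n p t a)))"

lemma after_meas:
  assumes "length q = k"
  shows "tensor (k + p * p + 1) (proj_prefix k q (\<lambda>s. \<Sum>\<omega>\<in>Om n p. cc n p * tensor k (Pre \<omega>) (Rw \<omega>) s)) (basis r)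
       = tensor k (basis q) (Form p (Mq q) (\<lambda>_ _. False) r)"
proof (rule ext)
  fix s :: "bool list"
  have tk: "take k (take (k + p * p + 1) s) = take k s" by simp
  have dk: "drop k (take (k + p * p + 1) s) = take (p * p + 1) (drop k s)" by (simp add: drop_take)
  have dm: "drop (k + p * p + 1) s = drop (p * p + 1) (drop k s)" by (simp add: algebra_simps)
  have ind: "(if take (p * p + 1) \<rho> = ohl (j * p + t) (p * p) @ [False] then 1 else 0) * (if drop (p * p + 1) \<rho> = r then 1 else 0)
     = (if \<rho> = rstr p j t False r then 1 else (0::complex))" for \<rho> j t
  proof -
    have "length (ohl (j * p + t) (p * p) @ [False]) = p * p + 1" by simp
    from take_drop_eq_append[OF this, of \<rho> r] show ?thesis unfolding rstr_def by auto
  qed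
  have Fq: "Form p (Mq q) (\<lambda>_ _. False) r \<rho> =
     (\<Sum>\<omega>\<in>Om n p. cc n p * Pre \<omega> q * Rw \<omega> (take (p * p + 1) \<rho>)) * (if drop (p * p + 1) \<rho> = r then 1 else 0)" for \<rho>
  proof -
    have "(\<Sum>\<omega>\<in>Om n p. cc n p * Pre \<omega> q * Rw \<omega> (take (p * p + 1) \<rho>)) * (if drop (p * p + 1) \<rho> = r then 1 else 0)
        = (\<Sum>\<omega>\<in>Om n p. \<Sum>j<p. cc n p * Pre \<omega> q * ph p (int j * (1 - vv L n p (fst \<omega>) (snd \<omega>))) *
             (if \<rho> = rstr p j (fst \<omega>) False r then 1 else 0))"
      unfolding Rw_def sum_distrib_right sum_distrib_left
      by (intro sum.cong refl) (simp add: ind[symmetric] mult_ac)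
    also have "\<dots> = (\<Sum>t\<in>{1..<p}. \<Sum>a\<in>Aset n p. \<Sum>j<p. cc n p * Pre (t, a) q * ph p (int j * (1 - vv L n p t a)) *
             (if \<rho> = rstr p j t False r then 1 else 0))"
      unfolding Om_def sum_pair by simp
    also have "\<dots> = (\<Sum>t\<in>{1..<p}. \<Sum>j<p. \<Sum>a\<in>Aset n p. cc n p * Pre (t, a) q * ph p (int j * (1 - vv L n p t a)) *
             (if \<rho> = rstr p j t False r then 1 else 0))"
      by (intro sum.cong refl) (rule sum.swap)
    also have "\<dots> = Form p (Mq q) (\<lambda>_ _. False) r \<rho>"
      unfolding Form_def Mq_def by (simp add: sum_distrib_right)
    finally show ?thesis by simp
  qed
  show "tensor (k + p * p + 1) (proj_prefix k q (\<lambda>s. \<Sum>\<omega>\<in>Om n p. cc n p * tensor k (Pre \<omega>) (Rw \<omega>) s)) (basis r) s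
       = tensor k (basis q) (Form p (Mq q) (\<lambda>_ _. False) r) s"
  proof (cases "take k s = q")
    case True
    show ?thesis unfolding tensor_def proj_prefix_def basis_def tk dk dm Fq using True
      by (simp add: sum_distrib_right mult_ac)
  next
    case False
    show ?thesis unfolding tensor_def proj_prefix_def basis_def tk using False by simp
  qed
qed

end

lemma ph_add: "ph p (a + b) = ph p a * ph p b"
  unfolding ph_def cis_mult by (simp add: add_divide_distrib distrib_left)

lemma ph_0[simp]: "ph p 0 = 1" unfolding ph_def by simp

lemma ph_sum: "finite A \<Longrightarrow> (\<Prod>x\<in>A. ph p (f x)) = ph p (\<Sum>x\<in>A. f x)"
  by (induction A rule: finite_induct) (simp_all add: ph_add)

lemma ph_if: "(if b then ph p z else 1) = ph p (if b then z else 0)" by simp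

lemma prod_single: fixes a p :: nat shows "a < p \<Longrightarrow> (\<Prod>k<p. if k = a then f k else 1) = (f a :: complex)"
proof -
  assume a: "a < p"
  have "(\<Prod>k<p. if k = a then f k else 1) = (if a = a then f a else 1) * (\<Prod>k\<in>{..<p}-{a}. if k = a then f k else 1)"
    by (rule prod.remove) (simp_all add: a)
  also have "(\<Prod>k\<in>{..<p}-{a}. if k = a then f k else 1) = 1" by (intro prod.neutral) auto
  finally show ?thesis by simp
qed

lemma prod2_single: fixes j t p :: nat assumes "j < p" "t < p"
  shows "(\<Prod>j'<p. \<Prod>t'<p. if j' = j \<and> t' = t then Y else 1) = (Y :: complex)"
proof -
  have "(\<Prod>t'<p. if j' = j \<and> t' = t then Y else 1) = (if j' = j then Y else 1)" for j'
  proof (cases "j' = j")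
    case True
    then show ?thesis using prod_single[OF assms(2), of "\<lambda>_. Y"] by simp
  next
    case False
    then show ?thesis by simp
  qed
  hence "(\<Prod>j'<p. \<Prod>t'<p. if j' = j \<and> t' = t then Y else 1) = (\<Prod>j'<p. if j' = j then Y else 1)"
    by (intro prod.cong refl) simp
  also have "\<dots> = Y" using prod_single[OF assms(1), of "\<lambda>_. Y"] by simp
  finally show ?thesis .
qed

lemma rstr_prov': "rstr p j t e r ! (p * p + 1 + i * p + c) = r ! (i * p + c)"
  using rstr_prov[of p j t e r "i * p + c"] by (simp add: add.assoc)

lemma phprod:
  assumes "j < p" "t < p"
  shows "prod_list (map (\<lambda>z. phD p z (rstr p j t e r ! phf1 p z) (rstr p j t e r ! phf2 p z)) (phidx n p))
       = ph p (int j * Hr n p r t)"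
proof -
  have F: "phD p (i, c, j', t') (rstr p j t e r ! phf1 p (i, c, j', t')) (rstr p j t e r ! phf2 p (i, c, j', t'))
      = (if j' = j \<and> t' = t then (if r ! (i * p + c) then ph p (int j * int t ^ (i + 1)) else 1) else 1)"
    if "j' < p" "t' < p" for i c j' t'
  proof -
    have "rstr p j t e r ! (j' * p + t') = (j = j' \<and> t = t')" using rstr_W[of j' p t' t j e r] that assms by simp
    thus ?thesis unfolding phD_def phf1_def phf2_def using rstr_prov'[of p j t e r i c] by auto
  qed
  have "prod_list (map (\<lambda>z. phD p z (rstr p j t e r ! phf1 p z) (rstr p j t e r ! phf2 p z)) (phidx n p))
      = (\<Prod>i<n. \<Prod>c<p. \<Prod>j'<p. \<Prod>t'<p. phD p (i, c, j', t') (rstr p j t e r ! phf1 p (i, c, j', t')) (rstr p j t e r ! phf2 p (i, c, j', t')))"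
    unfolding phidx_def by (simp add: pl_concat pl_upt map_map o_def)
  also have "\<dots> = (\<Prod>i<n. \<Prod>c<p. \<Prod>j'<p. \<Prod>t'<p. (if j' = j \<and> t' = t then (if r ! (i * p + c) then ph p (int j * int t ^ (i + 1)) else 1) else 1))"
    by (intro prod.cong refl) (simp add: F)
  also have "\<dots> = (\<Prod>i<n. \<Prod>c<p. (if r ! (i * p + c) then ph p (int j * int t ^ (i + 1)) else 1))"
    by (intro prod.cong refl) (rule prod2_single[OF assms])
  also have "\<dots> = (\<Prod>i<n. \<Prod>c<p. ph p (if r ! (i * p + c) then int j * int t ^ (i + 1) else 0))"
    by (simp only: ph_if)
  also have "\<dots> = ph p (\<Sum>i<n. \<Sum>c<p. if r ! (i * p + c) then int j * int t ^ (i + 1) else 0)"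
    by (simp add: ph_sum)
  also have "(\<Sum>i<n. \<Sum>c<p. if r ! (i * p + c) then int j * int t ^ (i + 1) else 0) = int j * Hr n p r t"
    unfolding Hr_def sum_distrib_left by (intro sum.cong refl) simp
  finally show ?thesis .
qed

context protL
begin

definition M1 :: "bool list \<Rightarrow> bool list \<Rightarrow> nat \<Rightarrow> nat \<Rightarrow> complex" where
  "M1 q r t j = ph p (int j * Hr n p r t) * Mq q t j"

lemma V2rel_Form:
  "run_circuit (V2rel n p) (Form p (Mq q) (\<lambda>_ _. False) r) =
   Form p (fold (rowupd p) [1..<p] (\<lambda>t j. prod_list (map (\<lambda>z. phD p z (rstr p j t False r ! phf1 p z) (rstr p j t False r ! phf2 p z)) (phidx n p)) * Mq q t j))
      (\<lambda>t j. False \<noteq> (t \<in> set [1..<p] \<and> j = 0)) r"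
  unfolding V2rel_def run_append run_diag_Form
  by (simp add: run_rows run_cnots)

lemma Mfin0:
  assumes "t \<in> {1..<p}"
  shows "fold (rowupd p) [1..<p] (\<lambda>t j. prod_list (map (\<lambda>z. phD p z (rstr p j t False r ! phf1 p z) (rstr p j t False r ! phf2 p z)) (phidx n p)) * Mq q t j) t 0
       = of_real (1 / sqrt (real p)) * (\<Sum>j<p. M1 q r t j)"
proof -
  have "fold (rowupd p) [1..<p] (\<lambda>t j. prod_list (map (\<lambda>z. phD p z (rstr p j t False r ! phf1 p z) (rstr p j t False r ! phf2 p z)) (phidx n p)) * Mq q t j) t 0
      = of_real (1 / sqrt (real p)) * (\<Sum>j<p. prod_list (map (\<lambda>z. phD p z (rstr p j t False r ! phf1 p z) (rstr p j t False r ! phf2 p z)) (phidx n p)) * Mq q t j)"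
    using assms p2 by (intro fold_rowupd_0) auto
  also have "(\<Sum>j<p. prod_list (map (\<lambda>z. phD p z (rstr p j t False r ! phf1 p z) (rstr p j t False r ! phf2 p z)) (phidx n p)) * Mq q t j)
      = (\<Sum>j<p. M1 q r t j)"
    unfolding M1_def using assms by (intro sum.cong refl) (simp add: phprod)
  finally show ?thesis .
qed

lemma acc_formula:
  "acc_prob (2 * n * p + p * p) 1 k (n * p) (Adv L n p) (V1c n p) (V2c n p) x P =
   (\<Sum>q\<in>{q. length q = k}. if length (P q) = n * p
        then (\<Sum>t\<in>{1..<p}. (cmod (of_real (1 / sqrt (real p)) * (\<Sum>j<p. M1 q (P q) t j)))\<^sup>2) else 0)"
proof -
  define \<phi> where "\<phi> = run_circuit (V1c n p) (tensor n (basis x) (tensor (2 * n * p + p * p) (Adv L n p) (basis (replicate 1 False))))"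
  have phi: "\<phi> = (\<lambda>s. \<Sum>\<omega>\<in>Om n p. cc n p * tensor k (Pre \<omega>) (Rw \<omega>) s)"
    unfolding \<phi>_def using phi1 by simp
  have m1: "n + (2 * n * p + p * p) + 1 = k + p * p + 1" by simp
  have M: "k + p * p + 1 + n * p = k + (p * p + 1 + n * p)" by simp
  have trm: "sqnorm (k + p * p + 1 + n * p) (proj_prefix 1 [True] (run_circuit (V2c n p)
        (tensor (k + p * p + 1) (proj_prefix k q \<phi>) (basis (P q))))) =
      (if length (P q) = n * p
        then (\<Sum>t\<in>{1..<p}. (cmod (of_real (1 / sqrt (real p)) * (\<Sum>j<p. M1 q (P q) t j)))\<^sup>2) else 0)"
    if q: "q \<in> {q. length q = k}" for q
  proof -
    have lq: "length q = k" using q by simp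
    have van: "\<forall>s. length s \<noteq> k \<longrightarrow> basis q s = 0" unfolding basis_def using lq by auto
    define Fm where "Fm = Form p (Mq q) (\<lambda>_ _. False) (P q)"
    have "run_circuit (V2c n p) (tensor (k + p * p + 1) (proj_prefix k q \<phi>) (basis (P q)))
        = apply_gate (0, k + p * p, swapU) (tensor k (basis q) (run_circuit (V2rel n p) Fm))"
      unfolding phi after_meas[OF lq] V2c_def run_append run_tensor_high[OF van] Fm_def by simp
    hence "sqnorm (k + p * p + 1 + n * p) (proj_prefix 1 [True] (run_circuit (V2c n p)
        (tensor (k + p * p + 1) (proj_prefix k q \<phi>) (basis (P q))))) =
        (\<Sum>s\<in>{s. length s = k + p * p + 1 + n * p}. if s ! (k + p * p) then (cmod (tensor k (basis q) (run_circuit (V2rel n p) Fm) s))\<^sup>2 else 0)"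
      using acc_swap[of "k + p * p" "k + p * p + 1 + n * p"] p2 by simp
    also have "\<dots> = (\<Sum>\<rho>\<in>{\<rho>. length \<rho> = p * p + 1 + n * p}. if \<rho> ! (p * p) then (cmod (run_circuit (V2rel n p) Fm \<rho>))\<^sup>2 else 0)"
      unfolding M by (rule sum_prefix[OF lq])
    also have "\<dots> = (if length (P q) = n * p
        then (\<Sum>t\<in>{1..<p}. (cmod (of_real (1 / sqrt (real p)) * (\<Sum>j<p. M1 q (P q) t j)))\<^sup>2) else 0)"
    proof (cases "length (P q) = n * p")
      case True
      have "(\<Sum>\<rho>\<in>{\<rho>. length \<rho> = p * p + 1 + n * p}. if \<rho> ! (p * p) then (cmod (run_circuit (V2rel n p) Fm \<rho>))\<^sup>2 else 0)
         = (\<Sum>t\<in>{1..<p}. (cmod (fold (rowupd p) [1..<p] (\<lambda>t j. prod_list (map (\<lambda>z. phD p z (rstr p j t False (P q) ! phf1 p z) (rstr p j t False (P q) ! phf2 p z)) (phidx n p)) * Mq q t j) t 0))\<^sup>2)"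
        unfolding Fm_def V2rel_Form by (rule accept_Form[OF True]) auto
      also have "\<dots> = (\<Sum>t\<in>{1..<p}. (cmod (of_real (1 / sqrt (real p)) * (\<Sum>j<p. M1 q (P q) t j)))\<^sup>2)"
      proof (intro sum.cong refl)
        fix t assume "t \<in> {1..<p}"
        from Mfin0[OF this, of "P q" q] show "(cmod (fold (rowupd p) [1..<p] (\<lambda>t j. prod_list (map (\<lambda>z. phD p z (rstr p j t False (P q) ! phf1 p z) (rstr p j t False (P q) ! phf2 p z)) (phidx n p)) * Mq q t j) t 0))\<^sup>2 =
          (cmod (of_real (1 / sqrt (real p)) * (\<Sum>j<p. M1 q (P q) t j)))\<^sup>2" by simp
      qed
      finally show ?thesis using True by simp
    next
      case False
      show ?thesis unfolding Fm_def V2rel_Form using accept_Form_badlen[OF False] False by simp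
    qed
    finally show ?thesis .
  qed
  show ?thesis unfolding acc_prob_def Let_def lx m1 \<phi>_def[symmetric] using trm by (intro sum.cong refl) simp
qed

end

context protL
begin

definition selpos :: "nat \<Rightarrow> nat \<Rightarrow> nat" where
  "selpos i c = n + (if x ! i then n * p else 0) + i * p + c"

definition sel :: "nat \<Rightarrow> nat list \<Rightarrow> nat \<Rightarrow> nat" where
  "sel t a i = (if x ! i then bv p t a ! i else a ! i)"

definition cons :: "bool list \<Rightarrow> nat \<Rightarrow> nat list \<Rightarrow> bool" where
  "cons q t a \<longleftrightarrow> (\<forall>m<k. \<not> erased m \<longrightarrow> q ! m = wst (t, a) ! m)"

lemma ip_lt: "i < n \<Longrightarrow> c < p \<Longrightarrow> i * p + c < n * p"
proof -
  assume "i < n" "c < p"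
  hence "i * p + c < i * p + p" by simp
  also have "\<dots> = (i + 1) * p" by simp
  also have "\<dots> \<le> n * p" using \<open>i < n\<close> by (intro mult_le_mono1) simp
  finally show ?thesis .
qed

lemma ctl_A: "i < n \<Longrightarrow> c < p \<Longrightarrow> ctl1 n p (n + i * p + c) = i \<and> cv1 n p (n + i * p + c)"
  unfolding ctl1_def cv1_def using ip_lt[of i c] by simp

lemma ctl_B: "i < n \<Longrightarrow> c < p \<Longrightarrow> ctl1 n p (n + n * p + i * p + c) = i \<and> \<not> cv1 n p (n + n * p + i * p + c)"
proof -
  assume a: "i < n" "c < p"
  have "n + n * p + i * p + c - n = n * p + (i * p + c)" by simp
  moreover have "(n * p + (i * p + c)) mod (n * p) = i * p + c" using ip_lt[OF a] by simp
  ultimately show ?thesis unfolding ctl1_def cv1_def using a by simp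
qed

lemma wst_A: "(t, a) \<in> Om n p \<Longrightarrow> i < n \<Longrightarrow> c < p \<Longrightarrow> wst (t, a) ! (n + i * p + c) = (c = a ! i)"
proof -
  assume o: "(t, a) \<in> Om n p" and ic: "i < n" "c < p"
  have la: "length a = n" using o unfolding Om_def Aset_def by simp
  have "wst (t, a) ! (n + i * p + c) = (encA p a @ encA p (bv p t a)) ! (i * p + c)"
    unfolding wst_def using lx by (simp add: nth_append add.assoc)
  also have "\<dots> = encA p a ! (i * p + c)" using ip_lt[OF ic] la by (simp add: nth_append)
  also have "\<dots> = (c = a ! i)" using nth_encA[of i a c p] ic la by simp
  finally show ?thesis .
qed

lemma wst_B: "(t, a) \<in> Om n p \<Longrightarrow> i < n \<Longrightarrow> c < p \<Longrightarrow> wst (t, a) ! (n + n * p + i * p + c) = (c = bv p t a ! i)"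
proof -
  assume o: "(t, a) \<in> Om n p" and ic: "i < n" "c < p"
  have la: "length a = n" using o unfolding Om_def Aset_def by simp
  have "wst (t, a) ! (n + n * p + i * p + c) = (encA p a @ encA p (bv p t a)) ! (n * p + (i * p + c))"
    unfolding wst_def using lx by (simp add: nth_append add.assoc)
  also have "\<dots> = encA p (bv p t a) ! (i * p + c)" using la by (simp add: nth_append)
  also have "\<dots> = (c = bv p t a ! i)" using nth_encA[of i "bv p t a" c p] ic la by (simp add: bv_def)
  finally show ?thesis .
qed

lemma selpos_lt: "i < n \<Longrightarrow> c < p \<Longrightarrow> selpos i c < k"
  unfolding selpos_def using ip_lt[of i c] by auto

lemma selpos_not_erased: "i < n \<Longrightarrow> c < p \<Longrightarrow> \<not> erased (selpos i c)"
  unfolding erased_def selpos_def using ctl_A ctl_B by (cases "x ! i") (simp_all add: add.assoc)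

lemma wst_selpos: "(t, a) \<in> Om n p \<Longrightarrow> i < n \<Longrightarrow> c < p \<Longrightarrow> wst (t, a) ! selpos i c = (c = sel t a i)"
  unfolding selpos_def sel_def using wst_A wst_B by (cases "x ! i") (simp_all add: add.assoc)

lemma cons_char:
  assumes o: "(t, a) \<in> Om n p" and lq: "length q = k"
  shows "cons q t a \<longleftrightarrow> take n q = x \<and> (\<forall>i<n. \<forall>c<p. q ! selpos i c = (c = sel t a i))"
proof
  assume C: "cons q t a"
  have "take n q = x"
  proof (rule nth_equalityI)
    show "length (take n q) = length x" using lq lx by simp
    fix m assume "m < length (take n q)"
    hence m: "m < n" using lq by simp
    hence "\<not> erased m" unfolding erased_def by simp
    moreover have "m < k" using m by simp
    ultimately have "q ! m = wst (t, a) ! m" using C unfolding cons_def by blast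
    also have "\<dots> = x ! m" unfolding wst_def using m lx by (simp add: nth_append)
    finally show "take n q ! m = x ! m" using m by simp
  qed
  moreover have "\<forall>i<n. \<forall>c<p. q ! selpos i c = (c = sel t a i)"
  proof (intro allI impI)
    fix i c assume ic: "i < n" "c < p"
    have "q ! selpos i c = wst (t, a) ! selpos i c"
      using C selpos_lt[OF ic] selpos_not_erased[OF ic] unfolding cons_def by blast
    thus "q ! selpos i c = (c = sel t a i)" using wst_selpos[OF o ic] by simp
  qed
  ultimately show "take n q = x \<and> (\<forall>i<n. \<forall>c<p. q ! selpos i c = (c = sel t a i))" by simp
next
  assume R: "take n q = x \<and> (\<forall>i<n. \<forall>c<p. q ! selpos i c = (c = sel t a i))"
  show "cons q t a" unfolding cons_def
  proof (intro allI impI)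
    fix m assume m: "m < k" "\<not> erased m"
    show "q ! m = wst (t, a) ! m"
    proof (cases "m < n")
      case True
      have "q ! m = take n q ! m" using True by simp
      also have "\<dots> = x ! m" using R by simp
      also have "\<dots> = wst (t, a) ! m" unfolding wst_def using True lx by (simp add: nth_append)
      finally show ?thesis .
    next
      case False
      have pp: "p > 0" using p2 by simp
      show ?thesis
      proof (cases "m < n + n * p")
        case True
        define i c where "i = (m - n) div p" and "c = (m - n) mod p"
        have mic: "m = n + i * p + c" unfolding i_def c_def using False by simp
        have c: "c < p" unfolding c_def using pp by simp
        have i: "i < n"
        proof -
          have "m - n < n * p" using True False by simp
          thus ?thesis unfolding i_def using pp by (simp add: div_less_iff_less_mult)
        qed
        have "\<not> x ! i" using m(2) ctl_A[OF i c] False m(1) unfolding erased_def mic by auto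
        hence sp: "selpos i c = m" unfolding selpos_def mic by simp
        have "q ! m = (c = sel t a i)" using R i c sp by metis
        also have "\<dots> = wst (t, a) ! m" using wst_selpos[OF o i c] sp by simp
        finally show ?thesis .
      next
        case F2: False
        define i c where "i = (m - n - n * p) div p" and "c = (m - n - n * p) mod p"
        have mic: "m = n + n * p + i * p + c" unfolding i_def c_def using F2 by simp
        have c: "c < p" unfolding c_def using pp by simp
        have i: "i < n"
        proof -
          have "m - n - n * p < n * p" using m(1) F2 by simp
          thus ?thesis unfolding i_def using pp by (simp add: div_less_iff_less_mult)
        qed
        have "x ! i" using m(2) ctl_B[OF i c] F2 m(1) unfolding erased_def mic by auto
        hence sp: "selpos i c = m" unfolding selpos_def mic by simp
        have "q ! m = (c = sel t a i)" using R i c sp by metis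
        also have "\<dots> = wst (t, a) ! m" using wst_selpos[OF o i c] sp by simp
        finally show ?thesis .
      qed
    qed
  qed
qed

end

lemma uinv_prop:
  assumes "prime p" "t \<in> {1..<p}"
  shows "uinv p t < p \<and> [t * uinv p t = 1] (mod p)"
proof -
  have "\<not> p dvd t" using assms(2) by (auto dest: dvd_imp_le)
  hence "coprime p t" by (rule prime_imp_coprime[OF assms(1)])
  hence "coprime t p" by (simp add: coprime_commute)
  then obtain y where y: "[t * y = Suc 0] (mod p)" using cong_solve_coprime_nat by blast
  have p0: "p > 0" using assms(1) prime_gt_0_nat by simp
  have "[t * (y mod p) = t * y] (mod p)" by (simp add: cong_def mod_mult_right_eq)
  hence "[t * (y mod p) = 1] (mod p)" using y by (metis One_nat_def cong_trans)
  moreover have "y mod p < p" using p0 by simp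
  ultimately have "\<exists>u. u < p \<and> [t * u = 1] (mod p)" by blast
  thus ?thesis unfolding uinv_def by (rule someI_ex)
qed

lemma mod_shift_inj:
  fixes y y' u p :: nat
  assumes "y < p" "y' < p" "u \<le> p" "(y + p - u) mod p = (y' + p - u) mod p"
  shows "y = y'"
proof -
  have "(y + (p - u)) mod p = (y' + (p - u)) mod p" using assms by simp
  hence "[y + (p - u) = y' + (p - u)] (mod p)" by (simp add: cong_def)
  hence "[y = y'] (mod p)" by (simp add: cong_add_rcancel_nat)
  thus ?thesis using assms(1,2) by (simp add: cong_def)
qed

lemma mod_shift_back:
  fixes d u p :: nat
  assumes "d < p" "u \<le> p"
  shows "((d + u) mod p + p - u) mod p = d"
proof -
  have "((d + u) mod p + p - u) mod p = ((d + u) mod p + (p - u)) mod p" using assms by simp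
  also have "\<dots> = (d + u + (p - u)) mod p" by (simp add: mod_add_left_eq)
  also have "d + u + (p - u) = d + p" using assms by simp
  finally show ?thesis using assms by simp
qed

locale protP = protL +
  assumes pp: "prime p"
begin

lemma sel_lt: "(t, a) \<in> Om n p \<Longrightarrow> i < n \<Longrightarrow> sel t a i < p"
  unfolding sel_def bv_def Om_def Aset_def using p2 by (auto simp: subset_iff)

lemma cons_unique:
  assumes o: "(t, a) \<in> Om n p" "(t, a') \<in> Om n p" and lq: "length q = k"
    and c: "cons q t a" "cons q t a'"
  shows "a = a'"
proof -
  have s: "sel t a i = sel t a' i" if i: "i < n" for i
  proof -
    have "q ! selpos i (sel t a i) = True" using cons_char[OF o(1) lq] c(1) i sel_lt[OF o(1) i] by simp
    moreover have "q ! selpos i (sel t a i) = (sel t a i = sel t a' i)"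
      using cons_char[OF o(2) lq] c(2) i sel_lt[OF o(1) i] by simp
    ultimately show ?thesis by simp
  qed
  have la: "length a = n" "length a' = n" "set a \<subseteq> {..<p}" "set a' \<subseteq> {..<p}" "t \<in> {1..<p}"
    using o unfolding Om_def Aset_def by auto
  have u: "uinv p t \<le> p" using uinv_prop[OF pp la(5)] by simp
  show ?thesis
  proof (rule nth_equalityI)
    show "length a = length a'" using la by simp
    fix i assume "i < length a"
    hence i: "i < n" using la by simp
    have ai: "a ! i < p" "a' ! i < p" using la i by (auto simp: subset_iff)
    show "a ! i = a' ! i"
    proof (cases "x ! i")
      case True
      hence "(a ! i + p - uinv p t) mod p = (a' ! i + p - uinv p t) mod p"
        using s[OF i] la i unfolding sel_def bv_def by simp
      thus ?thesis using mod_shift_inj[OF ai u] by simp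
    next
      case False
      thus ?thesis using s[OF i] unfolding sel_def by simp
    qed
  qed
qed

lemma cons_exists:
  assumes o: "(t, a) \<in> Om n p" and lq: "length q = k" and c: "cons q t a" and t': "t' \<in> {1..<p}"
  shows "\<exists>a'. (t', a') \<in> Om n p \<and> cons q t' a'"
proof -
  define a' where "a' = map (\<lambda>i. if x ! i then (sel t a i + uinv p t') mod p else sel t a i) [0..<n]"
  have u: "uinv p t' \<le> p" using uinv_prop[OF pp t'] by simp
  have o': "(t', a') \<in> Om n p"
    unfolding Om_def Aset_def a'_def using t' sel_lt[OF o] p2 by (auto simp: subset_iff)
  have ss: "sel t' a' i = sel t a i" if i: "i < n" for i
  proof (cases "x ! i")
    case True
    have "sel t' a' i = ((sel t a i + uinv p t') mod p + p - uinv p t') mod p"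
      unfolding sel_def bv_def a'_def using True i by simp
    also have "\<dots> = sel t a i" by (rule mod_shift_back[OF sel_lt[OF o i] u])
    finally show ?thesis .
  next
    case False
    then show ?thesis unfolding sel_def a'_def using i by simp
  qed
  have "cons q t' a'"
    using cons_char[OF o lq] cons_char[OF o' lq] c ss by simp
  thus ?thesis using o' by blast
qed

definition xi :: "nat \<Rightarrow> int" where "xi i = (if x ! i then 1 else 0)"

lemma value_cong:
  assumes o: "(t, a) \<in> Om n p" and i: "i < n"
  shows "int p dvd (int t * int (a ! i) - (xi i + int t * int (sel t a i)))"
proof (cases "x ! i")
  case False
  then show ?thesis unfolding xi_def sel_def by simp
next
  case True
  have t: "t \<in> {1..<p}" using o unfolding Om_def by simp
  define u where "u = uinv p t"
  have up: "u < p" "[t * u = 1] (mod p)" using uinv_prop[OF pp t] unfolding u_def by auto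
  have ai: "a ! i < p" using o i unfolding Om_def Aset_def by (auto simp: subset_iff)
  define N where "N = a ! i + p - u"
  have sN: "sel t a i = N mod p" unfolding sel_def bv_def N_def u_def using True o i
    unfolding Om_def Aset_def by simp
  have intN: "int N = int (a ! i) + int p - int u" unfolding N_def using up by simp
  have Ndec: "int N = int p * int (N div p) + int (N mod p)"
    by (metis of_nat_add of_nat_mult div_mult_mod_eq mult.commute)
  have tu: "int p dvd int t * int u - 1"
  proof -
    have "[int (t * u) = int 1] (mod int p)" using up(2) cong_int_iff by blast
    thus ?thesis by (simp add: cong_iff_dvd_diff)
  qed
  have e: "int (N mod p) = int (a ! i) + int p - int u - int p * int (N div p)" using intN Ndec by simp
  have "int t * int (a ! i) - (xi i + int t * int (sel t a i)) =
        (int t * int u - 1) + int p * (int t * int (N div p) - int t)"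
    unfolding xi_def sN e using True by (simp add: algebra_simps)
  thus ?thesis using tu by simp
qed

definition dq :: "bool list \<Rightarrow> nat \<Rightarrow> nat" where "dq q i = (LEAST c. q ! selpos i c)"

lemma dq_sel:
  assumes o: "(t, a) \<in> Om n p" and lq: "length q = k" and c: "cons q t a" and i: "i < n"
  shows "dq q i = sel t a i"
proof -
  have R: "\<forall>c<p. q ! selpos i c = (c = sel t a i)" using cons_char[OF o lq] c i by simp
  have sl: "sel t a i < p" by (rule sel_lt[OF o i])
  show ?thesis unfolding dq_def
  proof (rule Least_equality)
    show "q ! selpos i (sel t a i)" using R sl by simp
    fix y assume "q ! selpos i y"
    show "sel t a i \<le> y"
    proof (rule ccontr)
      assume "\<not> sel t a i \<le> y"
      hence "y < sel t a i" by simp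
      hence "y < p" "y \<noteq> sel t a i" using sl by auto
      thus False using R \<open>q ! selpos i y\<close> by simp
    qed
  qed
qed

end

lemma concat_map_nth:
  "i < length xs \<Longrightarrow> c < p \<Longrightarrow> concat (map (\<lambda>y. map (g y) [0..<p]) xs) ! (i * p + c) = g (xs ! i) c"
proof (induction xs arbitrary: i)
  case Nil
  then show ?case by simp
next
  case (Cons y xs)
  show ?case
  proof (cases i)
    case 0
    then show ?thesis using Cons.prems by (simp add: nth_append)
  next
    case (Suc i')
    have "Suc i' * p + c = p + (i' * p + c)" by simp
    then show ?thesis using Cons Suc by (simp add: nth_append)
  qed
qed

lemma length_concat_map: "length (concat (map (\<lambda>y. map (g y) [0..<p]) xs)) = length xs * p"
  by (induction xs) simp_all

lemma sum_lt_count: "(\<Sum>c<p. if c < h then (1::int) else 0) = int (min h p)"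
  by (induction p) (auto simp: min_def)

lemma poly_coeffs_le:
  fixes F :: "int poly"
  assumes "degree F \<le> N"
  shows "poly F t = (\<Sum>i\<le>N. coeff F i * t ^ i)"
proof -
  have "poly F t = (\<Sum>i\<le>degree F. coeff F i * t ^ i)" by (rule poly_altdef)
  also have "\<dots> = (\<Sum>i\<le>N. coeff F i * t ^ i)"
    by (rule sum.mono_neutral_left) (use assms in \<open>auto simp: coeff_eq_0\<close>)
  finally show ?thesis .
qed

lemma finite_Ln: "finite {s\<in>(L :: bool list set). length s = n}"
proof -
  have sub: "{s\<in>L. length s = n} \<subseteq> {s. set s \<subseteq> (UNIV :: bool set) \<and> length s = n}" by auto
  show ?thesis by (rule finite_subset[OF sub]) (rule finite_lists_length_eq, simp)
qed

context protP
begin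

definition Fp :: "(nat \<Rightarrow> nat) \<Rightarrow> int poly" where
  "Fp d = (\<Sum>s\<in>{s\<in>L. length s = n}. \<Prod>i<n. if s ! i then [:xi i, int (d i):] else [:1 - xi i, - int (d i):])"

lemma poly_Fp: "poly (Fp d) \<tau> = fz L n (\<lambda>i. xi i + \<tau> * int (d i))"
  unfolding Fp_def fz_def poly_sum poly_prod
  by (intro sum.cong refl prod.cong) (simp_all add: algebra_simps)

lemma degree_Fp: "degree (Fp d) \<le> n"
  unfolding Fp_def
proof (rule degree_sum_le)
  fix s
  have "degree (\<Prod>i<n. if s ! i then [:xi i, int (d i):] else [:1 - xi i, - int (d i):])
        \<le> (\<Sum>i<n. degree (if s ! i then [:xi i, int (d i):] else [:1 - xi i, - int (d i):]))"
    by (rule degree_prod_sum_le[unfolded o_def]) simp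
  also have "\<dots> \<le> (\<Sum>i<n. 1)" by (intro sum_mono) auto
  finally show "degree (\<Prod>i<n. if s ! i then [:xi i, int (d i):] else [:1 - xi i, - int (d i):]) \<le> n" by simp
qed (rule finite_Ln)

lemma fz_x: "fz L n xi = (if x \<in> L then 1 else 0)"
proof -
  have pr: "(\<Prod>i<n. if s ! i then xi i else 1 - xi i) = (if s = x then 1 else 0)" if "length s = n" for s
  proof (cases "s = x")
    case True
    have "(\<Prod>i<n. if s ! i then xi i else 1 - xi i) = (\<Prod>i<n. 1)"
      by (intro prod.cong refl) (simp add: True xi_def)
    then show ?thesis using True by simp
  next
    case False
    have "\<exists>i<n. s ! i \<noteq> x ! i"
    proof (rule ccontr)
      assume "\<not> (\<exists>i<n. s ! i \<noteq> x ! i)"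
      hence "s = x" using that lx by (intro nth_equalityI) auto
      thus False using False by simp
    qed
    then obtain i where i: "i < n" "s ! i \<noteq> x ! i" by blast
    have "(if s ! i then xi i else 1 - xi i) = 0" using i(2) unfolding xi_def by auto
    hence "\<exists>a\<in>{..<n}. (if s ! a then xi a else 1 - xi a) = 0" using i(1) by blast
    hence "(\<Prod>i<n. if s ! i then xi i else 1 - xi i) = 0" by (intro prod_zero) simp_all
    then show ?thesis using False by simp
  qed
  have "fz L n xi = (\<Sum>s\<in>{s\<in>L. length s = n}. if s = x then 1 else 0)"
    unfolding fz_def by (intro sum.cong refl) (simp add: pr)
  also have "\<dots> = (if x \<in> L then 1 else 0)"
  proof -
    have sub: "{s\<in>L. length s = n} \<subseteq> {s. set s \<subseteq> (UNIV :: bool set) \<and> length s = n}" by auto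
    have fin: "finite {s\<in>L. length s = n}"
      by (rule finite_subset[OF sub]) (rule finite_lists_length_eq, simp)
    show ?thesis using lx by (simp add: fin)
  qed
  finally show ?thesis .
qed

lemma poly_Fp_0: "poly (Fp d) 0 = (if x \<in> L then 1 else 0)"
  unfolding poly_Fp by (simp add: fz_x[symmetric])

lemma fz_cong:
  assumes "\<forall>i<n. int p dvd (y i - y' i)"
  shows "int p dvd (fz L n y - fz L n y')"
proof -
  have "[fz L n y = fz L n y'] (mod int p)"
    unfolding fz_def
  proof (intro cong_sum cong_prod)
    fix s i assume "i \<in> {..<n}"
    hence "[y i = y' i] (mod int p)" using assms by (simp add: cong_iff_dvd_diff)
    thus "[(if s ! i then y i else 1 - y i) = (if s ! i then y' i else 1 - y' i)] (mod int p)"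
      by (simp add: cong_diff)
  qed
  thus ?thesis by (simp add: cong_iff_dvd_diff)
qed

lemma vv_cong:
  assumes o: "(t, a) \<in> Om n p" and lq: "length q = k" and c: "cons q t a"
  shows "int p dvd (vv L n p t a - poly (Fp (dq q)) (int t))"
proof -
  have h1: "int p dvd (fz L n (\<lambda>i. int t * int (a ! i)) - fz L n (\<lambda>i. xi i + int t * int (dq q i)))"
    by (rule fz_cong) (use value_cong[OF o] dq_sel[OF o lq c] in auto)
  have h2: "int p dvd (vv L n p t a - fz L n (\<lambda>i. int t * int (a ! i)))"
    unfolding vv_def by (simp add: mod_eq_dvd_iff[symmetric])
  have "int p dvd (vv L n p t a - fz L n (\<lambda>i. int t * int (a ! i))) + (fz L n (\<lambda>i. int t * int (a ! i)) - fz L n (\<lambda>i. xi i + int t * int (dq q i)))"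
    by (rule dvd_add[OF h2 h1])
  thus ?thesis unfolding poly_Fp by simp
qed

definition hc :: "bool list \<Rightarrow> nat \<Rightarrow> int" where
  "hc r i = (\<Sum>c<p. if r ! (i * p + c) then 1 else 0)"

lemma Hr_hc: "Hr n p r t = (\<Sum>i<n. hc r i * int t ^ (i + 1))"
  unfolding Hr_def hc_def sum_distrib_right by (intro sum.cong refl) simp

definition Dp :: "bool list \<Rightarrow> (nat \<Rightarrow> nat) \<Rightarrow> int poly" where
  "Dp r d = 1 + (\<Sum>i<n. monom (hc r i) (Suc i)) - Fp d"

lemma poly_Dp: "poly (Dp r d) (int t) = 1 + Hr n p r t - poly (Fp d) (int t)"
  unfolding Dp_def Hr_hc by (simp add: poly_sum poly_monom)

lemma poly_Dp_0: "poly (Dp r d) 0 = 1 - (if x \<in> L then 1 else 0)"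
  unfolding Dp_def by (simp add: poly_sum poly_monom poly_Fp_0)

lemma degree_Dp: "degree (Dp r d) \<le> n"
proof -
  have a: "degree (\<Sum>i<n. monom (hc r i) (Suc i)) \<le> n"
    by (rule degree_sum_le) (auto intro: order.trans[OF degree_monom_le])
  have "degree (1 + (\<Sum>i<n. monom (hc r i) (Suc i))) \<le> n"
    using a by (intro degree_add_le) auto
  thus ?thesis unfolding Dp_def using degree_Fp by (intro degree_diff_le) auto
qed

definition good :: "nat \<Rightarrow> nat list \<Rightarrow> bool list \<Rightarrow> bool" where
  "good t a r \<longleftrightarrow> int p dvd (1 - vv L n p t a + Hr n p r t)"

lemma good_iff:
  assumes o: "(t, a) \<in> Om n p" and lq: "length q = k" and c: "cons q t a"
  shows "good t a r \<longleftrightarrow> int p dvd poly (Dp r (dq q)) (int t)"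
proof -
  have e: "(1 - vv L n p t a + Hr n p r t) = poly (Dp r (dq q)) (int t) - (vv L n p t a - poly (Fp (dq q)) (int t))"
    unfolding poly_Dp by simp
  have B: "int p dvd (vv L n p t a - poly (Fp (dq q)) (int t))" by (rule vv_cong[OF o lq c])
  show ?thesis unfolding good_def e
  proof
    assume "int p dvd poly (Dp r (dq q)) (int t) - (vv L n p t a - poly (Fp (dq q)) (int t))"
    from dvd_add[OF this B] show "int p dvd poly (Dp r (dq q)) (int t)" by simp
  next
    assume "int p dvd poly (Dp r (dq q)) (int t)"
    from dvd_diff[OF this B] show "int p dvd poly (Dp r (dq q)) (int t) - (vv L n p t a - poly (Fp (dq q)) (int t))" .
  qed
qed

definition hq :: "bool list \<Rightarrow> nat \<Rightarrow> nat" where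
  "hq q i = nat (coeff (Fp (dq q)) (Suc i) mod int p)"

definition Pstar :: "bool list \<Rightarrow> bool list" where
  "Pstar q = concat (map (\<lambda>i. map (\<lambda>c. c < hq q i) [0..<p]) [0..<n])"

lemma length_Pstar: "length (Pstar q) = n * p"
  unfolding Pstar_def by (simp add: length_concat_map)

lemma hc_Pstar: "i < n \<Longrightarrow> hc (Pstar q) i = coeff (Fp (dq q)) (Suc i) mod int p"
proof -
  assume i: "i < n"
  have hl: "hq q i \<le> p"
  proof -
    have "coeff (Fp (dq q)) (Suc i) mod int p < int p" using p2 by simp
    thus ?thesis unfolding hq_def by simp
  qed
  have "hc (Pstar q) i = (\<Sum>c<p. if c < hq q i then 1 else 0)"
    unfolding hc_def Pstar_def
    using concat_map_nth[of i "[0..<n]" _ p "\<lambda>i c. c < hq q i"] i by (intro sum.cong refl) simp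
  also have "\<dots> = int (min (hq q i) p)" by (rule sum_lt_count)
  also have "min (hq q i) p = hq q i" using hl by simp
  also have "\<dots> = coeff (Fp (dq q)) (Suc i) mod int p" unfolding hq_def using p2 by simp
  finally show ?thesis .
qed

lemma honest_root:
  assumes xL: "x \<in> L"
  shows "int p dvd poly (Dp (Pstar q) (dq q)) (int t)"
proof -
  define F where "F = Fp (dq q)"
  have c0: "coeff F 0 = 1" using poly_Fp_0[of "dq q"] xL unfolding F_def by (simp add: poly_0_coeff_0)
  have pF: "poly F (int t) = coeff F 0 + (\<Sum>i<n. coeff F (Suc i) * int t ^ (Suc i))"
  proof -
    have "poly F (int t) = (\<Sum>i\<le>n. coeff F i * int t ^ i)" using degree_Fp unfolding F_def by (rule poly_coeffs_le)
    also have "\<dots> = (\<Sum>i<Suc n. coeff F i * int t ^ i)" by (simp add: lessThan_Suc_atMost)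
    also have "\<dots> = coeff F 0 + (\<Sum>i<n. coeff F (Suc i) * int t ^ (Suc i))" by (subst sum.lessThan_Suc_shift) simp
    finally show ?thesis .
  qed
  have "poly (Dp (Pstar q) (dq q)) (int t) = (\<Sum>i<n. (hc (Pstar q) i - coeff F (Suc i)) * int t ^ (Suc i))"
    unfolding poly_Dp Hr_hc F_def[symmetric] pF c0 by (simp add: sum_subtractf algebra_simps)
  also have "int p dvd \<dots>"
  proof (rule dvd_sum)
    fix i assume "i \<in> {..<n}"
    hence "hc (Pstar q) i = coeff F (Suc i) mod int p" using hc_Pstar unfolding F_def by simp
    hence "int p dvd (hc (Pstar q) i - coeff F (Suc i))" by (simp add: mod_eq_dvd_iff[symmetric])
    thus "int p dvd (hc (Pstar q) i - coeff F (Suc i)) * int t ^ Suc i" by simp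
  qed
  finally show ?thesis .
qed

end

lemma root_bound_modp:
  fixes D :: "int poly" and p :: nat
  assumes pr: "prime p" and "degree D \<le> n" and "\<not> int p dvd poly D 0"
  shows "card {t\<in>{1..<p}. int p dvd poly D (int t)} \<le> n"
  using assms(2,3)
proof (induction n arbitrary: D)
  case 0
  hence "degree D = 0" by simp
  then obtain c where "D = [:c:]" by (rule degree_eq_zeroE)
  hence c: "poly D x = poly D 0" for x by simp
  have "\<not> int p dvd poly D (int t)" for t using 0(2) c[of "int t"] by simp
  hence "{t\<in>{1..<p}. int p dvd poly D (int t)} = {}" by simp
  then show ?case by simp
next
  case (Suc n)
  define S where "S = {t\<in>{1..<p}. int p dvd poly D (int t)}"
  show ?case
  proof (cases "S = {}")
    case True
    then show ?thesis unfolding S_def by (simp only: card.empty)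
  next
    case False
    then obtain r where r: "r \<in> S" by blast
    define Q where "Q = synthetic_div D (int r)"
    have DQ: "poly D x = (x - int r) * poly Q x + poly D (int r)" for x
    proof -
      have "poly ([:- int r, 1:] * Q + [:poly D (int r):]) x = (x - int r) * poly Q x + poly D (int r)"
        by (simp add: algebra_simps)
      thus ?thesis unfolding Q_def synthetic_div_correct' .
    qed
    have pr_int: "prime (int p)" using pr by simp
    have pDr: "int p dvd poly D (int r)" using r unfolding S_def by simp
    have degQ: "degree Q \<le> n" unfolding Q_def degree_synthetic_div using Suc.prems(1) by simp
    have Q0: "\<not> int p dvd poly Q 0"
    proof
      assume "int p dvd poly Q 0"
      hence "int p dvd (0 - int r) * poly Q 0 + poly D (int r)" using pDr by simp
      thus False using Suc.prems(2) DQ[of 0] by simp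
    qed
    have sub: "S - {r} \<subseteq> {t\<in>{1..<p}. int p dvd poly Q (int t)}"
    proof
      fix t assume t: "t \<in> S - {r}"
      hence t1: "t \<in> {1..<p}" "t \<noteq> r" and pDt: "int p dvd poly D (int t)" unfolding S_def by auto
      have "int p dvd (int t - int r) * poly Q (int t)"
        using pDt pDr DQ[of "int t"] by (metis dvd_add_left_iff)
      moreover have "\<not> int p dvd (int t - int r)"
      proof
        assume "int p dvd (int t - int r)"
        moreover have "int t - int r \<noteq> 0" using t1 by simp
        ultimately have "\<bar>int p\<bar> \<le> \<bar>int t - int r\<bar>" by (rule dvd_imp_le_int[rotated])
        moreover have "r < p" using r unfolding S_def by simp
        ultimately show False using t1 by (simp add: abs_if split: if_splits)
      qed
      ultimately have "int p dvd poly Q (int t)" using pr_int prime_dvd_mult_iff by blast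
      thus "t \<in> {t\<in>{1..<p}. int p dvd poly Q (int t)}" using t1 by simp
    qed
    have "card (S - {r}) \<le> n"
      using card_mono[OF _ sub] Suc.IH[OF degQ Q0] by simp
    moreover have "finite S" unfolding S_def by simp
    ultimately have "card S \<le> Suc n" using r by (simp add: card_Diff_singleton)
    then show ?thesis unfolding S_def .
  qed
qed


lemma geom_ph:
  assumes "p > 0"
  shows "(\<Sum>j<p. ph p (int j * C)) = (if int p dvd C then of_nat p else 0)"
proof -
  define z where "z = cis (2 * pi * real_of_int C / real p)"
  have pz: "ph p (int j * C) = z ^ j" for j
    unfolding z_def ph_def DeMoivre by (simp add: algebra_simps)
  show ?thesis
  proof (cases "int p dvd C")
    case True
    then obtain m where m: "C = int p * m" by (elim dvdE)
    have "2 * pi * real_of_int C / real p = 2 * pi * real_of_int m" unfolding m using assms by simp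
    moreover have "cis (2 * pi * real_of_int m) = 1" by (rule cis_multiple_2pi) simp
    ultimately have "z = 1" unfolding z_def by simp
    thus ?thesis unfolding pz using True by simp
  next
    case False
    have z1: "z \<noteq> 1"
    proof
      assume "z = 1"
      hence "Re (cis (2 * pi * real_of_int C / real p)) = 1" unfolding z_def by simp
      hence "cos (2 * pi * real_of_int C / real p) = 1" by simp
      then obtain m :: int where m: "2 * pi * real_of_int C / real p = real_of_int m * 2 * pi"
        using cos_one_2pi_int by blast
      hence "real_of_int C = real_of_int m * real p" using assms by (simp add: field_simps)
      hence "C = m * int p" by (metis of_int_eq_iff of_int_mult of_int_of_nat_eq)
      thus False using False by simp
    qed
    have zp: "z ^ p = 1" unfolding z_def DeMoivre using assms by simp
    have "(\<Sum>j<p. z ^ j) = (1 - z ^ p) / (1 - z)" using z1 by (simp add: sum_gp_strict)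
    also have "\<dots> = 0" using zp by simp
    finally show ?thesis unfolding pz using False by simp
  qed
qed

lemma sum_sq_unique:
  fixes f :: "'a \<Rightarrow> complex"
  assumes "finite A" "\<forall>a\<in>A. \<forall>b\<in>A. f a \<noteq> 0 \<longrightarrow> f b \<noteq> 0 \<longrightarrow> a = b"
  shows "(cmod (\<Sum>a\<in>A. f a))\<^sup>2 = (\<Sum>a\<in>A. (cmod (f a))\<^sup>2)"
proof (cases "\<exists>a0\<in>A. f a0 \<noteq> 0")
  case True
  then obtain a0 where a0: "a0 \<in> A" "f a0 \<noteq> 0" by blast
  have z: "f a = 0" if "a \<in> A" "a \<noteq> a0" for a using assms(2) a0 that by blast
  have "(\<Sum>a\<in>A. f a) = f a0"
    using sum.remove[OF assms(1) a0(1), of f] z by (simp add: sum.neutral)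
  moreover have "(\<Sum>a\<in>A. (cmod (f a))\<^sup>2) = (cmod (f a0))\<^sup>2"
    using sum.remove[OF assms(1) a0(1), of "\<lambda>a. (cmod (f a))\<^sup>2"] z by (simp add: sum.neutral)
  ultimately show ?thesis by simp
next
  case False
  thus ?thesis by simp
qed

context protP
begin

lemma Pre_sq_cons: "length q = k \<Longrightarrow> (cmod (Pre (t, a) q))\<^sup>2 = (if cons q t a then kap else 0)"
proof -
  assume lq: "length q = k"
  show ?thesis
  proof (cases "cons q t a")
    case True
    hence "\<forall>m<k. \<not> erased m \<longrightarrow> q ! m = wst (t, a) ! m" unfolding cons_def .
    thus ?thesis using Pre_sq[OF lq, of "wst (t, a)"] True by simp
  next
    case False
    hence nc: "\<not> (\<forall>m<k. \<not> erased m \<longrightarrow> q ! m = wst (t, a) ! m)" unfolding cons_def .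
    have "(cmod (Pre (t, a) q))\<^sup>2 = kap * (if \<forall>m<k. \<not> erased m \<longrightarrow> q ! m = wst (t, a) ! m then 1 else 0)"
      by (rule Pre_sq[OF lq])
    also have "(if \<forall>m<k. \<not> erased m \<longrightarrow> q ! m = wst (t, a) ! m then 1 else 0) = (0::real)"
      by (simp only: if_not_P[OF nc])
    finally show ?thesis using False by simp
  qed
qed

lemma Pre_zero: "length q = k \<Longrightarrow> \<not> cons q t a \<Longrightarrow> Pre (t, a) q = 0"
  using Pre_sq_cons[of q t a] by simp

lemma cc_sq: "(cmod (cc n p))\<^sup>2 = 1 / (real (p - 1) * real p ^ (n + 1))"
proof -
  have pos: "real ((p - 1) * p ^ (n + 1)) > 0" using p2 by simp
  have "(cmod (cc n p))\<^sup>2 = (1 / sqrt (real ((p - 1) * p ^ (n + 1))))\<^sup>2"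
    unfolding cc_def norm_of_real by simp
  also have "\<dots> = 1 / real ((p - 1) * p ^ (n + 1))" using pos by (simp add: power_divide)
  finally show ?thesis by (simp add: of_nat_diff)
qed

lemma mag:
  assumes lq: "length q = k" and t: "t \<in> {1..<p}"
  shows "(cmod (of_real (1 / sqrt (real p)) * (\<Sum>j<p. M1 q r t j)))\<^sup>2 =
         (1 / (real (p - 1) * real p ^ n)) * (\<Sum>a\<in>Aset n p. if cons q t a \<and> good t a r then kap else 0)"
proof -
  define f where "f = (\<lambda>a. of_real (1 / sqrt (real p)) * cc n p * Pre (t, a) q * (if good t a r then of_nat p else 0))"
  have g: "(\<Sum>j<p. ph p (int j * (1 - vv L n p t a + Hr n p r t))) = (if good t a r then of_nat p else 0)" for a
    using geom_ph[of p "1 - vv L n p t a + Hr n p r t"] p2 unfolding good_def by simp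
  have s1: "(\<Sum>j<p. M1 q r t j) = (\<Sum>a\<in>Aset n p. cc n p * Pre (t, a) q * (if good t a r then of_nat p else 0))"
  proof -
    have "(\<Sum>j<p. M1 q r t j) = (\<Sum>j<p. \<Sum>a\<in>Aset n p. cc n p * Pre (t, a) q * ph p (int j * (1 - vv L n p t a + Hr n p r t)))"
      unfolding M1_def Mq_def sum_distrib_left
      by (intro sum.cong refl) (simp add: ph_add[symmetric] algebra_simps)
    also have "\<dots> = (\<Sum>a\<in>Aset n p. \<Sum>j<p. cc n p * Pre (t, a) q * ph p (int j * (1 - vv L n p t a + Hr n p r t)))"
      by (rule sum.swap)
    also have "\<dots> = (\<Sum>a\<in>Aset n p. cc n p * Pre (t, a) q * (\<Sum>j<p. ph p (int j * (1 - vv L n p t a + Hr n p r t))))"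
      by (simp add: sum_distrib_left)
    finally show ?thesis unfolding g .
  qed
  have s2: "of_real (1 / sqrt (real p)) * (\<Sum>j<p. M1 q r t j) = (\<Sum>a\<in>Aset n p. f a)"
    unfolding s1 f_def sum_distrib_left by (simp add: mult_ac)
  have uniq: "\<forall>a\<in>Aset n p. \<forall>b\<in>Aset n p. f a \<noteq> 0 \<longrightarrow> f b \<noteq> 0 \<longrightarrow> a = b"
  proof (intro ballI impI)
    fix a b assume ab: "a \<in> Aset n p" "b \<in> Aset n p" "f a \<noteq> 0" "f b \<noteq> 0"
    have "cons q t a" using ab(3) Pre_zero[OF lq] unfolding f_def by auto
    moreover have "cons q t b" using ab(4) Pre_zero[OF lq] unfolding f_def by auto
    moreover have "(t, a) \<in> Om n p" "(t, b) \<in> Om n p" using ab t unfolding Om_def by auto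
    ultimately show "a = b" using cons_unique lq by blast
  qed
  have fa: "(cmod (f a))\<^sup>2 = (1 / (real (p - 1) * real p ^ n)) * (if cons q t a \<and> good t a r then kap else 0)" for a
  proof -
    have n1: "cmod (of_real (1 / sqrt (real p))) = 1 / sqrt (real p)" by (simp only: norm_of_real) simp
    have n2: "(cmod (if good t a r then of_nat p else (0::complex)))\<^sup>2 = (if good t a r then (real p)\<^sup>2 else 0)"
      by (cases "good t a r") simp_all
    have "(cmod (f a))\<^sup>2 = (1 / sqrt (real p))\<^sup>2 * (cmod (cc n p))\<^sup>2 * (cmod (Pre (t, a) q))\<^sup>2 * (if good t a r then (real p)\<^sup>2 else 0)"
      unfolding f_def norm_mult power_mult_distrib n1 n2 ..
    also have "\<dots> = (1 / real p) * (1 / (real (p - 1) * real p ^ (n + 1))) * (if cons q t a then kap else 0) * (if good t a r then (real p)\<^sup>2 else 0)"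
      unfolding cc_sq Pre_sq_cons[OF lq] using p2 by (simp add: power_divide)
    also have "\<dots> = (1 / (real (p - 1) * real p ^ n)) * (if cons q t a \<and> good t a r then kap else 0)"
      using p2 by (auto simp: power2_eq_square field_simps)
    finally show ?thesis .
  qed
  have "(cmod (of_real (1 / sqrt (real p)) * (\<Sum>j<p. M1 q r t j)))\<^sup>2 = (cmod (\<Sum>a\<in>Aset n p. f a))\<^sup>2"
    by (simp only: s2)
  also have "\<dots> = (\<Sum>a\<in>Aset n p. (cmod (f a))\<^sup>2)" by (rule sum_sq_unique[OF finite_Aset uniq])
  also have "\<dots> = (1 / (real (p - 1) * real p ^ n)) * (\<Sum>a\<in>Aset n p. if cons q t a \<and> good t a r then kap else 0)"
    unfolding fa sum_distrib_left ..
  finally show ?thesis .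
qed

end

lemma sum_if_const: "finite A \<Longrightarrow> (\<Sum>a\<in>A. if P a then (c::real) else 0) = c * real (card {a\<in>A. P a})"
  by (simp add: sum.If_cases Int_def)

context protP
begin

definition c0 :: real where "c0 = 1 / (real (p - 1) * real p ^ n)"

lemma kap_nonneg: "kap \<ge> 0" unfolding kap_def by (intro prod_nonneg) auto

lemma acc_sum:
  "acc_prob (2 * n * p + p * p) 1 k (n * p) (Adv L n p) (V1c n p) (V2c n p) x P =
   (\<Sum>q\<in>{q. length q = k}. if length (P q) = n * p
        then c0 * (\<Sum>t\<in>{1..<p}. \<Sum>a\<in>Aset n p. if cons q t a \<and> good t a (P q) then kap else 0) else 0)"
  unfolding acc_formula
proof (intro sum.cong refl)
  fix q :: "bool list" assume "q \<in> {q. length q = k}"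
  hence lq: "length q = k" by simp
  show "(if length (P q) = n * p then \<Sum>t\<in>{1..<p}. (cmod (complex_of_real (1 / sqrt (real p)) * (\<Sum>j<p. M1 q (P q) t j)))\<^sup>2 else 0) =
        (if length (P q) = n * p then c0 * (\<Sum>t\<in>{1..<p}. \<Sum>a\<in>Aset n p. if cons q t a \<and> good t a (P q) then kap else 0) else 0)"
  proof (cases "length (P q) = n * p")
    case True
    have "(\<Sum>t\<in>{1..<p}. (cmod (complex_of_real (1 / sqrt (real p)) * (\<Sum>j<p. M1 q (P q) t j)))\<^sup>2) =
          (\<Sum>t\<in>{1..<p}. c0 * (\<Sum>a\<in>Aset n p. if cons q t a \<and> good t a (P q) then kap else 0))"
      unfolding c0_def by (intro sum.cong refl) (rule mag[OF lq], simp)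
    also have "\<dots> = c0 * (\<Sum>t\<in>{1..<p}. \<Sum>a\<in>Aset n p. if cons q t a \<and> good t a (P q) then kap else 0)"
      by (simp only: sum_distrib_left)
    finally show ?thesis using True by simp
  next
    case False
    then show ?thesis by simp
  qed
qed

lemma card_Aset: "card (Aset n p) = p ^ n"
proof -
  have "Aset n p = {xs. set xs \<subseteq> {..<p} \<and> length xs = n}" unfolding Aset_def by auto
  thus ?thesis using card_lists_length_eq[of "{..<p}" n] by simp
qed

lemma Pre_total: "(t, a) \<in> Om n p \<Longrightarrow> (\<Sum>q\<in>{q. length q = k}. if cons q t a then kap else 0) = 1"
proof -
  assume "(t, a) \<in> Om n p"
  have "(\<Sum>q\<in>{q. length q = k}. if cons q t a then kap else 0) = (\<Sum>q\<in>{q. length q = k}. (cmod (Pre (t, a) q))\<^sup>2)"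
    by (intro sum.cong refl) (simp add: Pre_sq_cons)
  also have "\<dots> = 1" by (rule Pre_norm)
  finally show ?thesis .
qed

lemma finite_Q: "finite {q :: bool list. length q = k}"
  using finite_lists_length_eq[of "UNIV :: bool set" k] by simp

theorem completeness:
  assumes xL: "x \<in> L"
  shows "acc_prob (2 * n * p + p * p) 1 k (n * p) (Adv L n p) (V1c n p) (V2c n p) x Pstar = 1"
proof -
  have g: "(if cons q t a \<and> good t a (Pstar q) then kap else 0) = (if cons q t a then kap else 0)"
    if "length q = k" "t \<in> {1..<p}" "a \<in> Aset n p" for q t a
  proof (cases "cons q t a")
    case True
    have o: "(t, a) \<in> Om n p" using that unfolding Om_def by simp
    have "good t a (Pstar q)" using good_iff[OF o that(1) True] honest_root[OF xL] by simp
    then show ?thesis using True by simp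
  qed simp
  have "acc_prob (2 * n * p + p * p) 1 k (n * p) (Adv L n p) (V1c n p) (V2c n p) x Pstar =
     (\<Sum>q\<in>{q. length q = k}. c0 * (\<Sum>t\<in>{1..<p}. \<Sum>a\<in>Aset n p. if cons q t a then kap else 0))"
    unfolding acc_sum using g length_Pstar by (intro sum.cong refl) simp
  also have "\<dots> = c0 * (\<Sum>t\<in>{1..<p}. \<Sum>a\<in>Aset n p. \<Sum>q\<in>{q. length q = k}. if cons q t a then kap else 0)"
  proof -
    have "(\<Sum>q\<in>{q. length q = k}. c0 * (\<Sum>t\<in>{1..<p}. \<Sum>a\<in>Aset n p. if cons q t a then kap else 0))
       = c0 * (\<Sum>q\<in>{q. length q = k}. \<Sum>t\<in>{1..<p}. \<Sum>a\<in>Aset n p. if cons q t a then kap else 0)"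
      by (simp only: sum_distrib_left)
    also have "(\<Sum>q\<in>{q. length q = k}. \<Sum>t\<in>{1..<p}. \<Sum>a\<in>Aset n p. if cons q t a then kap else 0)
       = (\<Sum>t\<in>{1..<p}. \<Sum>q\<in>{q. length q = k}. \<Sum>a\<in>Aset n p. if cons q t a then kap else 0)"
      by (rule sum.swap)
    also have "\<dots> = (\<Sum>t\<in>{1..<p}. \<Sum>a\<in>Aset n p. \<Sum>q\<in>{q. length q = k}. if cons q t a then kap else 0)"
      by (intro sum.cong refl) (rule sum.swap)
    finally show ?thesis .
  qed
  also have "\<dots> = c0 * (\<Sum>t\<in>{1..<p}. \<Sum>a\<in>Aset n p. 1)"
    using Pre_total unfolding Om_def by (intro arg_cong[where f = "\<lambda>z. c0 * z"] sum.cong refl) auto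
  also have "\<dots> = 1" unfolding c0_def using card_Aset p2 by simp
  finally show ?thesis .
qed

lemma per_q:
  assumes lq: "length q = k" and xL: "x \<notin> L"
  shows "(\<Sum>t\<in>{1..<p}. \<Sum>a\<in>Aset n p. if cons q t a \<and> good t a r then kap else 0)
         \<le> real n * (\<Sum>a\<in>Aset n p. if cons q 1 a then kap else 0)"
proof -
  define D where "D = Dp r (dq q)"
  have cnt1: "card {a\<in>Aset n p. cons q t a} \<le> 1" if t: "t \<in> {1..<p}" for t
  proof -
    have u: "\<forall>a\<in>{a\<in>Aset n p. cons q t a}. \<forall>b\<in>{a\<in>Aset n p. cons q t a}. a = b"
    proof (intro ballI)
      fix a b assume a: "a \<in> {a\<in>Aset n p. cons q t a}" and b: "b \<in> {a\<in>Aset n p. cons q t a}"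
      have oa: "(t, a) \<in> Om n p" using a t unfolding Om_def by simp
      have ob: "(t, b) \<in> Om n p" using b t unfolding Om_def by simp
      show "a = b" using cons_unique[OF oa ob lq] a b by simp
    qed
    have fin: "finite {a\<in>Aset n p. cons q t a}" using finite_Aset by simp
    show ?thesis using card_le_Suc0_iff_eq[OF fin] u by simp
  qed
  have cg: "card {a\<in>Aset n p. cons q t a \<and> good t a r} \<le> (if int p dvd poly D (int t) then 1 else 0)"
    if t: "t \<in> {1..<p}" for t
  proof (cases "int p dvd poly D (int t)")
    case True
    have "card {a\<in>Aset n p. cons q t a \<and> good t a r} \<le> card {a\<in>Aset n p. cons q t a}"
      using finite_Aset by (intro card_mono) auto
    then show ?thesis using cnt1[OF t] True by simp
  next
    case False
    have "{a\<in>Aset n p. cons q t a \<and> good t a r} = {}"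
    proof (rule ccontr)
      assume "{a\<in>Aset n p. cons q t a \<and> good t a r} \<noteq> {}"
      then obtain a where a: "a \<in> Aset n p" "cons q t a" "good t a r" by blast
      have o: "(t, a) \<in> Om n p" using a t unfolding Om_def by simp
      show False using good_iff[OF o lq a(2)] a(3) False unfolding D_def by simp
    qed
    hence "card {a\<in>Aset n p. cons q t a \<and> good t a r} = 0" by (simp only: card.empty)
    then show ?thesis using False by simp
  qed
  have S: "(\<Sum>t\<in>{1..<p}. \<Sum>a\<in>Aset n p. if cons q t a \<and> good t a r then kap else 0)
        = kap * (\<Sum>t\<in>{1..<p}. real (card {a\<in>Aset n p. cons q t a \<and> good t a r}))"
    by (simp add: sum_if_const[OF finite_Aset] sum_distrib_left)
  have R: "(\<Sum>a\<in>Aset n p. if cons q 1 a then kap else 0) = kap * real (card {a\<in>Aset n p. cons q 1 a})"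
    by (rule sum_if_const[OF finite_Aset])
  show ?thesis
  proof (cases "\<exists>a0\<in>Aset n p. cons q 1 a0")
    case True
    then obtain a0 where a0: "a0 \<in> Aset n p" "cons q 1 a0" by blast
    have one: "1 \<in> {1..<p}" using p2 by simp
    have c1: "card {a\<in>Aset n p. cons q 1 a} = 1"
    proof -
      have "card {a\<in>Aset n p. cons q 1 a} \<le> 1" by (rule cnt1[OF one])
      moreover have "card {a\<in>Aset n p. cons q 1 a} \<noteq> 0" using a0 finite_Aset by auto
      ultimately show ?thesis by simp
    qed
    have D0: "\<not> int p dvd poly D 0"
      unfolding D_def poly_Dp_0 using xL p2 by simp
    have "(\<Sum>t\<in>{1..<p}. real (card {a\<in>Aset n p. cons q t a \<and> good t a r}))
          \<le> (\<Sum>t\<in>{1..<p}. if int p dvd poly D (int t) then 1 else 0)"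
    proof (rule sum_mono)
      fix t assume t: "t \<in> {1..<p}"
      have "card {a\<in>Aset n p. cons q t a \<and> good t a r} \<le> (if int p dvd poly D (int t) then 1 else 0)" by (rule cg[OF t])
      thus "real (card {a\<in>Aset n p. cons q t a \<and> good t a r}) \<le> (if int p dvd poly D (int t) then 1 else 0)"
        by (cases "int p dvd poly D (int t)") simp_all
    qed
    also have "\<dots> = real (card {t\<in>{1..<p}. int p dvd poly D (int t)})"
      using sum_if_const[of "{1..<p}" "\<lambda>t. int p dvd poly D (int t)" 1] by simp
    also have "\<dots> \<le> real n"
      using root_bound_modp[OF pp degree_Dp[of r "dq q"] D0[unfolded D_def]] unfolding D_def by simp
    finally have "(\<Sum>t\<in>{1..<p}. real (card {a\<in>Aset n p. cons q t a \<and> good t a r})) \<le> real n" .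
    hence "kap * (\<Sum>t\<in>{1..<p}. real (card {a\<in>Aset n p. cons q t a \<and> good t a r})) \<le> kap * real n"
      by (rule mult_left_mono[OF _ kap_nonneg])
    thus ?thesis unfolding S R c1 by (simp add: mult.commute)
  next
    case False
    have em: "{a\<in>Aset n p. cons q t a \<and> good t a r} = {}" if t: "t \<in> {1..<p}" for t
    proof (rule ccontr)
      assume "{a\<in>Aset n p. cons q t a \<and> good t a r} \<noteq> {}"
      then obtain a where a: "a \<in> Aset n p" "cons q t a" by blast
      have o: "(t, a) \<in> Om n p" using a t unfolding Om_def by simp
      obtain a' where "(1, a') \<in> Om n p" "cons q 1 a'" using cons_exists[OF o lq a(2), of 1] p2 by auto
      thus False using False unfolding Om_def by auto
    qed
    have "(\<Sum>t\<in>{1..<p}. real (card {a\<in>Aset n p. cons q t a \<and> good t a r})) = 0"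
    proof (rule sum.neutral, rule ballI)
      fix t assume t: "t \<in> {1..<p}"
      show "real (card {a\<in>Aset n p. cons q t a \<and> good t a r}) = 0" unfolding em[OF t] by simp
    qed
    thus ?thesis unfolding S R using kap_nonneg by simp
  qed
qed

theorem soundness:
  assumes xL: "x \<notin> L"
  shows "acc_prob (2 * n * p + p * p) 1 k (n * p) (Adv L n p) (V1c n p) (V2c n p) x P \<le> real n / real (p - 1)"
proof -
  have c0n: "c0 \<ge> 0" unfolding c0_def by simp
  have "acc_prob (2 * n * p + p * p) 1 k (n * p) (Adv L n p) (V1c n p) (V2c n p) x P \<le>
     (\<Sum>q\<in>{q. length q = k}. c0 * (real n * (\<Sum>a\<in>Aset n p. if cons q 1 a then kap else 0)))"
    unfolding acc_sum
  proof (rule sum_mono)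
    fix q :: "bool list" assume "q \<in> {q. length q = k}"
    hence lq: "length q = k" by simp
    have nn: "0 \<le> c0 * (real n * (\<Sum>a\<in>Aset n p. if cons q 1 a then kap else 0))"
      using c0n kap_nonneg by (intro mult_nonneg_nonneg sum_nonneg) auto
    show "(if length (P q) = n * p then c0 * (\<Sum>t\<in>{1..<p}. \<Sum>a\<in>Aset n p. if cons q t a \<and> good t a (P q) then kap else 0) else 0)
          \<le> c0 * (real n * (\<Sum>a\<in>Aset n p. if cons q 1 a then kap else 0))"
      using per_q[OF lq xL, of "P q"] c0n nn by (auto intro: mult_left_mono)
  qed
  also have "\<dots> = c0 * real n * (\<Sum>a\<in>Aset n p. \<Sum>q\<in>{q. length q = k}. if cons q 1 a then kap else 0)"
  proof -
    have "(\<Sum>q\<in>{q. length q = k}. c0 * (real n * (\<Sum>a\<in>Aset n p. if cons q 1 a then kap else 0)))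
        = c0 * real n * (\<Sum>q\<in>{q. length q = k}. \<Sum>a\<in>Aset n p. if cons q 1 a then kap else 0)"
      by (simp only: sum_distrib_left mult.assoc)
    also have "(\<Sum>q\<in>{q. length q = k}. \<Sum>a\<in>Aset n p. if cons q 1 a then kap else 0)
        = (\<Sum>a\<in>Aset n p. \<Sum>q\<in>{q. length q = k}. if cons q 1 a then kap else 0)"
      by (rule sum.swap)
    finally show ?thesis .
  qed
  also have "\<dots> = c0 * real n * (\<Sum>a\<in>Aset n p. 1)"
    using Pre_total p2 unfolding Om_def by (intro arg_cong[where f = "\<lambda>z. c0 * real n * z"] sum.cong refl) auto
  also have "\<dots> = real n / real (p - 1)" unfolding c0_def using card_Aset p2 by simp
  finally show ?thesis .
qed

end

lemma ohl_inj: "m < L \<Longrightarrow> m' < L \<Longrightarrow> ohl m L = ohl m' L \<Longrightarrow> m = m'"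
proof -
  assume a: "m < L" "m' < L" "ohl m L = ohl m' L"
  have "ohl m L ! m = True" using a(1) by simp
  hence "ohl m' L ! m" using a(3) by simp
  moreover have "ohl m' L ! m = (m = m')" using a(1) by (rule nth_ohl)
  ultimately show ?thesis by simp
qed

lemma encA_inj:
  assumes "length a = n" "length a' = n" "set a \<subseteq> {..<p}" "set a' \<subseteq> {..<p}" "encA p a = encA p a'"
  shows "a = a'"
proof (rule nth_equalityI)
  show "length a = length a'" using assms by simp
  fix i assume "i < length a"
  hence i: "i < n" using assms by simp
  have ai: "a ! i < p" using assms(1,3) i by (auto simp: subset_iff)
  have "encA p a ! (i * p + a ! i) = True" using nth_encA[of i a "a ! i" p] assms(1) i ai by simp
  hence "encA p a' ! (i * p + a ! i)" using assms(5) by simp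
  thus "a ! i = a' ! i" using nth_encA[of i a' "a ! i" p] assms(2) i ai by simp
qed

lemma norm_ph[simp]: "cmod (ph p z) = 1" unfolding ph_def by simp

lemma adv_state:
  assumes p2: "p \<ge> 2"
  shows "is_state (2 * n * p + p * p) (Adv L n p)"
proof -
  define K where "K = Om n p \<times> {..<p}"
  define f where "f = (\<lambda>\<kappa> :: (nat \<times> nat list) \<times> nat. astr p (fst (fst \<kappa>)) (snd (fst \<kappa>)) (snd \<kappa>))"
  define M where "M = (\<lambda>\<kappa> :: (nat \<times> nat list) \<times> nat. cc n p * ph p (int (snd \<kappa>) * (1 - vv L n p (fst (fst \<kappa>)) (snd (fst \<kappa>)))))"
  have AdvK: "Adv L n p s = (\<Sum>\<kappa>\<in>K. M \<kappa> * (if s = f \<kappa> then 1 else 0))" for s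
    unfolding Adv_def K_def M_def f_def by (simp add: sum.cartesian_product split_def)
  have finK: "finite K"
  proof -
    have "finite (Aset n p)"
    proof -
      have "Aset n p \<subseteq> {a. set a \<subseteq> {..<p} \<and> length a = n}" unfolding Aset_def by auto
      thus ?thesis using finite_lists_length_eq[of "{..<p}" n] finite_subset by auto
    qed
    thus ?thesis unfolding K_def Om_def by simp
  qed
  have lenf: "length (f \<kappa>) = 2 * n * p + p * p" if "\<kappa> \<in> K" for \<kappa>
    using that length_astr unfolding K_def Om_def f_def by auto
  have injf: "inj_on f K"
  proof (rule inj_onI)
    fix \<kappa> \<kappa>' assume k: "\<kappa> \<in> K" "\<kappa>' \<in> K" and e: "f \<kappa> = f \<kappa>'"
    obtain t a j where kk: "\<kappa> = ((t, a), j)" by (metis prod.collapse)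
    obtain t' a' j' where kk': "\<kappa>' = ((t', a'), j')" by (metis prod.collapse)
    have A: "length a = n" "set a \<subseteq> {..<p}" "t \<in> {1..<p}" "j < p" using k(1) unfolding kk K_def Om_def Aset_def by auto
    have A': "length a' = n" "set a' \<subseteq> {..<p}" "t' \<in> {1..<p}" "j' < p" using k(2) unfolding kk' K_def Om_def Aset_def by auto
    have e': "encA p a @ encA p (bv p t a) @ ohl (j * p + t) (p * p) = encA p a' @ encA p (bv p t' a') @ ohl (j' * p + t') (p * p)"
      using e unfolding f_def kk kk' astr_def by simp
    have l1: "length (encA p a) = length (encA p a')" using A A' by simp
    have l2: "length (encA p (bv p t a)) = length (encA p (bv p t' a'))" using A A' by (simp add: bv_def)
    have "encA p a = encA p a'" using e' l1 by (simp add: append_eq_append_conv)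
    hence aa: "a = a'" using encA_inj A A' by blast
    have "ohl (j * p + t) (p * p) = ohl (j' * p + t') (p * p)" using e' l1 l2 by (simp add: append_eq_append_conv)
    moreover have "j * p + t < p * p" using wpos_lt A by simp
    moreover have "j' * p + t' < p * p" using wpos_lt A' by simp
    ultimately have "j * p + t = j' * p + t'" using ohl_inj by blast
    hence "j = j' \<and> t = t'" using wpos_inj[of t p t' j j'] A A' by simp
    thus "\<kappa> = \<kappa>'" unfolding kk kk' using aa by simp
  qed
  have fS: "f ` K \<subseteq> {s. length s = 2 * n * p + p * p}" using lenf by auto
  have finS: "finite {s :: bool list. length s = 2 * n * p + p * p}"
    using finite_lists_length_eq[of "UNIV :: bool set"] by simp
  have van: "\<forall>s. length s \<noteq> 2 * n * p + p * p \<longrightarrow> Adv L n p s = 0"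
  proof (intro allI impI)
    fix s :: "bool list" assume "length s \<noteq> 2 * n * p + p * p"
    hence "s \<noteq> f \<kappa>" if "\<kappa> \<in> K" for \<kappa> using lenf[OF that] by auto
    thus "Adv L n p s = 0" unfolding AdvK by (intro sum.neutral) auto
  qed
  have "sqnorm (2 * n * p + p * p) (Adv L n p) = (\<Sum>\<kappa>\<in>K. (cmod (M \<kappa>))\<^sup>2)"
    unfolding sqnorm_def AdvK by (rule sum_sq_basis[OF finK injf fS finS])
  also have "\<dots> = (\<Sum>\<kappa>\<in>K. (cmod (cc n p))\<^sup>2)" unfolding M_def by (simp add: norm_mult)
  also have "\<dots> = real (card K) * (cmod (cc n p))\<^sup>2" by simp
  also have "card K = (p - 1) * p ^ n * p"
  proof -
    have "Aset n p = {xs. set xs \<subseteq> {..<p} \<and> length xs = n}" unfolding Aset_def by auto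
    hence "card (Aset n p) = p ^ n" using card_lists_length_eq[of "{..<p}" n] by simp
    thus ?thesis unfolding K_def Om_def by (simp add: card_cartesian_product)
  qed
  also have "(cmod (cc n p))\<^sup>2 = 1 / (real (p - 1) * real p ^ (n + 1))"
  proof -
    have pos: "real ((p - 1) * p ^ (n + 1)) > 0" using p2 by simp
    have "(cmod (cc n p))\<^sup>2 = (1 / sqrt (real ((p - 1) * p ^ (n + 1))))\<^sup>2"
      unfolding cc_def norm_of_real by simp
    also have "\<dots> = 1 / real ((p - 1) * p ^ (n + 1))" using pos by (simp add: power_divide)
    finally show ?thesis by (simp add: of_nat_diff)
  qed
  also have "real ((p - 1) * p ^ n * p) * (1 / (real (p - 1) * real p ^ (n + 1))) = 1"
    using p2 by (simp add: of_nat_diff field_simps)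
  finally show ?thesis unfolding is_state_def using van by simp
qed

lemma sumB2: "(\<Sum>c\<in>(UNIV::bool set). \<Sum>d\<in>(UNIV::bool set). f c d) = f False False + f False True + f True False + f True True"
  by (simp add: sumB add.assoc)
lemma unitary_diag: assumes "\<And>a b. cmod (D a b) = 1" shows "unitary2 (diag2 D)"
proof -
  have c: "cnj (D a b) * D a b = 1" for a b
  proof -
    have "cnj (D a b) * D a b = D a b * cnj (D a b)" by (simp add: mult.commute)
    also have "\<dots> = of_real ((cmod (D a b))\<^sup>2)" by (rule complex_norm_square[symmetric])
    also have "\<dots> = 1" using assms[of a b] by simp
    finally show ?thesis .
  qed
  show ?thesis unfolding unitary2_def diag2_def sumB2 using c by simp
qed
lemma unitary_ctrlH: "unitary2 (ctrlU cv Hm)"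
proof -
  have s: "complex_of_real (sqrt 2) * complex_of_real (sqrt 2) = 2"
    by (simp flip: of_real_mult)
  have h: "cnj (1 / complex_of_real (sqrt 2)) * (1 / complex_of_real (sqrt 2)) = 1 / 2"
    using s by simp
  have h2: "cnj (- 1 / complex_of_real (sqrt 2)) * (- 1 / complex_of_real (sqrt 2)) = 1 / 2"
    using s by simp
  have h3: "cnj (- 1 / complex_of_real (sqrt 2)) * (1 / complex_of_real (sqrt 2)) = - 1 / 2"
    using s by simp
  have h4: "cnj (1 / complex_of_real (sqrt 2)) * (- 1 / complex_of_real (sqrt 2)) = - 1 / 2"
    using s by simp
  show ?thesis unfolding unitary2_def ctrlU_def Hm_def sumB2
    by (cases cv) (simp_all add: h h2 h3 h4 s)
qed
lemma unitary_giv: assumes "gc ^ 2 + gs ^ 2 = 1" shows "unitary2 (givU gc gs)"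
proof -
  have a: "complex_of_real gc * complex_of_real gc + complex_of_real gs * complex_of_real gs = 1"
    using assms by (simp add: power2_eq_square flip: of_real_mult of_real_add)
  show ?thesis unfolding unitary2_def givU_def sumB2
    using a by (simp add: algebra_simps)
qed

lemma unitary_swap: "unitary2 swapU"
  unfolding unitary2_def swapU_def sumB2 by simp

lemma unitary_cnot: "unitary2 cnotU"
  unfolding unitary2_def cnotU_def sumB2 by simp

lemma gcgs: "(gcf k) ^ 2 + (gsf k) ^ 2 = 1"
proof -
  have "(gcf k) ^ 2 = real k / real (k + 1)" unfolding gcf_def by simp
  moreover have "(gsf k) ^ 2 = 1 / real (k + 1)" unfolding gsf_def by (simp add: power_divide)
  ultimately show ?thesis by (simp add: add_divide_distrib[symmetric])
qed

lemma valid_V1: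
  assumes "p \<ge> 2"
  shows "valid_circuit (n + (2 * n * p + p * p) + 1) (V1c n p)"
  unfolding valid_circuit_def
proof
  fix g assume "g \<in> set (V1c n p)"
  then obtain m where m: "n \<le> m" "m < n + 2 * n * p" and g: "g = (ctl1 n p m, m, ctrlU (cv1 n p m) Hm)"
    unfolding V1c_def by auto
  have np: "n * p > 0" using m assms by (cases n) auto
  have "(m - n) mod (n * p) < n * p" using np by simp
  hence c: "ctl1 n p m < n" unfolding ctl1_def using assms by (simp add: div_less_iff_less_mult)
  show "valid_gate (n + (2 * n * p + p * p) + 1) g"
    unfolding g valid_gate_def using c m unitary_ctrlH by auto
qed

lemma valid_V2:
  assumes "p \<ge> 2"
  shows "valid_circuit (n + (2 * n * p + p * p) + 1 + n * p) (V2c n p)"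
  unfolding valid_circuit_def
proof
  define k where "k = n + 2 * n * p"
  define M where "M = n + (2 * n * p + p * p) + 1 + n * p"
  have Mk: "M = k + p * p + 1 + n * p" unfolding M_def k_def by simp
  fix g assume g: "g \<in> set (V2c n p)"
  have rel: "valid_gate M (shiftg k g')" if g'in: "g' \<in> set (V2rel n p)" for g'
  proof -
    consider (ph) "g' \<in> set (map (\<lambda>z. (phf1 p z, phf2 p z, diag2 (phD p z))) (phidx n p))"
      | (row) "g' \<in> set (concat (map (rowgates p) [1..<p]))"
      | (cn) "g' \<in> set (map (\<lambda>t. (t, p * p, cnotU)) [1..<p])"
      using g'in unfolding V2rel_def by auto
    then show ?thesis
    proof cases
      case ph
      then obtain i c j t where z: "i < n" "c < p" "j < p" "t < p"
        and gz: "g' = (phf1 p (i, c, j, t), phf2 p (i, c, j, t), diag2 (phD p (i, c, j, t)))"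
        unfolding phidx_def by auto
      have u: "unitary2 (diag2 (phD p (i, c, j, t)))" by (rule unitary_diag) (simp add: phD_def)
      have a: "i * p + c < n * p"
      proof -
        have "i * p + c < i * p + p" using z by simp
        also have "\<dots> = (i + 1) * p" by simp
        also have "\<dots> \<le> n * p" using z by (intro mult_le_mono1) simp
        finally show ?thesis .
      qed
      have b: "j * p + t < p * p" using wpos_lt z by simp
      show ?thesis unfolding gz shiftg_def phf1_def phf2_def valid_gate_def Mk using u a b by auto
    next
      case row
      then obtain t kk where tk: "t \<in> {1..<p}" "kk \<in> {1..<p}"
        and gz: "g' = (t, kk * p + t, givU (gcf kk) (gsf kk))"
        unfolding rowgates_def by auto
      have b: "kk * p + t < p * p" using wpos_lt tk by simp
      have u: "unitary2 (givU (gcf kk) (gsf kk))" by (rule unitary_giv[OF gcgs])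
      show ?thesis unfolding gz shiftg_def valid_gate_def Mk using u b tk by auto
    next
      case cn
      then obtain t where t: "t \<in> {1..<p}" and gz: "g' = (t, p * p, cnotU)" by auto
      have "t < p * p" using t assms by (metis atLeastLessThan_iff less_le_trans mult_le_mono1 mult_1 one_le_numeral order_trans)
      thus ?thesis unfolding gz shiftg_def valid_gate_def Mk using unitary_cnot by auto
    qed
  qed
  have "g \<in> shiftg k ` set (V2rel n p) \<or> g = (0, k + p * p, swapU)"
    using g unfolding V2c_def k_def by auto
  thus "valid_gate (n + (2 * n * p + p * p) + 1 + n * p) g"
  proof
    assume "g \<in> shiftg k ` set (V2rel n p)"
    thus ?thesis using rel unfolding M_def by auto
  next
    assume "g = (0, k + p * p, swapU)"
    thus ?thesis unfolding valid_gate_def k_def using unitary_swap assms by auto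
  qed
qed

definition pr :: "nat \<Rightarrow> nat" where
  "pr n = (SOME q. prime q \<and> 3 * (n + 1)^2 < q \<and> q \<le> 8 * (3 * (n + 1)^2)^2)"

lemma pr_prop: "prime (pr n) \<and> 3 * (n + 1)^2 < pr n \<and> pr n \<le> 8 * (3 * (n + 1)^2)^2"
proof -
  have "3 * (n + 1)^2 \<ge> 1" by simp
  from prime_exists_poly[OF this] show ?thesis unfolding pr_def by (rule someI_ex)
qed

lemma pr_ge2: "pr n \<ge> 2" using pr_prop[of n] prime_ge_2_nat by blast

lemma pr_upper: "pr n \<le> (n + 2) ^ 11"
proof -
  have "pr n \<le> 8 * (3 * (n + 1)^2)^2" using pr_prop by blast
  also have "\<dots> = 72 * (n + 1)^4"
  proof -
    have "(3 * (n + 1)^2)^2 = 9 * (n + 1)^4" by (simp only: power_mult_distrib power_mult[symmetric]) simp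
    thus ?thesis by simp
  qed
  also have "\<dots> \<le> (n + 2)^7 * (n + 2)^4"
  proof (rule mult_le_mono)
    have "(72::nat) \<le> 2^7" by simp
    also have "(2::nat)^7 \<le> (n + 2)^7" by (rule power_mono) simp_all
    finally show "72 \<le> (n + 2)^7" .
    show "(n + 1)^4 \<le> (n + 2)^4" by (rule power_mono) simp_all
  qed
  also have "\<dots> = (n + 2)^11" by (simp flip: power_add)
  finally show ?thesis .
qed

lemma pr_lower: "real (pr n - 1) \<ge> 3 * (real n + 1)^2"
proof -
  have "3 * (n + 1)^2 < pr n" using pr_prop by blast
  hence "3 * (n + 1)^2 \<le> pr n - 1" by simp
  hence "real (3 * (n + 1)^2) \<le> real (pr n - 1)" by (simp only: of_nat_le_iff)
  thus ?thesis by (simp add: add.commute)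
qed

lemma poly_bounds:
  fixes n p P :: nat
  assumes "n \<le> P" "p \<le> P" "4 \<le> P"
  shows "2 * n * p + p * p \<le> P ^ 5" "n + 2 * n * p \<le> P ^ 5" "n * p \<le> P ^ 5"
        "2 * n * p \<le> P ^ 5" "n * p * p * p + p * p + p + 1 \<le> P ^ 5" "1 \<le> P ^ 5"
proof -
  have P1: "1 \<le> P" using assms by simp
  have q1: "P \<le> P ^ 4" using P1 by (simp add: power_increasing[of 1 4 P, simplified])
  have q2: "P * P \<le> P ^ 4" using P1 power_increasing[of 2 4 P] by (simp add: power2_eq_square)
  have q0: "1 \<le> P ^ 4" using P1 by simp
  have np: "n * p \<le> P * P" using assms by (intro mult_le_mono) auto
  have pp: "p * p \<le> P * P" using assms by (intro mult_le_mono) auto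
  have nppp: "n * p * p * p \<le> P ^ 4"
  proof -
    have "n * p * p * p \<le> P * P * P * P" using assms by (intro mult_le_mono) auto
    thus ?thesis by (simp add: power4_eq_xxxx)
  qed
  have "P ^ 5 = P * P ^ 4" by (simp add: numeral_eq_Suc)
  hence five: "4 * P ^ 4 \<le> P ^ 5" using mult_le_mono1[OF assms(3), of "P ^ 4"] by simp
  show "2 * n * p + p * p \<le> P ^ 5" using np pp q2 five by linarith
  show "n + 2 * n * p \<le> P ^ 5" using np q1 q2 five assms(1) by linarith
  show "n * p \<le> P ^ 5" using np q2 five by linarith
  show "2 * n * p \<le> P ^ 5" using np q2 five by linarith
  show "n * p * p * p + p * p + p + 1 \<le> P ^ 5" using nppp pp q2 q1 q0 five assms(2) by linarith
  show "1 \<le> P ^ 5" using P1 by simp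
qed

lemma length_concat_const: "(\<forall>y\<in>set xs. length (f y) = c) \<Longrightarrow> length (concat (map f xs)) = length xs * c"
  by (induction xs) auto

lemma length_V1c: "length (V1c n p) = 2 * n * p"
  unfolding V1c_def by simp

lemma length_V2c: "length (V2c n p) = n * p * p * p + (p - 1) * (p - 1) + (p - 1) + 1"
proof -
  have "length (phidx n p) = n * (p * (p * p))"
    unfolding phidx_def by (simp add: length_concat o_def sum_list_triv)
  moreover have "length (concat (map (rowgates p) [1..<p])) = (p - 1) * (p - 1)"
    by (simp add: length_concat o_def sum_list_triv rowgates_def)
  ultimately show ?thesis unfolding V2c_def V2rel_def by (simp add: mult.assoc)
qed

lemma sizes:
  fixes n :: nat
  defines "p \<equiv> pr n"
  shows "2 * n * p + p * p \<le> (n + 2) ^ 55" "(1::nat) \<le> (n + 2) ^ 55" "n + 2 * n * p \<le> (n + 2) ^ 55"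
        "n * p \<le> (n + 2) ^ 55" "length (V1c n p) \<le> (n + 2) ^ 55" "length (V2c n p) \<le> (n + 2) ^ 55"
proof -
  define P where "P = (n + 2) ^ 11"
  have e: "(n + 2) ^ 55 = P ^ 5" unfolding P_def by (simp flip: power_mult)
  have P4: "4 \<le> P"
  proof -
    have "(2::nat) ^ 11 \<le> (n + 2) ^ 11" by (rule power_mono) simp_all
    thus ?thesis unfolding P_def by simp
  qed
  have nP: "n \<le> P"
  proof -
    have "n \<le> n + 2" by simp
    also have "\<dots> = (n + 2) ^ 1" by simp
    also have "\<dots> \<le> (n + 2) ^ 11" by (rule power_increasing) simp_all
    finally show ?thesis unfolding P_def .
  qed
  have pP: "p \<le> P" unfolding p_def P_def by (rule pr_upper)
  note b = poly_bounds[OF nP pP P4]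
  show "2 * n * p + p * p \<le> (n + 2) ^ 55" "(1::nat) \<le> (n + 2) ^ 55" "n + 2 * n * p \<le> (n + 2) ^ 55"
        "n * p \<le> (n + 2) ^ 55" using b unfolding e by simp_all
  show "length (V1c n p) \<le> (n + 2) ^ 55" using b unfolding e length_V1c by simp
  have "length (V2c n p) \<le> n * p * p * p + p * p + p + 1"
  proof -
    have "(p - 1) * (p - 1) \<le> p * p" by (intro mult_le_mono) simp_all
    thus ?thesis unfolding length_V2c by simp
  qed
  thus "length (V2c n p) \<le> (n + 2) ^ 55" using b unfolding e by simp
qed

lemma sound_bound:
  fixes n :: nat
  shows "real n / real (pr n - 1) \<le> 1 / (3 * (real n + 1))"
proof -
  have l: "real (pr n - 1) \<ge> 3 * (real n + 1)^2" by (rule pr_lower)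
  have pos: "3 * (real n + 1)^2 > 0" by simp
  have "real n / real (pr n - 1) \<le> real n / (3 * (real n + 1)^2)"
  proof (rule divide_left_mono)
    show "3 * (real n + 1)^2 \<le> real (pr n - 1)" by (rule l)
    show "0 \<le> real n" by simp
    have "real (pr n - 1) > 0" using l pos by linarith
    thus "0 < real (pr n - 1) * (3 * (real n + 1)^2)" using pos by simp
  qed
  also have "\<dots> \<le> (real n + 1) / (3 * (real n + 1)^2)"
    using pos by (intro divide_right_mono) auto
  also have "\<dots> = 1 / (3 * (real n + 1))" by (simp add: power2_eq_square)
  finally show ?thesis .
qed

theorem mainTheorem1:
  fixes L :: "bool list set"
  shows "\<exists>c::real. c > 0 \<and> (\<exists>s. (\<forall>n. s n \<le> 1 / 3)
           \<and> (\<forall>\<^sub>F n in sequentially. s n \<le> real n powr (- c))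
           \<and> QIP2star_qpoly_perfect s L)"
proof -
  define s where "s = (\<lambda>n::nat. 1 / (3 * (real n + 1)))"
  have s13: "\<forall>n. s n \<le> 1 / 3" unfolding s_def by (simp add: field_simps)
  have ev: "\<forall>\<^sub>F n in sequentially. s n \<le> real n powr (- 1)"
  proof (rule eventually_sequentiallyI[of 1])
    fix n :: nat assume n: "n \<ge> 1"
    have "real n powr (- 1) = 1 / real n" using n by (simp add: powr_minus_divide)
    moreover have "1 / (3 * (real n + 1)) \<le> 1 / real n" using n by (simp add: field_simps)
    ultimately show "s n \<le> real n powr (- 1)" unfolding s_def by simp
  qed
  have Q: "QIP2star_qpoly_perfect s L"
    unfolding QIP2star_qpoly_perfect_def
  proof (intro exI conjI)
    show "\<forall>n. 2 * n * pr n + pr n * pr n \<le> (n + 2) ^ 55 \<and> 1 \<le> (n + 2) ^ 55 \<and> n + 2 * n * pr n \<le> (n + 2) ^ 55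
      \<and> n * pr n \<le> (n + 2) ^ 55 \<and> length (V1c n (pr n)) \<le> (n + 2) ^ 55 \<and> length (V2c n (pr n)) \<le> (n + 2) ^ 55
      \<and> n + 2 * n * pr n \<le> n + (2 * n * pr n + pr n * pr n) + 1
      \<and> is_state (2 * n * pr n + pr n * pr n) (Adv L n (pr n))
      \<and> valid_circuit (n + (2 * n * pr n + pr n * pr n) + 1) (V1c n (pr n))
      \<and> valid_circuit (n + (2 * n * pr n + pr n * pr n) + 1 + n * pr n) (V2c n (pr n))"
      using sizes adv_state[OF pr_ge2] valid_V1[OF pr_ge2] valid_V2[OF pr_ge2] by simp
    show "\<forall>x\<in>L. \<exists>P. acc_prob (2 * length x * pr (length x) + pr (length x) * pr (length x)) 1
       (length x + 2 * length x * pr (length x)) (length x * pr (length x)) (Adv L (length x) (pr (length x)))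
       (V1c (length x) (pr (length x))) (V2c (length x) (pr (length x))) x P = 1"
    proof
      fix x assume xL: "x \<in> L"
      interpret I: protP "length x" "pr (length x)" x L
        by unfold_locales (simp_all add: pr_ge2 pr_prop)
      show "\<exists>P. acc_prob (2 * length x * pr (length x) + pr (length x) * pr (length x)) 1
       (length x + 2 * length x * pr (length x)) (length x * pr (length x)) (Adv L (length x) (pr (length x)))
       (V1c (length x) (pr (length x))) (V2c (length x) (pr (length x))) x P = 1"
        using I.completeness[OF xL] by blast
    qed
    show "\<forall>x. x \<notin> L \<longrightarrow> (\<forall>P. acc_prob (2 * length x * pr (length x) + pr (length x) * pr (length x)) 1
       (length x + 2 * length x * pr (length x)) (length x * pr (length x)) (Adv L (length x) (pr (length x)))
       (V1c (length x) (pr (length x))) (V2c (length x) (pr (length x))) x P \<le> s (length x))"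
    proof (intro allI impI)
      fix x P assume xL: "x \<notin> L"
      interpret I: protP "length x" "pr (length x)" x L
        by unfold_locales (simp_all add: pr_ge2 pr_prop)
      have "acc_prob (2 * length x * pr (length x) + pr (length x) * pr (length x)) 1
       (length x + 2 * length x * pr (length x)) (length x * pr (length x)) (Adv L (length x) (pr (length x)))
       (V1c (length x) (pr (length x))) (V2c (length x) (pr (length x))) x P \<le> real (length x) / real (pr (length x) - 1)"
        by (rule I.soundness[OF xL])
      also have "\<dots> \<le> s (length x)" unfolding s_def by (rule sound_bound)
      finally show "acc_prob (2 * length x * pr (length x) + pr (length x) * pr (length x)) 1
       (length x + 2 * length x * pr (length x)) (length x * pr (length x)) (Adv L (length x) (pr (length x)))
       (V1c (length x) (pr (length x))) (V2c (length x) (pr (length x))) x P \<le> s (length x)" .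
    qed
  qed
  show ?thesis using s13 ev Q by (intro exI[of _ 1] conjI exI[of _ s]) simp_all
qed

end
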